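(* Let $\lambda\vdash n$ with $n\ge 4$, let $\chi_\lambda$ be the character of the Specht module of $S_n$ indexed by $\lambda$, and put $g_\lambda=\frac{\chi_\lambda(1)-\chi_\lambda(s_1)}{2}$ and $h_\lambda=\frac{\chi_\lambda(1)-\chi_\lambda(s_1s_3)}{2}$, where $s_1=(1,2)$, $s_3=(3,4)$. Then \begin{enumerate} \item $g_\lambda=f_{\lambda/(1,1)}$, and \item $h_\lambda=2\,(f_{\lambda/(3,1)}+f_{\lambda/(2,1,1)})$. \end{enumerate}
   Context: For partitions $\mu,\lambda$, $f_{\lambda/\mu}$ denotes the number of standard Young tableaux of the skew shape $\lambda/\mu$ when the Young diagram of $\mu$ is contained in that of $\lambda$, and $f_{\lambda/\mu}=0$ otherwise. *)

theory Defs
  imports Complex_Main "HOL-Library.FuncSet" "HOL-Combinatorics.Permutations"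
begin

definition is_partition :: "nat \<Rightarrow> nat list \<Rightarrow> bool" where
  "is_partition n lam \<longleftrightarrow> sorted_wrt (\<ge>) lam \<and> 0 \<notin> set lam \<and> sum_list lam = n"

text \<open>Young diagram, cells (row, column), both 0-based.\<close>
definition cells :: "nat list \<Rightarrow> (nat \<times> nat) set" where
  "cells lam = {(i, j). i < length lam \<and> j < lam ! i}"

definition standard_fillings :: "(nat \<times> nat) set \<Rightarrow> ((nat \<times> nat) \<Rightarrow> nat) set" where
  "standard_fillings S = {T. T \<in> extensional S \<and> bij_betw T S {1..card S}
      \<and> (\<forall>i j j'. (i, j) \<in> S \<longrightarrow> (i, j') \<in> S \<longrightarrow> j < j' \<longrightarrow> T (i, j) < T (i, j'))
      \<and> (\<forall>i i' j. (i, j) \<in> S \<longrightarrow> (i', j) \<in> S \<longrightarrow> i < i' \<longrightarrow> T (i, j) < T (i', j))}"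

definition f_skew :: "nat list \<Rightarrow> nat list \<Rightarrow> nat" where
  "f_skew lam mu = (if cells mu \<subseteq> cells lam
                    then card (standard_fillings (cells lam - cells mu)) else 0)"

definition tableaux :: "nat \<Rightarrow> nat list \<Rightarrow> ((nat \<times> nat) \<Rightarrow> nat) set" where
  "tableaux n lam = {t. t \<in> extensional (cells lam) \<and> bij_betw t (cells lam) {1..n}}"

definition cell_of :: "nat list \<Rightarrow> ((nat \<times> nat) \<Rightarrow> nat) \<Rightarrow> nat \<Rightarrow> nat \<times> nat" where
  "cell_of lam t k = the_inv_into (cells lam) t k"

text \<open>The tabloid {t}, represented canonically by the row function of its entries.\<close>
definition tabloid :: "nat \<Rightarrow> nat list \<Rightarrow> ((nat \<times> nat) \<Rightarrow> nat) \<Rightarrow> (nat \<Rightarrow> nat)" where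
  "tabloid n lam t = (\<lambda>k. if k \<in> {1..n} then fst (cell_of lam t k) else 0)"

definition col_stab :: "nat \<Rightarrow> nat list \<Rightarrow> ((nat \<times> nat) \<Rightarrow> nat) \<Rightarrow> (nat \<Rightarrow> nat) set" where
  "col_stab n lam t = {p. p permutes {1..n} \<and>
      (\<forall>k\<in>{1..n}. snd (cell_of lam t (p k)) = snd (cell_of lam t k))}"

text \<open>Vectors of the permutation module M^lam: real functions on tabloids.
  The polytabloid e_t = sum over p in C_t of sgn(p) {p t}.\<close>
definition polytabloid :: "nat \<Rightarrow> nat list \<Rightarrow> ((nat \<times> nat) \<Rightarrow> nat) \<Rightarrow> (nat \<Rightarrow> nat) \<Rightarrow> real" where
  "polytabloid n lam t = (\<lambda>R. \<Sum>p\<in>col_stab n lam t.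
       of_int (sign p) * (if tabloid n lam (p \<circ> t) = R then 1 else 0))"

text \<open>Action of a permutation s on M^lam: s.{t} = {s t}, i.e. (s.v)(R) = v(R o s).\<close>
definition perm_act :: "(nat \<Rightarrow> nat) \<Rightarrow> ((nat \<Rightarrow> nat) \<Rightarrow> real) \<Rightarrow> ((nat \<Rightarrow> nat) \<Rightarrow> real)" where
  "perm_act s v = (\<lambda>R. v (R \<circ> s))"

definition specht :: "nat \<Rightarrow> nat list \<Rightarrow> ((nat \<Rightarrow> nat) \<Rightarrow> real) set" where
  "specht n lam = {v. \<exists>c. \<forall>R. v R = (\<Sum>t\<in>tableaux n lam. c t * polytabloid n lam t R)}"

definition lin_indep :: "((nat \<Rightarrow> nat) \<Rightarrow> real) set \<Rightarrow> bool" where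
  "lin_indep B \<longleftrightarrow> (\<forall>c. (\<forall>R. (\<Sum>b\<in>B. c b * b R) = 0) \<longrightarrow> (\<forall>b\<in>B. c b = 0))"

definition is_basis_of :: "((nat \<Rightarrow> nat) \<Rightarrow> real) set \<Rightarrow> ((nat \<Rightarrow> nat) \<Rightarrow> real) set \<Rightarrow> bool" where
  "is_basis_of B V \<longleftrightarrow> finite B \<and> B \<subseteq> V \<and> lin_indep B \<and>
     (\<forall>v\<in>V. \<exists>c. \<forall>R. v R = (\<Sum>b\<in>B. c b * b R))"

definition coord :: "((nat \<Rightarrow> nat) \<Rightarrow> real) set \<Rightarrow> ((nat \<Rightarrow> nat) \<Rightarrow> real)
                     \<Rightarrow> ((nat \<Rightarrow> nat) \<Rightarrow> real) \<Rightarrow> real" where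
  "coord B v = (THE c. c \<in> extensional B \<and> (\<forall>R. v R = (\<Sum>b\<in>B. c b * b R)))"

definition specht_char :: "nat \<Rightarrow> nat list \<Rightarrow> (nat \<Rightarrow> nat) \<Rightarrow> real" where
  "specht_char n lam s = (let B = (SOME B. is_basis_of B (specht n lam))
                          in \<Sum>b\<in>B. coord B (perm_act s b) b)"

definition s1 :: "nat \<Rightarrow> nat" where
  "s1 = (\<lambda>k. if k = 1 then 2 else if k = 2 then 1 else k)"
definition s3 :: "nat \<Rightarrow> nat" where
  "s3 = (\<lambda>k. if k = 3 then 4 else if k = 4 then 3 else k)"

end

theory Submission
  imports Defs "HOL-Library.Function_Algebras"
begin

lemma finite_cells[simp]: "finite (cells lam)"
proof -
  have "cells lam \<subseteq> {..<length lam} \<times> {..<Max (insert 0 (set lam))}"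
  proof
    fix x assume "x \<in> cells lam"
    then obtain i j where x: "x = (i,j)" "i < length lam" "j < lam ! i" by (auto simp: cells_def)
    have "lam ! i \<le> Max (insert 0 (set lam))" using x(2) by (intro Max_ge) auto
    thus "x \<in> {..<length lam} \<times> {..<Max (insert 0 (set lam))}" using x by (auto intro: less_le_trans)
  qed
  thus ?thesis by (rule finite_subset) auto
qed

lemma cells_Cons: "cells (a # lam) = {0} \<times> {..<a} \<union> (\<lambda>(i,j). (Suc i, j)) ` cells lam"
proof -
  have "x \<in> cells (a # lam) \<longleftrightarrow> x \<in> {0} \<times> {..<a} \<union> (\<lambda>(i,j). (Suc i, j)) ` cells lam" for x
  proof (cases x)
    case (Pair i j) then show ?thesis
      by (cases i) (auto simp: cells_def image_iff)
  qed
  thus ?thesis by blast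
qed

lemma card_cells: "card (cells lam) = sum_list lam"
proof (induction lam)
  case Nil then show ?case by (simp add: cells_def)
next
  case (Cons a lam)
  have inj: "inj (\<lambda>(i::nat,j::nat). (Suc i, j))" by (auto simp: inj_def)
  have "card (cells (a # lam)) = card ({0} \<times> {..<a}) + card ((\<lambda>(i,j). (Suc i, j)) ` cells lam)"
    unfolding cells_Cons by (subst card_Un_disjoint) auto
  also have "card ((\<lambda>(i,j). (Suc i, j)) ` cells lam) = card (cells lam)"
    by (rule card_image) (use inj in \<open>auto simp: inj_on_def\<close>)
  finally show ?case using Cons by simp
qed

locale young =
  fixes n :: nat and lam :: "nat list"
  assumes part: "is_partition n lam"
begin

abbreviation "C \<equiv> cells lam"
abbreviation "T \<equiv> tableaux n lam"
abbreviation "e \<equiv> polytabloid n lam"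
abbreviation "tab \<equiv> tabloid n lam"
abbreviation "CS \<equiv> col_stab n lam"
abbreviation "cell \<equiv> cell_of lam"

lemma card_C: "card C = n"
  using part by (simp add: card_cells is_partition_def)

lemma down_closed:
  assumes "(i,j) \<in> C" "i' \<le> i" "j' \<le> j" shows "(i',j') \<in> C"
proof -
  have s: "sorted_wrt (\<ge>) lam" using part by (simp add: is_partition_def)
  from assms have i: "i < length lam" "j < lam ! i" by (auto simp: cells_def)
  have "lam ! i \<le> lam ! i'"
  proof (cases "i' = i")
    case False
    with assms(2) have "i' < i" by simp
    with s i show ?thesis by (auto simp: sorted_wrt_iff_nth_less)
  qed simp
  with assms i show ?thesis by (auto simp: cells_def)
qed

lemma tabE: assumes "t \<in> T" shows "bij_betw t C {1..n}" "t \<in> extensional C"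
  using assms by (auto simp: tableaux_def)

lemma cell_in: assumes "t \<in> T" "k \<in> {1..n}" shows "cell t k \<in> C" "t (cell t k) = k"
proof -
  have b: "inj_on t C" "t ` C = {1..n}" using tabE(1)[OF assms(1)] by (auto simp: bij_betw_def)
  show "cell t k \<in> C" unfolding cell_of_def by (rule the_inv_into_into[OF b(1)]) (use assms b in auto)
  show "t (cell t k) = k" unfolding cell_of_def by (rule f_the_inv_into_f[OF b(1)]) (use assms b in auto)
qed

lemma cell_t: assumes "t \<in> T" "x \<in> C" shows "cell t (t x) = x"
proof -
  have b: "inj_on t C" using tabE(1)[OF assms(1)] by (auto simp: bij_betw_def)
  show ?thesis unfolding cell_of_def by (rule the_inv_into_f_f[OF b assms(2)])
qed

lemma t_in: assumes "t \<in> T" "x \<in> C" shows "t x \<in> {1..n}"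
  using assms(2) tabE(1)[OF assms(1)] by (auto simp: bij_betw_def)

lemma t_inj: assumes "t \<in> T" "x \<in> C" "y \<in> C" "t x = t y" shows "x = y"
  using assms(2-4) tabE(1)[OF assms(1)] unfolding bij_betw_def inj_on_def by blast

lemma cell_restrict: "cell (restrict f C) = cell f"
proof (rule ext)
  fix y show "cell (restrict f C) y = cell f y"
    unfolding cell_of_def the_inv_into_def by (rule arg_cong[where f=The]) auto
qed

lemma cell_cong: "(\<And>x. x \<in> C \<Longrightarrow> f x = g x) \<Longrightarrow> cell f = cell g"
proof (rule ext)
  fix y assume "\<And>x. x \<in> C \<Longrightarrow> f x = g x"
  then show "cell f y = cell g y"
    unfolding cell_of_def the_inv_into_def by (intro arg_cong[where f=The]) auto
qed

end

definition key :: "nat \<Rightarrow> (nat \<Rightarrow> nat) \<Rightarrow> nat" where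
  "key n f = (\<Sum>k\<in>{1..n}. f k * (n+1)^(n-k))"

lemma tail_bound:
  fixes d :: "nat \<Rightarrow> nat" and N :: nat
  assumes "\<And>k. a < k \<Longrightarrow> k \<le> m \<Longrightarrow> d k < N" "a \<le> m"
  shows "(\<Sum>k\<in>{a<..m}. d k * N^(m-k)) < N^(m-a)"
  using assms
proof (induction m)
  case 0 then show ?case by simp
next
  case (Suc m)
  show ?case
  proof (cases "a = Suc m")
    case True then show ?thesis by simp
  next
    case False
    with Suc.prems have am: "a \<le> m" by simp
    have IH: "(\<Sum>k\<in>{a<..m}. d k * N^(m-k)) < N^(m-a)" using Suc.IH[OF _ am] Suc.prems(1) by simp
    have split: "{a<..Suc m} = insert (Suc m) {a<..m}" using am by auto
    have "(\<Sum>k\<in>{a<..Suc m}. d k * N^(Suc m-k)) = d (Suc m) + (\<Sum>k\<in>{a<..m}. d k * N^(Suc m-k))"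
      unfolding split by (subst sum.insert) auto
    also have "(\<Sum>k\<in>{a<..m}. d k * N^(Suc m-k)) = N * (\<Sum>k\<in>{a<..m}. d k * N^(m-k))"
      by (subst sum_distrib_left, rule sum.cong) (auto simp: Suc_diff_le)
    finally have eq: "(\<Sum>k\<in>{a<..Suc m}. d k * N^(Suc m-k)) = d (Suc m) + N * (\<Sum>k\<in>{a<..m}. d k * N^(m-k))" .
    have dS: "d (Suc m) < N" using Suc.prems(1) am by auto
    have "(\<Sum>k\<in>{a<..m}. d k * N^(m-k)) + 1 \<le> N^(m-a)" using IH by simp
    then have "N * ((\<Sum>k\<in>{a<..m}. d k * N^(m-k)) + 1) \<le> N * N^(m-a)" by (rule mult_le_mono2)
    then have "N * (\<Sum>k\<in>{a<..m}. d k * N^(m-k)) + N \<le> N^(Suc m - a)"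
      using am by (simp add: Suc_diff_le algebra_simps)
    then show ?thesis unfolding eq using dS by linarith
  qed
qed

lemma key_less:
  assumes dig: "\<And>k. k \<in> {1..n} \<Longrightarrow> f k \<le> n"
    and k0: "k0 \<in> {1..n}" and eq: "\<And>k. k \<in> {1..n} \<Longrightarrow> k < k0 \<Longrightarrow> f k = g k"
    and lt: "f k0 < g k0"
  shows "key n f < key n g"
proof -
  let ?N = "n+1"
  have split: "{1..n} = {1..<k0} \<union> {k0} \<union> {k0<..n}" using k0 by auto
  have key_split: "key n h = (\<Sum>k\<in>{1..<k0}. h k * ?N^(n-k)) + h k0 * ?N^(n-k0) + (\<Sum>k\<in>{k0<..n}. h k * ?N^(n-k))" for h
    unfolding key_def split by (subst sum.union_disjoint, auto)+
  have t: "(\<Sum>k\<in>{k0<..n}. f k * ?N^(n-k)) < ?N^(n-k0)"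
  proof (rule tail_bound)
    fix k assume "k0 < k" "k \<le> n"
    then have "k \<in> {1..n}" using k0 by auto
    then show "f k < n + 1" using dig by (simp add: le_imp_less_Suc)
  qed (use k0 in auto)
  have s: "(\<Sum>k\<in>{1..<k0}. f k * ?N^(n-k)) = (\<Sum>k\<in>{1..<k0}. g k * ?N^(n-k))"
    by (rule sum.cong) (use eq k0 in auto)
  have "(f k0 + 1) * ?N^(n-k0) \<le> g k0 * ?N^(n-k0)"
    using lt by (intro mult_le_mono1) simp
  then have "f k0 * ?N^(n-k0) + ?N^(n-k0) \<le> g k0 * ?N^(n-k0)" by (simp add: algebra_simps)
  then show ?thesis unfolding key_split[of f] key_split[of g] s using t by linarith
qed

lemma key_inj:
  assumes "\<And>k. k \<in> {1..n} \<Longrightarrow> f k \<le> n" "\<And>k. k \<in> {1..n} \<Longrightarrow> g k \<le> n"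
    "key n f = key n g"
  shows "\<forall>k\<in>{1..n}. f k = g k"
proof (rule ccontr)
  assume "\<not> ?thesis"
  then have ex: "\<exists>k. k \<in> {1..n} \<and> f k \<noteq> g k" by blast
  define k0 where "k0 = (LEAST k. k \<in> {1..n} \<and> f k \<noteq> g k)"
  have k0: "k0 \<in> {1..n}" "f k0 \<noteq> g k0" using LeastI_ex[OF ex] unfolding k0_def by auto
  have eq: "f k = g k" if "k \<in> {1..n}" "k < k0" for k
    using not_less_Least[of k "\<lambda>k. k \<in> {1..n} \<and> f k \<noteq> g k"] that unfolding k0_def by auto
  show False
  proof (cases "f k0 < g k0")
    case True
    from key_less[of n f k0 g, OF assms(1) k0(1) eq True] assms(3) show False by simp
  next
    case False
    with k0 have "g k0 < f k0" by simp
    have "key n g < key n f"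
      by (rule key_less[of n g k0 f, OF assms(2) k0(1) _ \<open>g k0 < f k0\<close>]) (use eq in auto)
    with assms(3) show False by simp
  qed
qed

context young
begin

definition row :: "((nat \<times> nat) \<Rightarrow> nat) \<Rightarrow> nat \<Rightarrow> nat" where "row t k = fst (cell t k)"
definition col :: "((nat \<times> nat) \<Rightarrow> nat) \<Rightarrow> nat \<Rightarrow> nat" where "col t k = snd (cell t k)"

definition colinc :: "((nat \<times> nat) \<Rightarrow> nat) \<Rightarrow> bool" where
  "colinc t \<longleftrightarrow> (\<forall>i i' j. (i,j) \<in> C \<longrightarrow> (i',j) \<in> C \<longrightarrow> i < i' \<longrightarrow> t (i,j) < t (i',j))"
definition rowinc :: "((nat \<times> nat) \<Rightarrow> nat) \<Rightarrow> bool" where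
  "rowinc t \<longleftrightarrow> (\<forall>i j j'. (i,j) \<in> C \<longrightarrow> (i,j') \<in> C \<longrightarrow> j < j' \<longrightarrow> t (i,j) < t (i,j'))"

lemma length_le: "length lam \<le> n"
proof -
  have "0 \<notin> set lam" "sum_list lam = n" using part by (auto simp: is_partition_def)
  then show ?thesis
  proof (induction lam arbitrary: n)
    case (Cons a l) then show ?case by (cases a) force+
  qed simp
qed

lemma C_bound: "x \<in> C \<Longrightarrow> fst x < n \<and> snd x < n"
proof -
  assume x: "x \<in> C"
  then have "fst x < length lam" "snd x < lam ! fst x" by (auto simp: cells_def)
  moreover have "lam ! fst x \<le> sum_list lam" using \<open>fst x < length lam\<close>
    by (metis elem_le_sum_list)
  ultimately show ?thesis using length_le part by (auto simp: is_partition_def)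
qed

lemma tab_eq: "tab t = (\<lambda>k. if k \<in> {1..n} then row t k else 0)"
  unfolding tabloid_def row_def by simp

lemma tab_digit: "t \<in> T \<Longrightarrow> k \<in> {1..n} \<Longrightarrow> tab t k \<le> n"
  using C_bound[OF cell_in(1)] by (fastforce simp: tab_eq row_def)

lemma cell_eqI: assumes "t \<in> T" "x \<in> C" "t x = k" shows "cell t k = x"
  using cell_t[OF assms(1,2)] assms(3) by simp

lemma perm_tab_in_T:
  assumes t: "t \<in> T" and s: "s permutes {1..n}"
  shows "restrict (s \<circ> t) C \<in> T"
proof -
  have "bij_betw (s \<circ> t) C {1..n}"
    by (rule bij_betw_trans[OF tabE(1)[OF t] permutes_imp_bij[OF s]])
  then have "bij_betw (restrict (s \<circ> t) C) C {1..n}"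
    by (rule bij_betw_cong[THEN iffD1, rotated]) auto
  then show ?thesis by (auto simp: tableaux_def)
qed

lemma cell_perm:
  assumes t: "t \<in> T" and s: "s permutes {1..n}" and k: "k \<in> {1..n}"
  shows "cell (s \<circ> t) k = cell t (inv s k)"
proof -
  have ik: "inv s k \<in> {1..n}" using permutes_in_image[OF permutes_inv[OF s], THEN iffD2, OF k] .
  have "cell (restrict (s \<circ> t) C) k = cell t (inv s k)"
    by (rule cell_eqI[OF perm_tab_in_T[OF t s] cell_in(1)[OF t ik]])
       (use cell_in(1,2)[OF t ik] permutes_inverses(1)[OF s] in auto)
  then show ?thesis by (simp add: cell_restrict)
qed

lemma tab_perm:
  assumes t: "t \<in> T" and s: "s permutes {1..n}"
  shows "tab (s \<circ> t) = tab t \<circ> inv s"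
proof (rule ext)
  fix k
  show "tab (s \<circ> t) k = (tab t \<circ> inv s) k"
  proof (cases "k \<in> {1..n}")
    case True
    have "inv s k \<in> {1..n}" using permutes_in_image[OF permutes_inv[OF s], THEN iffD2, OF True] .
    then show ?thesis using True cell_perm[OF t s True] by (simp add: tabloid_def)
  next
    case False
    then have "inv s k = k" using permutes_inv[OF s] by (simp add: permutes_not_in)
    then show ?thesis using False by (auto simp: tabloid_def)
  qed
qed

lemma col_perm:
  assumes t: "t \<in> T" and s: "s permutes {1..n}" and k: "k \<in> {1..n}"
  shows "col (s \<circ> t) k = col t (inv s k)"
  using cell_perm[OF assms] by (simp add: col_def)

lemma row_perm:
  assumes t: "t \<in> T" and s: "s permutes {1..n}" and k: "k \<in> {1..n}"
  shows "row (s \<circ> t) k = row t (inv s k)"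
  using cell_perm[OF assms] by (simp add: row_def)

lemma CS_def': "CS t = {p. p permutes {1..n} \<and> (\<forall>k\<in>{1..n}. col t (p k) = col t k)}"
  by (simp add: col_stab_def col_def)

lemma finite_CS: "finite (CS t)"
  by (rule finite_subset[of _ "{p. p permutes {1..n}}"]) (auto simp: CS_def' finite_permutations)

lemma CS_id: "id \<in> CS t" by (simp add: CS_def' permutes_id)

lemma CS_comp: assumes "p \<in> CS t" "q \<in> CS t" shows "p \<circ> q \<in> CS t"
proof -
  have p: "p permutes {1..n}" "\<forall>k\<in>{1..n}. col t (p k) = col t k"
   and q: "q permutes {1..n}" "\<forall>k\<in>{1..n}. col t (q k) = col t k" using assms by (auto simp: CS_def')
  have "col t (p (q k)) = col t k" if k: "k \<in> {1..n}" for k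
    using p(2) q(2) permutes_in_image[OF q(1), THEN iffD2, OF k] k by metis
  then show ?thesis using permutes_compose[OF q(1) p(1)] by (simp add: CS_def')
qed

lemma CS_inv: assumes "p \<in> CS t" shows "inv p \<in> CS t"
proof -
  have p: "p permutes {1..n}" using assms by (simp add: CS_def')
  have "col t (inv p k) = col t k" if k: "k \<in> {1..n}" for k
  proof -
    have "inv p k \<in> {1..n}" using permutes_in_image[OF permutes_inv[OF p], THEN iffD2, OF k] .
    then have "col t (p (inv p k)) = col t (inv p k)" using assms by (simp add: CS_def')
    then show ?thesis using permutes_inverses(1)[OF p] by simp
  qed
  then show ?thesis using permutes_inv[OF p] by (simp add: CS_def')
qed

lemma e_restrict: "e (restrict f C) = e f"
proof -
  have cc: "cell (p \<circ> restrict f C) = cell (p \<circ> f)" for p by (rule cell_cong) auto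
  show ?thesis
    unfolding polytabloid_def col_stab_def tabloid_def cell_restrict cc by simp
qed

lemma e_perm_sum:
  assumes t: "t \<in> T" and s: "s permutes {1..n}"
  shows "e (s \<circ> t) R = (\<Sum>p\<in>CS t. of_int (sign p) * (if tab (s \<circ> p \<circ> t) = R then 1 else 0))"
proof -
  have si: "inv s permutes {1..n}" using permutes_inv[OF s] .
  have mem: "inv s \<circ> p' \<circ> s \<in> CS t \<longleftrightarrow> p' \<in> CS (s \<circ> t)" for p'
  proof -
    have A: "(\<forall>k\<in>{1..n}. col t (inv s (p' (s k))) = col t k) \<longleftrightarrow>
             (\<forall>k\<in>{1..n}. col (s \<circ> t) (p' k) = col (s \<circ> t) k)" if p': "p' permutes {1..n}"
    proof -
      have "(\<forall>k\<in>{1..n}. col (s \<circ> t) (p' k) = col (s \<circ> t) k) \<longleftrightarrow>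
            (\<forall>k\<in>{1..n}. col t (inv s (p' k)) = col t (inv s k))"
        using col_perm[OF t s] permutes_in_image[OF p'] by auto
      also have "\<dots> \<longleftrightarrow> (\<forall>k\<in>{1..n}. col t (inv s (p' (s k))) = col t (inv s (s k)))"
        by (metis (no_types, lifting) permutes_in_image permutes_inverses(1) s si)
      also have "\<dots> \<longleftrightarrow> (\<forall>k\<in>{1..n}. col t (inv s (p' (s k))) = col t k)"
        using permutes_inverses(2)[OF s] by simp
      finally show ?thesis by simp
    qed
    have B: "inv s \<circ> p' \<circ> s permutes {1..n} \<longleftrightarrow> p' permutes {1..n}"
    proof
      assume "p' permutes {1..n}" then show "inv s \<circ> p' \<circ> s permutes {1..n}"
        by (intro permutes_compose s si)
    next
      assume "inv s \<circ> p' \<circ> s permutes {1..n}"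
      then have "s \<circ> (inv s \<circ> p' \<circ> s) \<circ> inv s permutes {1..n}"
        using permutes_compose[OF si permutes_compose[OF _ s]] by blast
      moreover have "s \<circ> (inv s \<circ> p' \<circ> s) \<circ> inv s = p'"
        using permutes_inverses[OF s] by (auto simp: fun_eq_iff)
      ultimately show "p' permutes {1..n}" by simp
    qed
    show ?thesis using A B by (auto simp: CS_def')
  qed
  have "e (s \<circ> t) R = (\<Sum>p'\<in>CS (s \<circ> t). of_int (sign p') * (if tab (p' \<circ> (s \<circ> t)) = R then 1 else 0))"
    by (simp add: polytabloid_def)
  also have "\<dots> = (\<Sum>p\<in>CS t. of_int (sign p) * (if tab (s \<circ> p \<circ> t) = R then 1 else 0))"
  proof (rule sum.reindex_bij_witness[where j = "\<lambda>p'. inv s \<circ> p' \<circ> s" and i = "\<lambda>p. s \<circ> p \<circ> inv s"])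
    fix p assume p: "p \<in> CS t"
    show "inv s \<circ> (s \<circ> p \<circ> inv s) \<circ> s = p" using permutes_inverses[OF s] by (auto simp: fun_eq_iff)
    show "s \<circ> p \<circ> inv s \<in> CS (s \<circ> t)"
      using mem[of "s \<circ> p \<circ> inv s"] p permutes_inverses[OF s] by (simp add: fun_eq_iff comp_def)
  next
    fix p' assume p': "p' \<in> CS (s \<circ> t)"
    show "s \<circ> (inv s \<circ> p' \<circ> s) \<circ> inv s = p'" using permutes_inverses[OF s] by (auto simp: fun_eq_iff)
    show "inv s \<circ> p' \<circ> s \<in> CS t" using mem p' by simp
    have pp: "p' permutes {1..n}" using p' by (simp add: CS_def')
    have "sign (inv s \<circ> p' \<circ> s) = sign p'"
      by (simp add: sign_compose permutation_compose permutes_imp_permutation[OF _ s]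
            permutes_imp_permutation[OF _ si] permutes_imp_permutation[OF _ pp] sign_inverse)
    moreover have "s \<circ> (inv s \<circ> p' \<circ> s) \<circ> t = p' \<circ> (s \<circ> t)"
      using permutes_inverses[OF s] by (auto simp: fun_eq_iff)
    ultimately show "of_int (sign (inv s \<circ> p' \<circ> s)) * (if tab (s \<circ> (inv s \<circ> p' \<circ> s) \<circ> t) = R then 1 else 0) =
          (of_int (sign p') * (if tab (p' \<circ> (s \<circ> t)) = R then 1 else 0) :: real)" by simp
  qed
  finally show ?thesis .
qed

end

context young
begin

lemma perm_in: "s permutes {1..n} \<Longrightarrow> k \<in> {1..n} \<Longrightarrow> s k \<in> {1..n}"
  by (rule permutes_in_image[THEN iffD2])

lemma inv_perm_in: "s permutes {1..n} \<Longrightarrow> k \<in> {1..n} \<Longrightarrow> inv s k \<in> {1..n}"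
  by (rule permutes_in_image[OF permutes_inv, THEN iffD2])

lemma tab_comp_perm:
  assumes t: "t \<in> T" and s: "s permutes {1..n}" and p: "p permutes {1..n}"
  shows "tab (s \<circ> p \<circ> t) = tab (p \<circ> t) \<circ> inv s"
proof -
  have sp: "s \<circ> p permutes {1..n}" using permutes_compose[OF p s] .
  have "tab (s \<circ> p \<circ> t) = tab t \<circ> inv (s \<circ> p)" using tab_perm[OF t sp] .
  also have "inv (s \<circ> p) = inv p \<circ> inv s"
    by (rule o_inv_distrib) (use permutes_bij[OF s] permutes_bij[OF p] in auto)
  finally have "tab (s \<circ> p \<circ> t) = tab t \<circ> (inv p \<circ> inv s)" .
  also have "\<dots> = (tab t \<circ> inv p) \<circ> inv s" by (rule o_assoc)
  also have "tab t \<circ> inv p = tab (p \<circ> t)" using tab_perm[OF t p] by simp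
  finally show ?thesis .
qed

lemma perm_act_e:
  assumes t: "t \<in> T" and s: "s permutes {1..n}"
  shows "perm_act s (e t) = e (s \<circ> t)"
proof (rule ext)
  fix R
  have eq: "(X \<circ> inv s = R) \<longleftrightarrow> (X = R \<circ> s)" for X :: "nat \<Rightarrow> nat"
  proof
    assume "X \<circ> inv s = R"
    then have "X \<circ> inv s \<circ> s = R \<circ> s" by simp
    then show "X = R \<circ> s" using permutes_inverses(2)[OF s] by (simp add: fun_eq_iff)
  next
    assume "X = R \<circ> s"
    then show "X \<circ> inv s = R" using permutes_inverses(1)[OF s] by (simp add: fun_eq_iff)
  qed
  have "e (s \<circ> t) R = (\<Sum>p\<in>CS t. of_int (sign p) * (if tab (s \<circ> p \<circ> t) = R then 1 else 0))"
    by (rule e_perm_sum[OF t s])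
  also have "\<dots> = (\<Sum>p\<in>CS t. of_int (sign p) * (if tab (p \<circ> t) = R \<circ> s then 1 else 0))"
    by (rule sum.cong[OF refl]) (simp add: tab_comp_perm[OF t s] CS_def' eq)
  also have "\<dots> = perm_act s (e t) R"
    by (simp add: perm_act_def polytabloid_def)
  finally show "perm_act s (e t) R = e (s \<circ> t) R" by simp
qed

lemma e_sign:
  assumes t: "t \<in> T" and q: "q \<in> CS t"
  shows "e (q \<circ> t) R = of_int (sign q) * e t R"
proof -
  have qp: "q permutes {1..n}" using q by (simp add: CS_def')
  have "e (q \<circ> t) R = (\<Sum>p\<in>CS t. of_int (sign p) * (if tab (q \<circ> p \<circ> t) = R then 1 else 0))"
    by (rule e_perm_sum[OF t qp])
  also have "\<dots> = (\<Sum>p\<in>CS t. of_int (sign q) * (of_int (sign p) * (if tab (p \<circ> t) = R then 1 else 0)))"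
  proof (rule sum.reindex_bij_witness[where j = "\<lambda>p. q \<circ> p" and i = "\<lambda>p. inv q \<circ> p"])
    fix p assume p: "p \<in> CS t"
    show "inv q \<circ> (q \<circ> p) = p" using permutes_inverses[OF qp] by (auto simp: fun_eq_iff)
    show "q \<circ> p \<in> CS t" by (rule CS_comp[OF q p])
    have pp: "p permutes {1..n}" using p by (simp add: CS_def')
    have "sign (q \<circ> p) = sign q * sign p"
      by (simp add: sign_compose permutes_imp_permutation[OF _ qp] permutes_imp_permutation[OF _ pp])
    then show "of_int (sign q) * (of_int (sign (q \<circ> p)) * (if tab (q \<circ> p \<circ> t) = R then 1 else 0)) =
         (of_int (sign p) * (if tab (q \<circ> p \<circ> t) = R then 1 else 0) :: real)"
      by (simp add: sign_def)
  next
    fix p assume p: "p \<in> CS t"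
    show "q \<circ> (inv q \<circ> p) = p" using permutes_inverses[OF qp] by (auto simp: fun_eq_iff)
    show "inv q \<circ> p \<in> CS t" by (rule CS_comp[OF CS_inv[OF q] p])
  qed
  also have "\<dots> = of_int (sign q) * e t R"
    by (simp add: polytabloid_def sum_distrib_left)
  finally show ?thesis .
qed

lemma colinc_row:
  assumes t: "t \<in> T" and ci: "colinc t" and a: "a \<in> {1..n}" and b: "b \<in> {1..n}"
    and c: "col t a = col t b" and ab: "a < b"
  shows "row t a < row t b"
proof (rule ccontr)
  assume "\<not> ?thesis"
  then have le: "row t b \<le> row t a" by simp
  have ca: "cell t a = (row t a, col t a)" by (simp add: row_def col_def)
  have cb: "cell t b = (row t b, col t b)" by (simp add: row_def col_def)
  then have cb: "cell t b = (row t b, col t a)" using c by simp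
  have inC: "(row t a, col t a) \<in> C" "(row t b, col t a) \<in> C"
    using cell_in(1)[OF t a] cell_in(1)[OF t b] ca cb by auto
  show False
  proof (cases "row t b = row t a")
    case True
    then have "cell t a = cell t b" using ca cb by simp
    then have "t (cell t a) = t (cell t b)" by simp
    then have "a = b" using cell_in(2)[OF t a] cell_in(2)[OF t b] by simp
    with ab show False by simp
  next
    case False
    with le have "row t b < row t a" by simp
    then have "t (row t b, col t a) < t (row t a, col t a)" using ci inC by (auto simp: colinc_def)
    then show False using cell_in(2)[OF t a] cell_in(2)[OF t b] ca cb ab by simp
  qed
qed

lemma RL:
  assumes t: "t \<in> T" and ci: "colinc t" and p: "p \<in> CS t" and ne: "p \<noteq> id"
  shows "key n (tab t) < key n (tab (p \<circ> t))"
proof -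
  have pp: "p permutes {1..n}" using p by (simp add: CS_def')
  have ip: "inv p permutes {1..n}" using permutes_inv[OF pp] .
  have ex: "\<exists>k. k \<in> {1..n} \<and> inv p k \<noteq> k"
  proof (rule ccontr)
    assume "\<not> ?thesis"
    then have "inv p x = x" for x using permutes_not_in[OF ip, of x] by blast
    then have "inv p = id" by (simp add: fun_eq_iff)
    then have "p = id" using inv_inv_eq[OF permutes_bij[OF pp]] by simp
    with ne show False by simp
  qed
  define k0 where "k0 = (LEAST k. k \<in> {1..n} \<and> inv p k \<noteq> k)"
  have k0: "k0 \<in> {1..n}" "inv p k0 \<noteq> k0" using LeastI_ex[OF ex] unfolding k0_def by auto
  have fix0: "inv p k = k" if "k \<in> {1..n}" "k < k0" for k
    using not_less_Least[of k "\<lambda>k. k \<in> {1..n} \<and> inv p k \<noteq> k"] that unfolding k0_def by auto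
  define m where "m = inv p k0"
  have m: "m \<in> {1..n}" unfolding m_def by (rule inv_perm_in[OF pp k0(1)])
  have "m > k0"
  proof (rule ccontr)
    assume "\<not> m > k0"
    with k0(2) have "m < k0" unfolding m_def by simp
    then have "inv p m = m" using fix0 m by simp
    then have "inv p m = inv p k0" unfolding m_def by simp
    then have "m = k0" using permutes_inj[OF ip] by (simp add: inj_def)
    with \<open>m < k0\<close> show False by simp
  qed
  have "col t (p m) = col t m" using p m by (simp add: CS_def')
  moreover have "p m = k0" unfolding m_def using permutes_inverses(1)[OF pp] by simp
  ultimately have cm: "col t k0 = col t m" by simp
  have rl: "row t k0 < row t m" by (rule colinc_row[OF t ci k0(1) m cm \<open>m > k0\<close>])
  have tp: "tab (p \<circ> t) = tab t \<circ> inv p" by (rule tab_perm[OF t pp])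
  show ?thesis
  proof (rule key_less[of n "tab t" k0])
    show "tab t k \<le> n" if "k \<in> {1..n}" for k using tab_digit[OF t that] .
    show "k0 \<in> {1..n}" by (rule k0(1))
    show "tab t k = tab (p \<circ> t) k" if "k \<in> {1..n}" "k < k0" for k
      using fix0[OF that] by (simp add: tp)
    show "tab t k0 < tab (p \<circ> t) k0"
      using rl k0(1) m unfolding tp by (simp add: tab_eq m_def)
  qed
qed

lemma e_lead:
  assumes t: "t \<in> T" and ci: "colinc t"
  shows "e t (tab t) = 1" and "e t R \<noteq> 0 \<Longrightarrow> R = tab t \<or> key n (tab t) < key n R"
proof -
  have "e t (tab t) = (\<Sum>p\<in>CS t. (if p = id then 1 else 0))"
    unfolding polytabloid_def
  proof (rule sum.cong[OF refl])
    fix p assume p: "p \<in> CS t"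
    show "of_int (sign p) * (if tab (p \<circ> t) = tab t then 1 else 0) = (if p = id then 1 else (0::real))"
    proof (cases "p = id")
      case False
      then have "tab (p \<circ> t) \<noteq> tab t" using RL[OF t ci p] by auto
      then show ?thesis using False by simp
    qed (simp add: sign_id)
  qed
  also have "\<dots> = 1" using CS_id[of t] finite_CS[of t] by simp
  finally show "e t (tab t) = 1" .
next
  assume "e t R \<noteq> 0"
  then obtain p where p: "p \<in> CS t" "tab (p \<circ> t) = R"
  proof -
    assume "e t R \<noteq> 0"
    then have "\<exists>p\<in>CS t. of_int (sign p) * (if tab (p \<circ> t) = R then 1 else 0) \<noteq> (0::real)"
    proof (rule contrapos_np)
      assume "\<not> (\<exists>p\<in>CS t. of_int (sign p) * (if tab (p \<circ> t) = R then 1 else 0) \<noteq> (0::real))"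
      then have "\<forall>p\<in>CS t. of_int (sign p) * (if tab (p \<circ> t) = R then 1 else 0) = (0::real)" by blast
      then show "e t R = 0" unfolding polytabloid_def by (intro sum.neutral) 
    qed
    then show ?thesis using that by (auto split: if_splits)
  qed
  show "R = tab t \<or> key n (tab t) < key n R"
  proof (cases "p = id")
    case True then show ?thesis using p by simp
  next
    case False then show ?thesis using RL[OF t ci p(1)] p(2) by simp
  qed
qed

lemma rowinc_col:
  assumes t: "t \<in> T" and ri: "rowinc t" and x: "(i,j) \<in> C"
  shows "{k \<in> {1..n}. row t k = i \<and> k < t (i,j)} = t ` {(i,j') | j'. j' < j}"
proof
  show "{k \<in> {1..n}. row t k = i \<and> k < t (i,j)} \<subseteq> t ` {(i,j') | j'. j' < j}"
  proof
    fix k assume k: "k \<in> {k \<in> {1..n}. row t k = i \<and> k < t (i,j)}"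
    then have kn: "k \<in> {1..n}" by simp
    obtain j' where cj: "cell t k = (i,j')" using k by (cases "cell t k") (auto simp: row_def)
    have inC: "(i,j') \<in> C" using cell_in(1)[OF t kn] cj by simp
    have tk: "t (i,j') = k" using cell_in(2)[OF t kn] cj by simp
    have "j' < j"
    proof (rule ccontr)
      assume "\<not> j' < j"
      then have "j < j' \<or> j = j'" by auto
      then show False
      proof
        assume "j < j'" then have "t (i,j) < t (i,j')" using ri x inC by (auto simp: rowinc_def)
        then show False using tk k by simp
      next
        assume "j = j'" then show False using tk k by simp
      qed
    qed
    then show "k \<in> t ` {(i,j') | j'. j' < j}" using tk by blast
  qed
next
  show "t ` {(i,j') | j'. j' < j} \<subseteq> {k \<in> {1..n}. row t k = i \<and> k < t (i,j)}"
  proof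
    fix k assume "k \<in> t ` {(i,j') | j'. j' < j}"
    then obtain j' where j': "j' < j" "k = t (i,j')" by blast
    have inC: "(i,j') \<in> C" using down_closed[OF x, of i j'] j' by simp
    show "k \<in> {k \<in> {1..n}. row t k = i \<and> k < t (i,j)}"
      using t_in[OF t inC] cell_t[OF t inC] ri x inC j' by (auto simp: row_def rowinc_def)
  qed
qed

lemma rowinc_col_card:
  assumes t: "t \<in> T" and ri: "rowinc t" and x: "(i,j) \<in> C"
  shows "card {k \<in> {1..n}. row t k = i \<and> k < t (i,j)} = j"
proof -
  have "inj_on t {(i,j') | j'. j' < j}"
  proof (rule inj_onI)
    fix a b assume "a \<in> {(i,j') | j'. j' < j}" "b \<in> {(i,j') | j'. j' < j}" "t a = t b"
    moreover have "a \<in> C" "b \<in> C" using calculation(1,2) down_closed[OF x] by auto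
    ultimately show "a = b" using t_inj[OF t] by blast
  qed
  moreover have "{(i,j') | j'. j' < j} = (\<lambda>j'. (i,j')) ` {..<j}" by auto
  moreover have "inj_on (\<lambda>j'. (i::nat,j'::nat)) {..<j}" by (auto simp: inj_on_def)
  ultimately show ?thesis unfolding rowinc_col[OF assms] by (simp add: card_image)
qed

lemma std_unique:
  assumes t: "t \<in> T" and u: "u \<in> T" and rt: "rowinc t" and ru: "rowinc u" and eq: "tab t = tab u"
  shows "t = u"
proof -
  have rowe: "row t k = row u k" if "k \<in> {1..n}" for k
    using fun_cong[OF eq, of k] that by (simp add: tab_eq)
  have same: "t x = u x" if x: "x \<in> C" for x
  proof -
    obtain i j where ij: "x = (i,j)" by (cases x)
    define k where "k = t x"
    have kn: "k \<in> {1..n}" unfolding k_def by (rule t_in[OF t x])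
    have ct: "cell t k = (i,j)" unfolding k_def ij using cell_t[OF t x[unfolded ij]] .
    obtain i' j' where cu: "cell u k = (i',j')" by (cases "cell u k")
    have i': "i' = i" using rowe[OF kn] ct cu by (simp add: row_def)
    have inCu: "(i,j') \<in> C" using cell_in(1)[OF u kn] cu i' by simp
    have uk: "u (i,j') = k" using cell_in(2)[OF u kn] cu i' by simp
    have tk: "t (i,j) = k" using k_def ij by simp
    have "{k' \<in> {1..n}. row t k' = i \<and> k' < k} = {k' \<in> {1..n}. row u k' = i \<and> k' < k}"
      using rowe by auto
    then have "j = j'" using rowinc_col_card[OF t rt x[unfolded ij]] rowinc_col_card[OF u ru inCu] tk uk
      by simp
    then show ?thesis using uk tk ij by simp
  qed
  show ?thesis by (rule extensionalityI[OF tabE(2)[OF t] tabE(2)[OF u] same])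
qed

end

lemma sum_fun_apply: "(sum f A) x = sum (\<lambda>a. f a x) A"
  by (induction A rule: infinite_finite_induct) auto

interpretation FV: vector_space "(\<lambda>(r::real) (f::(nat\<Rightarrow>nat)\<Rightarrow>real) x. r * f x)"
  by unfold_locales (auto simp: fun_eq_iff algebra_simps)

lemma sign_sq: "of_int (sign p) * of_int (sign p) = (1::real)"
  by (simp add: sign_def)

context young
begin

definition ckey :: "((nat \<times> nat) \<Rightarrow> nat) \<Rightarrow> nat" where
  "ckey t = key n (\<lambda>k. if k \<in> {1..n} then col t k else 0)"

definition Std where "Std = {t \<in> T. colinc t \<and> rowinc t}"

lemma tab_restrict: "tab (restrict f C) = tab f"
  unfolding tabloid_def cell_restrict ..

lemma ckey_restrict: "ckey (restrict f C) = ckey f"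
  unfolding ckey_def col_def cell_restrict ..

lemma col_digit: "t \<in> T \<Longrightarrow> k \<in> {1..n} \<Longrightarrow> col t k \<le> n"
  using C_bound[OF cell_in(1)] by (fastforce simp: col_def)

lemma col_cell: "t \<in> T \<Longrightarrow> (i,j) \<in> C \<Longrightarrow> col t (t (i,j)) = j"
  using cell_t by (simp add: col_def)

lemma row_cell: "t \<in> T \<Longrightarrow> (i,j) \<in> C \<Longrightarrow> row t (t (i,j)) = i"
  using cell_t by (simp add: row_def)

lemma garnir_zero:
  assumes t: "t \<in> T" and c1: "(i,j) \<in> C" and c2: "(i, Suc j) \<in> C"
  defines "A \<equiv> {t (i',j) | i'. i \<le> i' \<and> (i',j) \<in> C}"
      and "B \<equiv> {t (i', Suc j) | i'. i' \<le> i}"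
  shows "(\<Sum>\<sigma>\<in>{\<sigma>. \<sigma> permutes (A \<union> B)}. of_int (sign \<sigma>) * e (\<sigma> \<circ> t) R) = 0"
proof -
  define D where "D = A \<union> B"
  define P where "P = {\<sigma>. \<sigma> permutes D}"
  have Bc: "(i', Suc j) \<in> C" if "i' \<le> i" for i' using down_closed[OF c2 that] by simp
  have Dn: "D \<subseteq> {1..n}" unfolding D_def A_def B_def using t_in[OF t] Bc by auto
  have finD: "finite D" using Dn finite_subset by blast
  have Pn: "\<sigma> permutes {1..n}" if "\<sigma> \<in> P" for \<sigma> using that Dn unfolding P_def by (auto intro: permutes_subset)
  have finP: "finite P" unfolding P_def using finite_permutations[OF finD] .
  have inner: "(\<Sum>\<sigma>\<in>P. of_int (sign \<sigma>) * (if tab (\<sigma> \<circ> p \<circ> t) = R then 1 else 0)) = (0::real)"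
    if p: "p \<in> CS t" for p
  proof -
    have pp: "p permutes {1..n}" using p by (simp add: CS_def')
    have ip: "inv p \<in> CS t" using CS_inv[OF p] .
    define h where "h k = row t (inv p k)" for k
    define Rj where "Rj = {r. (r,j) \<in> C}"
    have finRj: "finite Rj" unfolding Rj_def
      by (rule finite_subset[of _ "fst ` C"]) (auto simp: image_iff intro!: bexI[where x="(_, j)"])
    have hA: "h a \<in> Rj" if a: "a \<in> A" for a
    proof -
      obtain i' where i': "a = t (i',j)" "(i',j) \<in> C" using a unfolding A_def by blast
      have an: "a \<in> {1..n}" using t_in[OF t i'(2)] i'(1) by simp
      have "col t (inv p a) = col t a" using ip an by (simp add: CS_def')
      also have "\<dots> = j" using col_cell[OF t i'(2)] i'(1) by simp
      finally have "cell t (inv p a) = (h a, j)" by (simp add: h_def row_def col_def prod_eq_iff)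
      then show ?thesis using cell_in(1)[OF t inv_perm_in[OF pp an]] unfolding Rj_def by simp
    qed
    have hB: "h b \<in> Rj" if b: "b \<in> B" for b
    proof -
      obtain i' where i': "b = t (i',Suc j)" "i' \<le> i" using b unfolding B_def by blast
      have ic: "(i', Suc j) \<in> C" using Bc[OF i'(2)] .
      have bn: "b \<in> {1..n}" using t_in[OF t ic] i'(1) by simp
      have "col t (inv p b) = col t b" using ip bn by (simp add: CS_def')
      also have "\<dots> = Suc j" using col_cell[OF t ic] i'(1) by simp
      finally have "cell t (inv p b) = (h b, Suc j)" by (simp add: h_def row_def col_def prod_eq_iff)
      then have "(h b, Suc j) \<in> C" using cell_in(1)[OF t inv_perm_in[OF pp bn]] by simp
      then show ?thesis using down_closed[of "h b" "Suc j" "h b" j] unfolding Rj_def by simp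
    qed
    have cardA: "card A = card {r \<in> Rj. i \<le> r}"
    proof -
      have "A = t ` ((\<lambda>r. (r,j)) ` {r \<in> Rj. i \<le> r})" unfolding A_def Rj_def by auto
      moreover have "inj_on t ((\<lambda>r. (r,j)) ` {r \<in> Rj. i \<le> r})"
        using t_inj[OF t] unfolding Rj_def by (auto simp: inj_on_def)
      moreover have "inj_on (\<lambda>r. (r,j)) {r \<in> Rj. i \<le> r}" by (auto simp: inj_on_def)
      ultimately show ?thesis by (simp add: card_image)
    qed
    have cardB: "card B = Suc i"
    proof -
      have "B = t ` ((\<lambda>r. (r,Suc j)) ` {..i})" unfolding B_def by auto
      moreover have "inj_on t ((\<lambda>r. (r,Suc j)) ` {..i})"
      proof (rule inj_onI)
        fix a b assume "a \<in> (\<lambda>r. (r,Suc j)) ` {..i}" "b \<in> (\<lambda>r. (r,Suc j)) ` {..i}" "t a = t b"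
        moreover have "a \<in> C" "b \<in> C" using calculation(1,2) Bc by auto
        ultimately show "a = b" using t_inj[OF t, of a b] by simp
      qed
      moreover have "inj_on (\<lambda>r. (r,Suc j)) {..i}" by (auto simp: inj_on_def)
      ultimately show ?thesis by (simp add: card_image)
    qed
    have disj: "A \<inter> B = {}"
    proof (rule ccontr)
      assume "A \<inter> B \<noteq> {}"
      then obtain i1 i2 where "t (i1,j) = t (i2, Suc j)" "(i1,j) \<in> C" "i2 \<le> i"
        unfolding A_def B_def by blast
      then show False using t_inj[OF t] Bc by force
    qed
    have cardD: "card D = card Rj + 1"
    proof -
      have "Rj = {r \<in> Rj. i \<le> r} \<union> {..<i}"
        unfolding Rj_def using down_closed[OF c1] by auto
      then have "card Rj = card {r \<in> Rj. i \<le> r} + card {..<i}"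
        by (metis (no_types, lifting) card_Un_disjoint disjoint_iff finRj finite_Un lessThan_iff
            mem_Collect_eq not_le)
      moreover have "card D = card A + card B" unfolding D_def
        by (rule card_Un_disjoint) (use finD disj in \<open>auto simp: D_def\<close>)
      ultimately show ?thesis using cardA cardB by simp
    qed
    have "\<not> inj_on h D"
    proof
      assume "inj_on h D"
      then have "card D \<le> card Rj"
        by (rule card_inj_on_le) (use hA hB finRj in \<open>auto simp: D_def\<close>)
      with cardD show False by simp
    qed
    then obtain x y where xy: "x \<in> D" "y \<in> D" "x \<noteq> y" "h x = h y" unfolding inj_on_def by blast
    define \<tau> where "\<tau> = Transposition.transpose x y"
    have tabxy: "tab (p \<circ> t) \<circ> \<tau> = tab (p \<circ> t)"
    proof (rule ext)
      fix k
      have "tab (p \<circ> t) x = tab (p \<circ> t) y"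
        using xy Dn row_perm[OF t pp] by (auto simp: tab_eq h_def)
      then show "(tab (p \<circ> t) \<circ> \<tau>) k = tab (p \<circ> t) k"
        unfolding \<tau>_def by (auto simp: transpose_def)
    qed
    have tauP: "\<tau> permutes D" unfolding \<tau>_def using xy by (intro permutes_swap_id)
    define f where "f \<sigma> = (of_int (sign \<sigma>) * (if tab (\<sigma> \<circ> p \<circ> t) = R then 1 else 0) :: real)" for \<sigma>
    have fneg: "f (\<sigma> \<circ> \<tau>) = - f \<sigma>" if s: "\<sigma> \<in> P" for \<sigma>
    proof -
      have sp: "\<sigma> permutes D" using s unfolding P_def by simp
      have "sign (\<sigma> \<circ> \<tau>) = sign \<sigma> * sign \<tau>"
        by (rule sign_compose) (use permutes_imp_permutation[OF finD] sp tauP in auto)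
      also have "sign \<tau> = -1" unfolding \<tau>_def using xy(3) by (simp add: sign_swap_id)
      finally have sg: "sign (\<sigma> \<circ> \<tau>) = - sign \<sigma>" by (simp only: mult_minus1_right)
      have stn: "\<sigma> \<circ> \<tau> permutes {1..n}" using permutes_compose[OF tauP sp] Dn by (auto intro: permutes_subset)
      have 1: "tab (\<sigma> \<circ> \<tau> \<circ> p \<circ> t) = tab (p \<circ> t) \<circ> inv (\<sigma> \<circ> \<tau>)" by (rule tab_comp_perm[OF t stn pp])
      have 2: "inv (\<sigma> \<circ> \<tau>) = \<tau> \<circ> inv \<sigma>"
      proof -
        have "inv (\<sigma> \<circ> \<tau>) = inv \<tau> \<circ> inv \<sigma>"
          by (rule o_inv_distrib) (use permutes_bij[OF sp] permutes_bij[OF tauP] in auto)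
        moreover have "inv \<tau> = \<tau>" unfolding \<tau>_def by (simp add: inv_unique_comp)
        ultimately show ?thesis by simp
      qed
      have 3: "tab (p \<circ> t) \<circ> (\<tau> \<circ> inv \<sigma>) = tab (p \<circ> t) \<circ> inv \<sigma>"
        using tabxy by (metis comp_assoc)
      have 4: "tab (p \<circ> t) \<circ> inv \<sigma> = tab (\<sigma> \<circ> p \<circ> t)" using tab_comp_perm[OF t Pn[OF s] pp] by simp
      have tabeq: "tab (\<sigma> \<circ> \<tau> \<circ> p \<circ> t) = tab (\<sigma> \<circ> p \<circ> t)" unfolding 1 2 3 4 ..
      show ?thesis unfolding f_def sg tabeq by simp
    qed
    have "sum f P = sum (\<lambda>\<sigma>. f (\<sigma> \<circ> \<tau>)) P"
    proof (rule sum.reindex_bij_witness[where i = "\<lambda>\<sigma>. \<sigma> \<circ> \<tau>" and j = "\<lambda>\<sigma>. \<sigma> \<circ> \<tau>"])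
      fix \<sigma> assume s: "\<sigma> \<in> P"
      show "\<sigma> \<circ> \<tau> \<circ> \<tau> = \<sigma>" unfolding \<tau>_def by (simp add: comp_assoc)
      show "\<sigma> \<circ> \<tau> \<in> P" using permutes_compose[OF tauP] s unfolding P_def by simp
      show "f (\<sigma> \<circ> \<tau> \<circ> \<tau>) = f \<sigma>" unfolding \<tau>_def by (simp add: comp_assoc)
    next
      fix \<sigma> assume s: "\<sigma> \<in> P"
      show "\<sigma> \<circ> \<tau> \<circ> \<tau> = \<sigma>" unfolding \<tau>_def by (simp add: comp_assoc)
      show "\<sigma> \<circ> \<tau> \<in> P" using permutes_compose[OF tauP] s unfolding P_def by simp
    qed
    also have "\<dots> = - sum f P" using fneg by (simp add: sum_negf)
    finally have "sum f P = 0" by simp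
    then show ?thesis unfolding f_def by (simp add: o_assoc)
  qed
  have "(\<Sum>\<sigma>\<in>P. of_int (sign \<sigma>) * e (\<sigma> \<circ> t) R)
      = (\<Sum>\<sigma>\<in>P. \<Sum>p\<in>CS t. of_int (sign \<sigma>) * (of_int (sign p) * (if tab (\<sigma> \<circ> p \<circ> t) = R then 1 else 0)))"
    by (rule sum.cong[OF refl]) (simp add: e_perm_sum[OF t Pn] sum_distrib_left)
  also have "\<dots> = (\<Sum>p\<in>CS t. of_int (sign p) * (\<Sum>\<sigma>\<in>P. of_int (sign \<sigma>) * (if tab (\<sigma> \<circ> p \<circ> t) = R then 1 else 0)))"
    by (subst sum.swap) (simp add: sum_distrib_left algebra_simps)
  also have "\<dots> = 0" using inner by simp
  finally show ?thesis unfolding P_def D_def .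
qed


abbreviation "Sp \<equiv> FV.span (e ` Std)"

lemma garnir_step:
  assumes t: "t \<in> T" and ci: "colinc t" and c1: "(i,j) \<in> C" and c2: "(i, Suc j) \<in> C"
    and desc: "t (i, Suc j) < t (i,j)"
    and IH: "\<And>u. u \<in> T \<Longrightarrow> ckey u < ckey t \<Longrightarrow> e u \<in> Sp"
  shows "e t \<in> Sp"
proof -
  define A where "A = {t (i',j) | i'. i \<le> i' \<and> (i',j) \<in> C}"
  define B where "B = {t (i', Suc j) | i'. i' \<le> i}"
  define D where "D = A \<union> B"
  define P where "P = {\<sigma>. \<sigma> permutes D}"
  define P0 where "P0 = {\<sigma> \<in> P. \<sigma> ` A = A}"
  define F where "F \<sigma> = (\<lambda>R. of_int (sign \<sigma>) * e (\<sigma> \<circ> t) R)" for \<sigma>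
  have Bc: "(i', Suc j) \<in> C" if "i' \<le> i" for i' using down_closed[OF c2 that] by simp
  have Dn: "D \<subseteq> {1..n}" unfolding D_def A_def B_def using t_in[OF t] Bc by auto
  have finD: "finite D" using Dn finite_subset by blast
  have Pn: "\<sigma> permutes {1..n}" if "\<sigma> \<in> P" for \<sigma> using that Dn unfolding P_def by (auto intro: permutes_subset)
  have finP: "finite P" unfolding P_def using finite_permutations[OF finD] .
  have colA: "col t a = j" if "a \<in> A" for a using that col_cell[OF t] unfolding A_def by auto
  have colB: "col t b = Suc j" if "b \<in> B" for b using that col_cell[OF t] Bc unfolding B_def by auto
  have disj: "A \<inter> B = {}" using colA colB by force
  have AB: "b < a" if a: "a \<in> A" and b: "b \<in> B" for a b
  proof -
    obtain i1 where i1: "a = t (i1,j)" "i \<le> i1" "(i1,j) \<in> C" using a unfolding A_def by blast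
    obtain i2 where i2: "b = t (i2, Suc j)" "i2 \<le> i" using b unfolding B_def by blast
    have "t (i,j) \<le> a"
      using i1 ci c1 by (cases "i = i1") (auto simp: colinc_def less_imp_le)
    moreover have "b \<le> t (i, Suc j)"
      using i2 ci c2 Bc by (cases "i = i2") (auto simp: colinc_def less_imp_le)
    ultimately show ?thesis using desc by simp
  qed
  have zero: "(\<Sum>\<sigma>\<in>P. F \<sigma>) = 0"
  proof (rule ext)
    fix R
    show "(\<Sum>\<sigma>\<in>P. F \<sigma>) R = 0 R"
      using garnir_zero[OF t c1 c2, of R] unfolding sum_fun_apply F_def P_def D_def A_def B_def by simp
  qed
  have P0CS: "\<sigma> \<in> CS t" if s: "\<sigma> \<in> P0" for \<sigma>
  proof -
    have sp: "\<sigma> permutes D" and sA: "\<sigma> ` A = A" using s unfolding P0_def P_def by auto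
    have "col t (\<sigma> k) = col t k" if k: "k \<in> {1..n}" for k
    proof (cases "k \<in> D")
      case True
      show ?thesis
      proof (cases "k \<in> A")
        case True
        then have "\<sigma> k \<in> A" using sA by blast
        then show ?thesis using colA True by simp
      next
        case False
        with \<open>k \<in> D\<close> have kB: "k \<in> B" unfolding D_def by simp
        have "\<sigma> k \<in> D" using permutes_in_image[OF sp] \<open>k \<in> D\<close> by simp
        moreover have "\<sigma> k \<notin> A"
        proof
          assume "\<sigma> k \<in> A"
          then obtain a where "a \<in> A" "\<sigma> a = \<sigma> k" using sA by (metis imageE)
          then have "a = k" using permutes_inj[OF sp] by (simp add: inj_def)
          with False \<open>a \<in> A\<close> show False by simp
        qed
        ultimately have "\<sigma> k \<in> B" unfolding D_def by simp
        then show ?thesis using colB kB by simp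
      qed
    next
      case False
      then show ?thesis using permutes_not_in[OF sp] by simp
    qed
    then show ?thesis using Pn[of \<sigma>] s unfolding P0_def CS_def' by simp
  qed
  have P0val: "F \<sigma> = e t" if s: "\<sigma> \<in> P0" for \<sigma>
    using e_sign[OF t P0CS[OF s]] unfolding F_def by (simp add: mult.assoc[symmetric] sign_sq)
  have P1key: "ckey (restrict (\<sigma> \<circ> t) C) < ckey t" if s: "\<sigma> \<in> P - P0" for \<sigma>
  proof -
    have sp: "\<sigma> permutes D" and sA: "\<sigma> ` A \<noteq> A" using s unfolding P0_def P_def by auto
    have spn: "\<sigma> permutes {1..n}" using Pn s by simp
    have isp: "inv \<sigma> permutes D" using permutes_inv[OF sp] .
    have "\<not> \<sigma> ` A \<subseteq> A"
    proof
      assume sub: "\<sigma> ` A \<subseteq> A"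
      have "finite A" using finD unfolding D_def by simp
      moreover have "card (\<sigma> ` A) = card A"
        using permutes_inj[OF sp] by (simp add: card_image inj_on_def inj_def)
      ultimately have "\<sigma> ` A = A" using sub by (simp add: card_subset_eq)
      with sA show False by simp
    qed
    then obtain a where a: "a \<in> A" "\<sigma> a \<notin> A" by blast
    have "\<sigma> a \<in> D" using permutes_in_image[OF sp] a(1) unfolding D_def by simp
    then have saB: "\<sigma> a \<in> B" using a(2) unfolding D_def by simp
    define g where "g k = (if k \<in> {1..n} then col t k else 0)" for k
    define f where "f k = (if k \<in> {1..n} then col (restrict (\<sigma> \<circ> t) C) k else 0)" for k
    have f_eq: "f k = (if k \<in> {1..n} then col t (inv \<sigma> k) else 0)" for k
      unfolding f_def col_def cell_restrict using col_perm[OF t spn, of k] by (simp add: col_def)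
    have ex: "\<exists>k. k \<in> {1..n} \<and> f k \<noteq> g k"
    proof (intro exI conjI)
      show "\<sigma> a \<in> {1..n}" using saB Dn unfolding D_def by auto
      have "inv \<sigma> (\<sigma> a) = a" using permutes_inverses(2)[OF sp] by simp
      then show "f (\<sigma> a) \<noteq> g (\<sigma> a)"
        using colA[OF a(1)] colB[OF saB] \<open>\<sigma> a \<in> {1..n}\<close> unfolding f_eq g_def by simp
    qed
    define k0 where "k0 = (LEAST k. k \<in> {1..n} \<and> f k \<noteq> g k)"
    have k0: "k0 \<in> {1..n}" "f k0 \<noteq> g k0" using LeastI_ex[OF ex] unfolding k0_def by auto
    have before: "f k = g k" if "k \<in> {1..n}" "k < k0" for k
      using not_less_Least[of k "\<lambda>k. k \<in> {1..n} \<and> f k \<noteq> g k"] that unfolding k0_def by auto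
    have k0le: "k0 \<le> \<sigma> a"
    proof (rule Least_le[of "\<lambda>k. k \<in> {1..n} \<and> f k \<noteq> g k", folded k0_def])
      have "inv \<sigma> (\<sigma> a) = a" using permutes_inverses(2)[OF sp] by simp
      moreover have "\<sigma> a \<in> {1..n}" using saB Dn unfolding D_def by auto
      ultimately show "\<sigma> a \<in> {1..n} \<and> f (\<sigma> a) \<noteq> g (\<sigma> a)"
        using colA[OF a(1)] colB[OF saB] unfolding f_eq g_def by simp
    qed
    have k0D: "k0 \<in> D"
    proof (rule ccontr)
      assume "k0 \<notin> D"
      then have "inv \<sigma> k0 = k0" using permutes_not_in[OF isp] by simp
      then show False using k0 unfolding f_eq g_def by simp
    qed
    have k0B: "k0 \<in> B"
    proof (rule ccontr)
      assume "k0 \<notin> B"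
      then have "k0 \<in> A" using k0D unfolding D_def by simp
      then have "\<sigma> a < k0" using AB saB by simp
      with k0le show False by simp
    qed
    have ik: "inv \<sigma> k0 \<in> D" using permutes_in_image[OF isp] k0D by simp
    have ikA: "inv \<sigma> k0 \<in> A"
    proof (rule ccontr)
      assume "inv \<sigma> k0 \<notin> A"
      then have "inv \<sigma> k0 \<in> B" using ik unfolding D_def by simp
      then show False using k0 colB k0B unfolding f_eq g_def by simp
    qed
    have "key n f < key n g"
    proof (rule key_less[OF _ k0(1)])
      show "f k \<le> n" if "k \<in> {1..n}" for k
        using that col_digit[OF t inv_perm_in[OF spn that]] unfolding f_eq by simp
      show "f k = g k" if "k \<in> {1..n}" "k < k0" for k using before[OF that] .
      show "f k0 < g k0" using colA[OF ikA] colB[OF k0B] k0(1) unfolding f_eq g_def by simp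
    qed
    then show ?thesis unfolding ckey_def f_def g_def .
  qed
  have cardP0: "card P0 \<ge> 1"
  proof -
    have "id \<in> P0" unfolding P0_def P_def by (simp add: permutes_id)
    moreover have "finite P0" using finP unfolding P0_def by simp
    ultimately show ?thesis by (metis One_nat_def Suc_leI card_gt_0_iff empty_iff)
  qed
  have split: "(\<Sum>\<sigma>\<in>P. F \<sigma>) = (\<Sum>\<sigma>\<in>P0. F \<sigma>) + (\<Sum>\<sigma>\<in>P - P0. F \<sigma>)"
  proof -
    have "P0 \<subseteq> P" unfolding P0_def by auto
    then show ?thesis using sum.subset_diff[of P0 P F] finP by (simp add: add.commute)
  qed
  have s0: "(\<Sum>\<sigma>\<in>P0. F \<sigma>) = (\<lambda>R. real (card P0) * e t R)"
    by (rule ext) (simp add: sum_fun_apply P0val)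
  have s1: "(\<Sum>\<sigma>\<in>P - P0. F \<sigma>) \<in> Sp"
  proof (rule FV.span_sum)
    fix \<sigma> assume s: "\<sigma> \<in> P - P0"
    have "restrict (\<sigma> \<circ> t) C \<in> T" using perm_tab_in_T[OF t Pn] s by simp
    then have "e (restrict (\<sigma> \<circ> t) C) \<in> Sp" using IH P1key[OF s] by simp
    then have "(\<lambda>R. of_int (sign \<sigma>) * e (restrict (\<sigma> \<circ> t) C) R) \<in> Sp" by (rule FV.span_scale)
    then show "F \<sigma> \<in> Sp" unfolding F_def e_restrict .
  qed
  have "(\<lambda>R. real (card P0) * e t R) = - (\<Sum>\<sigma>\<in>P - P0. F \<sigma>)"
    using zero split s0 by (simp add: eq_neg_iff_add_eq_0)
  then have "(\<lambda>R. real (card P0) * e t R) \<in> Sp" using FV.span_neg[OF s1] by simp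
  then have "(\<lambda>R. (1 / real (card P0)) * (real (card P0) * e t R)) \<in> Sp" by (rule FV.span_scale)
  moreover have "(\<lambda>R. (1 / real (card P0)) * (real (card P0) * e t R)) = e t"
    using cardP0 by (auto simp: fun_eq_iff)
  ultimately show ?thesis by simp
qed


lemma swap_step:
  assumes t: "t \<in> T" and c1: "(r,c) \<in> C" and c2: "(r',c) \<in> C" and rr: "r < r'"
    and gt: "t (r',c) < t (r,c)"
  defines "\<tau> \<equiv> Transposition.transpose (t (r,c)) (t (r',c))"
  shows "restrict (\<tau> \<circ> t) C \<in> T" "e (restrict (\<tau> \<circ> t) C) = (\<lambda>R. - e t R)"
    "ckey (restrict (\<tau> \<circ> t) C) = ckey t" "key n (tab (restrict (\<tau> \<circ> t) C)) < key n (tab t)"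
proof -
  define a where "a = t (r',c)"
  define b where "b = t (r,c)"
  have an: "a \<in> {1..n}" and bn: "b \<in> {1..n}" unfolding a_def b_def using t_in[OF t] c1 c2 by auto
  have ab: "a < b" using gt unfolding a_def b_def .
  have teq: "\<tau> = Transposition.transpose b a" unfolding \<tau>_def a_def b_def ..
  have tp: "\<tau> permutes {1..n}" unfolding teq by (rule permutes_swap_id[OF bn an])
  have tinv: "inv \<tau> = \<tau>" unfolding teq by (simp add: inv_unique_comp)
  have ca: "col t a = c" "row t a = r'" unfolding a_def using col_cell[OF t c2] row_cell[OF t c2] by auto
  have cb: "col t b = c" "row t b = r" unfolding b_def using col_cell[OF t c1] row_cell[OF t c1] by auto
  have colt: "col t (\<tau> k) = col t k" for k
  proof -
    consider "k = a" | "k = b" | "k \<noteq> a \<and> k \<noteq> b" by blast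
    then show ?thesis
    proof cases
      case 1 then show ?thesis unfolding teq using ca cb by simp
    next
      case 2 then show ?thesis unfolding teq using ca cb by simp
    next
      case 3 then show ?thesis unfolding teq by simp
    qed
  qed
  have tCS: "\<tau> \<in> CS t" using tp colt by (simp add: CS_def')
  show "restrict (\<tau> \<circ> t) C \<in> T" by (rule perm_tab_in_T[OF t tp])
  have "sign \<tau> = -1" unfolding teq using ab by (simp add: sign_swap_id)
  then show "e (restrict (\<tau> \<circ> t) C) = (\<lambda>R. - e t R)"
    using e_sign[OF t tCS] by (simp add: e_restrict fun_eq_iff)
  have "(\<lambda>k. if k \<in> {1..n} then col (restrict (\<tau> \<circ> t) C) k else 0) = (\<lambda>k. if k \<in> {1..n} then col t k else 0)"
  proof (rule ext)
    fix k show "(if k \<in> {1..n} then col (restrict (\<tau> \<circ> t) C) k else 0) = (if k \<in> {1..n} then col t k else 0)"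
      using col_perm[OF t tp, of k] colt[of k] tinv unfolding col_def cell_restrict by simp
  qed
  then show "ckey (restrict (\<tau> \<circ> t) C) = ckey t" unfolding ckey_def by simp
  have tabt: "tab (restrict (\<tau> \<circ> t) C) = tab t \<circ> \<tau>" unfolding tab_restrict tab_perm[OF t tp] tinv ..
  show "key n (tab (restrict (\<tau> \<circ> t) C)) < key n (tab t)"
  proof (rule key_less[OF _ an])
    show "(tab (restrict (\<tau> \<circ> t) C)) k \<le> n" if "k \<in> {1..n}" for k
      unfolding tabt using tab_digit[OF t perm_in[OF tp that]] by simp
    show "tab (restrict (\<tau> \<circ> t) C) k = tab t k" if "k \<in> {1..n}" "k < a" for k
    proof -
      have "\<tau> k = k" unfolding teq using that ab by simp
      then show ?thesis unfolding tabt by simp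
    qed
    have "\<tau> a = b" unfolding teq by simp
    then show "tab (restrict (\<tau> \<circ> t) C) a < tab t a"
      unfolding tabt using ca cb an bn rr by (simp add: tab_eq)
  qed
qed

lemma adj_desc:
  assumes t: "t \<in> T" and c: "(i,j') \<in> C" and jj: "j < j'" and gt: "t (i,j') < t (i,j)"
  shows "\<exists>j''. (i, Suc j'') \<in> C \<and> t (i, Suc j'') < t (i, j'')"
proof (rule ccontr)
  assume "\<not> ?thesis"
  then have inc: "t (i, j'') < t (i, Suc j'')" if "(i, Suc j'') \<in> C" for j''
    using that t_inj[OF t, of "(i, Suc j'')" "(i,j'')"] down_closed[OF that, of i j''] by fastforce
  have "t (i,j) < t (i, j + Suc d)" if "(i, j + Suc d) \<in> C" for d
    using that
  proof (induction d)
    case 0 then show ?case using inc by simp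
  next
    case (Suc d)
    have "(i, j + Suc d) \<in> C" using down_closed[OF Suc.prems, of i "j + Suc d"] by simp
    then have "t (i,j) < t (i, j + Suc d)" by (rule Suc.IH)
    also have "\<dots> < t (i, Suc (j + Suc d))" using inc Suc.prems by simp
    finally show ?case by simp
  qed
  from this[of "j' - Suc j"] c jj gt show False by simp
qed

lemma span_all: assumes t: "t \<in> T" shows "e t \<in> Sp"
proof -
  have main: "\<And>t. t \<in> T \<Longrightarrow> ckey t = c \<Longrightarrow> e t \<in> Sp" for c
  proof (induction c rule: less_induct)
    case (less c)
    note outer = less.IH
    have inner: "\<And>t. t \<in> T \<Longrightarrow> ckey t = c \<Longrightarrow> key n (tab t) = d \<Longrightarrow> e t \<in> Sp" for d
    proof (induction d rule: less_induct)
      case (less d t)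
      show ?case
      proof (cases "colinc t")
        case False
        then obtain r r' cc where rc: "(r,cc) \<in> C" "(r',cc) \<in> C" "r < r'" "\<not> t (r,cc) < t (r',cc)"
          unfolding colinc_def by blast
        have "t (r,cc) \<noteq> t (r',cc)" using t_inj[OF less.prems(1) rc(1,2)] rc(3) by auto
        then have gt: "t (r',cc) < t (r,cc)" using rc(4) by simp
        note sw = swap_step[OF less.prems(1) rc(1,2,3) gt]
        have "e (restrict (Transposition.transpose (t (r, cc)) (t (r', cc)) \<circ> t) C) \<in> Sp"
        proof (rule less.IH[OF _ sw(1) _ refl])
          show "key n (tab (restrict (Transposition.transpose (t (r, cc)) (t (r', cc)) \<circ> t) C)) < d"
            using sw(4) unfolding less.prems(3) .
          show "ckey (restrict (Transposition.transpose (t (r, cc)) (t (r', cc)) \<circ> t) C) = c"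
            using sw(3) unfolding less.prems(2) .
        qed
        then have "(\<lambda>R. - e t R) \<in> Sp" using sw(2) by simp
        then have "- (\<lambda>R. - e t R) \<in> Sp" by (rule FV.span_neg)
        moreover have "- (\<lambda>R. - e t R) = e t" by (rule ext) simp
        ultimately show ?thesis by simp
      next
        case ci: True
        show ?thesis
        proof (cases "rowinc t")
          case True
          then have "t \<in> Std" using ci less.prems(1) by (simp add: Std_def)
          then show ?thesis by (intro FV.span_base imageI)
        next
          case False
          then obtain i j j' where ij: "(i,j) \<in> C" "(i,j') \<in> C" "j < j'" "\<not> t (i,j) < t (i,j')"
            unfolding rowinc_def by blast
          have "t (i,j) \<noteq> t (i,j')" using t_inj[OF less.prems(1) ij(1,2)] ij(3) by auto
          then have "t (i,j') < t (i,j)" using ij(4) by simp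
          then obtain j'' where j'': "(i, Suc j'') \<in> C" "t (i, Suc j'') < t (i, j'')"
            using adj_desc[OF less.prems(1) ij(2,3)] by blast
          have c1: "(i,j'') \<in> C" using down_closed[OF j''(1), of i j''] by simp
          show ?thesis
          proof (rule garnir_step[OF less.prems(1) ci c1 j''(1,2)])
            fix u assume "u \<in> T" "ckey u < ckey t"
            then show "e u \<in> Sp" using less.prems(2) by (intro outer) auto
          qed
        qed
      qed
    qed
    show ?case using inner less.prems by blast
  qed
  show ?thesis using main[OF t refl] .
qed

end

lemma coord_unique:
  assumes B: "is_basis_of B V" and rep: "\<forall>R. v R = (\<Sum>b\<in>B. c b * b R)" and b0: "b0 \<in> B"
  shows "coord B v b0 = c b0"
proof -
  have fin: "finite B" and li: "lin_indep B" using B by (auto simp: is_basis_of_def)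
  define c' where "c' = restrict c B"
  have rep': "\<forall>R. v R = (\<Sum>b\<in>B. c' b * b R)" using rep unfolding c'_def by simp
  have uniq: "d = c'" if d: "d \<in> extensional B \<and> (\<forall>R. v R = (\<Sum>b\<in>B. d b * b R))" for d
  proof -
    have "\<forall>R. (\<Sum>b\<in>B. (d b - c' b) * b R) = 0"
      using d rep' by (simp add: algebra_simps sum_subtractf)
    moreover have li': "\<And>c. (\<forall>R. (\<Sum>b\<in>B. c b * b R) = 0) \<Longrightarrow> \<forall>b\<in>B. c b = 0"
      using li unfolding lin_indep_def by blast
    ultimately have "\<forall>b\<in>B. d b - c' b = 0" using li'[of "\<lambda>b. d b - c' b"] by blast
    then show "d = c'" using d unfolding c'_def by (intro extensionalityI[of _ B]) auto
  qed
  have "coord B v = c'" unfolding coord_def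
  proof (rule the_equality)
    show "c' \<in> extensional B \<and> (\<forall>R. v R = (\<Sum>b\<in>B. c' b * b R))" using rep' unfolding c'_def by simp
  qed (rule uniq)
  then show ?thesis using b0 unfolding c'_def by simp
qed

lemma coord_rep:
  assumes B: "is_basis_of B V" and v: "v \<in> V"
  shows "\<forall>R. v R = (\<Sum>b\<in>B. coord B v b * b R)"
proof -
  have "\<forall>v\<in>V. \<exists>c. \<forall>R. v R = (\<Sum>b\<in>B. c b * b R)" using B by (simp add: is_basis_of_def)
  then obtain c where c: "\<forall>R. v R = (\<Sum>b\<in>B. c b * b R)" using v by blast
  have "(\<Sum>b\<in>B. coord B v b * b R) = (\<Sum>b\<in>B. c b * b R)" for R
    by (rule sum.cong[OF refl]) (simp add: coord_unique[OF B c])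
  then show ?thesis using c by simp
qed

lemma trace_eigen:
  assumes B: "is_basis_of B V" and U: "is_basis_of U V"
    and eig: "\<And>x. x \<in> U \<Longrightarrow> perm_act s x = (\<lambda>R. \<epsilon> x * x R)"
  shows "(\<Sum>b\<in>B. coord B (perm_act s b) b) = (\<Sum>x\<in>U. \<epsilon> x)"
proof -
  have finB: "finite B" "B \<subseteq> V" and finU: "finite U" "U \<subseteq> V" using B U by (auto simp: is_basis_of_def)
  define \<alpha> where "\<alpha> b x = coord U b x" for b x
  define \<beta> where "\<beta> x b = coord B x b" for x b
  have repb: "\<forall>R. b R = (\<Sum>x\<in>U. \<alpha> b x * x R)" if "b \<in> B" for b
    unfolding \<alpha>_def using coord_rep[OF U] that finB by auto
  have repx: "\<forall>R. x R = (\<Sum>b\<in>B. \<beta> x b * b R)" if "x \<in> U" for x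
    unfolding \<beta>_def using coord_rep[OF B] that finU by auto
  have fb: "perm_act s b R = (\<Sum>b'\<in>B. (\<Sum>x\<in>U. \<alpha> b x * \<epsilon> x * \<beta> x b') * b' R)" if b: "b \<in> B" for b R
  proof -
    have "perm_act s b R = (\<Sum>x\<in>U. \<alpha> b x * x (R \<circ> s))"
      using repb[OF b] by (simp add: perm_act_def)
    also have "\<dots> = (\<Sum>x\<in>U. \<alpha> b x * (\<epsilon> x * x R))"
      by (rule sum.cong[OF refl]) (use eig in \<open>simp add: perm_act_def fun_eq_iff\<close>)
    also have "\<dots> = (\<Sum>x\<in>U. \<alpha> b x * (\<epsilon> x * (\<Sum>b'\<in>B. \<beta> x b' * b' R)))"
      by (rule sum.cong[OF refl]) (use repx in simp)
    also have "\<dots> = (\<Sum>b'\<in>B. (\<Sum>x\<in>U. \<alpha> b x * \<epsilon> x * \<beta> x b') * b' R)"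
      by (simp add: sum_distrib_left sum_distrib_right mult.assoc) (rule sum.swap)
    finally show ?thesis .
  qed
  have cb: "coord B (perm_act s b) b = (\<Sum>x\<in>U. \<alpha> b x * \<epsilon> x * \<beta> x b)" if b: "b \<in> B" for b
    by (rule coord_unique[OF B _ b]) (use fb[OF b] in simp)
  have delta: "(\<Sum>b\<in>B. \<beta> x b * \<alpha> b x) = 1" if x: "x \<in> U" for x
  proof -
    have "x R = (\<Sum>y\<in>U. (\<Sum>b\<in>B. \<beta> x b * \<alpha> b y) * y R)" for R
    proof -
      have "x R = (\<Sum>b\<in>B. \<beta> x b * (\<Sum>y\<in>U. \<alpha> b y * y R))"
        using repx[OF x] repb by simp
      also have "\<dots> = (\<Sum>y\<in>U. (\<Sum>b\<in>B. \<beta> x b * \<alpha> b y) * y R)"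
        by (simp add: sum_distrib_left sum_distrib_right mult.assoc) (rule sum.swap)
      finally show ?thesis .
    qed
    then have "coord U x x = (\<Sum>b\<in>B. \<beta> x b * \<alpha> b x)"
      using coord_unique[OF U _ x, where c = "\<lambda>y. \<Sum>b\<in>B. \<beta> x b * \<alpha> b y"] by simp
    moreover have "coord U x x = 1"
    proof -
      have "\<forall>R. x R = (\<Sum>y\<in>U. (if y = x then 1 else 0) * y R)"
      proof
        fix R
        have "(\<Sum>y\<in>U. (if y = x then 1 else 0) * y R) = (\<Sum>y\<in>U. (if y = x then x R else 0))"
          by (rule sum.cong) auto
        also have "\<dots> = x R" using finU(1) x by simp
        finally show "x R = (\<Sum>y\<in>U. (if y = x then 1 else 0) * y R)" by simp
      qed
      from coord_unique[OF U this x] show ?thesis by simp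
    qed
    ultimately show ?thesis by simp
  qed
  have "(\<Sum>b\<in>B. coord B (perm_act s b) b) = (\<Sum>b\<in>B. \<Sum>x\<in>U. \<alpha> b x * \<epsilon> x * \<beta> x b)"
    by (rule sum.cong[OF refl]) (rule cb)
  also have "\<dots> = (\<Sum>x\<in>U. \<epsilon> x * (\<Sum>b\<in>B. \<beta> x b * \<alpha> b x))"
    by (subst sum.swap) (simp add: sum_distrib_left algebra_simps)
  also have "\<dots> = (\<Sum>x\<in>U. \<epsilon> x)" using delta by simp
  finally show ?thesis .
qed

lemma char_eigen:
  assumes U: "is_basis_of U (specht n lam)"
    and eig: "\<And>x. x \<in> U \<Longrightarrow> perm_act s x = (\<lambda>R. \<epsilon> x * x R)"
  shows "specht_char n lam s = (\<Sum>x\<in>U. \<epsilon> x)"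
proof -
  define B where "B = (SOME B. is_basis_of B (specht n lam))"
  have B: "is_basis_of B (specht n lam)" unfolding B_def using U by (rule someI)
  show ?thesis unfolding specht_char_def Let_def B_def[symmetric] by (rule trace_eigen[OF B U eig])
qed


lemma lead_indep:
  fixes v :: "'i \<Rightarrow> (nat \<Rightarrow> nat) \<Rightarrow> real" and \<kappa> :: "(nat \<Rightarrow> nat) \<Rightarrow> nat"
  assumes fin: "finite I" and lead: "\<And>i. i \<in> I \<Longrightarrow> v i (M i) \<noteq> 0"
    and supp: "\<And>i R. i \<in> I \<Longrightarrow> v i R \<noteq> 0 \<Longrightarrow> \<kappa> (M i) \<le> \<kappa> R"
    and inj: "inj_on (\<lambda>i. \<kappa> (M i)) I"
  shows "\<And>c. \<forall>R. (\<Sum>i\<in>I. c i * v i R) = 0 \<Longrightarrow> \<forall>i\<in>I. c i = 0"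
    and "inj_on v I"
proof -
  fix c assume z: "\<forall>R. (\<Sum>i\<in>I. c i * v i R) = 0"
  show "\<forall>i\<in>I. c i = 0"
  proof (rule ccontr)
    assume "\<not> ?thesis"
    then have ne: "{i \<in> I. c i \<noteq> 0} \<noteq> {}" by blast
    have finJ: "finite {i \<in> I. c i \<noteq> 0}" using fin by simp
    obtain i0 where i0: "i0 \<in> {i \<in> I. c i \<noteq> 0}"
      and mn: "\<And>i. i \<in> {i \<in> I. c i \<noteq> 0} \<Longrightarrow> \<kappa> (M i0) \<le> \<kappa> (M i)"
    proof -
      define K where "K = (\<lambda>i. \<kappa> (M i)) ` {i \<in> I. c i \<noteq> 0}"
      have "finite K" "K \<noteq> {}" unfolding K_def using finJ ne by auto
      then have "Min K \<in> K" by (rule Min_in)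
      then obtain i0 where "i0 \<in> {i \<in> I. c i \<noteq> 0}" "\<kappa> (M i0) = Min K"
        unfolding K_def[symmetric] by (auto simp: K_def)
      moreover have "\<And>i. i \<in> {i \<in> I. c i \<noteq> 0} \<Longrightarrow> Min K \<le> \<kappa> (M i)"
        unfolding K_def using finJ by (intro Min_le) auto
      ultimately show ?thesis using that by simp
    qed
    have "(\<Sum>i\<in>I. c i * v i (M i0)) = (\<Sum>i\<in>I. if i = i0 then c i0 * v i0 (M i0) else 0)"
    proof (rule sum.cong[OF refl])
      fix i assume i: "i \<in> I"
      show "c i * v i (M i0) = (if i = i0 then c i0 * v i0 (M i0) else 0)"
      proof (cases "i = i0")
        case False
        show ?thesis
        proof (cases "c i = 0")
          case False
          show ?thesis
          proof (rule ccontr)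
            assume "\<not> ?thesis"
            then have "v i (M i0) \<noteq> 0" using \<open>i \<noteq> i0\<close> by auto
            then have "\<kappa> (M i) \<le> \<kappa> (M i0)" using supp i by blast
            moreover have "\<kappa> (M i0) \<le> \<kappa> (M i)" using mn i False by blast
            ultimately have "\<kappa> (M i) = \<kappa> (M i0)" by simp
            then have "i = i0" using inj i i0 by (auto simp: inj_on_def)
            with \<open>i \<noteq> i0\<close> show False by simp
          qed
        qed (simp add: False)
      qed simp
    qed
    also have "\<dots> = c i0 * v i0 (M i0)" using fin i0 by simp
    finally have "c i0 * v i0 (M i0) = 0" using z by simp
    then show False using i0 lead[of i0] by simp
  qed
next
  show "inj_on v I"
  proof (rule inj_onI)
    fix i j assume ij: "i \<in> I" "j \<in> I" "v i = v j"
    have "\<kappa> (M j) \<le> \<kappa> (M i)" using supp[OF ij(2), of "M i"] lead[OF ij(1)] ij(3) by simp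
    moreover have "\<kappa> (M i) \<le> \<kappa> (M j)" using supp[OF ij(1), of "M j"] lead[OF ij(2)] ij(3) by simp
    ultimately show "i = j" using inj ij(1,2) by (auto simp: inj_on_def)
  qed
qed

context young
begin

lemma finite_T: "finite T"
proof (rule finite_subset)
  show "T \<subseteq> PiE C (\<lambda>_. {1..n})"
    using t_in tabE(2) by (auto simp: PiE_def Pi_def)
  show "finite (PiE C (\<lambda>_. {1..n}))" by (rule finite_PiE) auto
qed

lemma specht_span: "specht n lam = FV.span (e ` T)"
proof
  show "specht n lam \<subseteq> FV.span (e ` T)"
  proof
    fix v assume "v \<in> specht n lam"
    then obtain c where c: "\<forall>R. v R = (\<Sum>t\<in>T. c t * e t R)" by (auto simp: specht_def)
    have "v = (\<Sum>t\<in>T. (\<lambda>R. c t * e t R))" using c by (simp add: fun_eq_iff sum_fun_apply)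
    also have "\<dots> \<in> FV.span (e ` T)"
      by (intro FV.span_sum FV.span_scale FV.span_base imageI)
    finally show "v \<in> FV.span (e ` T)" .
  qed
next
  show "FV.span (e ` T) \<subseteq> specht n lam"
  proof (rule FV.span_minimal)
    show "e ` T \<subseteq> specht n lam"
    proof
      fix v assume "v \<in> e ` T"
      then obtain t0 where t0: "t0 \<in> T" "v = e t0" by blast
      have "\<forall>R. v R = (\<Sum>t\<in>T. (if t = t0 then 1 else 0) * e t R)"
      proof
        fix R
        have "(\<Sum>t\<in>T. (if t = t0 then 1 else 0) * e t R) = (\<Sum>t\<in>T. if t = t0 then e t0 R else 0)"
          by (rule sum.cong) auto
        then show "v R = (\<Sum>t\<in>T. (if t = t0 then 1 else 0) * e t R)" using t0 finite_T by simp
      qed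
      then show "v \<in> specht n lam" unfolding specht_def by (intro CollectI exI)
    qed
    show "FV.subspace (specht n lam)"
      unfolding FV.subspace_def
    proof (intro conjI ballI allI)
      show "0 \<in> specht n lam" unfolding specht_def by (intro CollectI exI[of _ "\<lambda>_. 0"]) simp
    next
      fix x y assume "x \<in> specht n lam" "y \<in> specht n lam"
      then obtain c d where "\<forall>R. x R = (\<Sum>t\<in>T. c t * e t R)" "\<forall>R. y R = (\<Sum>t\<in>T. d t * e t R)"
        unfolding specht_def by blast
      then show "x + y \<in> specht n lam" unfolding specht_def
        by (intro CollectI exI[of _ "\<lambda>t. c t + d t"]) (simp add: algebra_simps sum.distrib)
    next
      fix r :: real and x assume "x \<in> specht n lam"
      then obtain c where "\<forall>R. x R = (\<Sum>t\<in>T. c t * e t R)" unfolding specht_def by blast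
      then show "(\<lambda>R. r * x R) \<in> specht n lam" unfolding specht_def
        by (intro CollectI exI[of _ "\<lambda>t. r * c t"]) (simp add: sum_distrib_left mult.assoc)
    qed
  qed
qed

lemma specht_Sp: "specht n lam = Sp"
proof -
  have "Sp \<subseteq> FV.span (e ` T)" by (rule FV.span_mono) (auto simp: Std_def)
  moreover have "FV.span (e ` T) \<subseteq> Sp"
    by (rule FV.span_minimal) (use span_all in auto)
  ultimately show ?thesis unfolding specht_span by blast
qed

lemma e_in_specht: "t \<in> T \<Longrightarrow> e t \<in> specht n lam"
  unfolding specht_span by (intro FV.span_base imageI)

lemma specht_add: "x \<in> specht n lam \<Longrightarrow> y \<in> specht n lam \<Longrightarrow> (\<lambda>R. x R + a * y R) \<in> specht n lam"
proof -
  assume x: "x \<in> specht n lam" and y: "y \<in> specht n lam"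
  have "(\<lambda>R. a * y R) \<in> specht n lam" using FV.span_scale[of y "e ` T" a] y unfolding specht_span by simp
  then have "x + (\<lambda>R. a * y R) \<in> specht n lam" using FV.span_add x unfolding specht_span by blast
  then show ?thesis by (simp add: plus_fun_def)
qed

lemma basis_char:
  assumes s: "s permutes {1..n}"
    and Idisj: "Jp \<inter> Jm = {}" and Iun: "Jp \<union> Jm = Std"
    and vpS: "\<And>i. i \<in> Jp \<Longrightarrow> vp i \<in> specht n lam"
    and vpE: "\<And>i. i \<in> Jp \<Longrightarrow> perm_act s (vp i) = vp i"
    and vpL: "\<And>i. i \<in> Jp \<Longrightarrow> vp i (Mp i) \<noteq> 0"
    and vpR: "\<And>i R. i \<in> Jp \<Longrightarrow> vp i R \<noteq> 0 \<Longrightarrow> key n (Mp i) \<le> key n R"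
    and vpI: "inj_on (\<lambda>i. key n (Mp i)) Jp"
    and vmS: "\<And>i. i \<in> Jm \<Longrightarrow> vm i \<in> specht n lam"
    and vmE: "\<And>i. i \<in> Jm \<Longrightarrow> perm_act s (vm i) = (\<lambda>R. - vm i R)"
    and vmL: "\<And>i. i \<in> Jm \<Longrightarrow> vm i (Mm i) \<noteq> 0"
    and vmR: "\<And>i R. i \<in> Jm \<Longrightarrow> vm i R \<noteq> 0 \<Longrightarrow> key n (Mm i) \<le> key n R"
    and vmI: "inj_on (\<lambda>i. key n (Mm i)) Jm"
  shows "specht_char n lam id = real (card Std)"
    and "specht_char n lam s = real (card Std) - 2 * real (card Jm)"
proof -
  have finStd: "finite Std" using finite_T by (rule finite_subset[rotated]) (auto simp: Std_def)
  have finIp: "finite Jp" and finIm: "finite Jm" using finStd Iun by (auto intro: finite_subset)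
  note LP = lead_indep[of Jp vp Mp "key n", OF finIp vpL vpR vpI]
  note LM = lead_indep[of Jm vm Mm "key n", OF finIm vmL vmR vmI]
  define Wp where "Wp = vp ` Jp"
  define Wm where "Wm = vm ` Jm"
  define U where "U = Wp \<union> Wm"
  have finU: "finite U" unfolding U_def Wp_def Wm_def using finIp finIm by simp
  have WpE: "\<And>x R. x \<in> Wp \<Longrightarrow> x (R \<circ> s) = x R"
    unfolding Wp_def using vpE by (force simp: perm_act_def fun_eq_iff)
  have WmE: "\<And>x R. x \<in> Wm \<Longrightarrow> x (R \<circ> s) = - x R"
    unfolding Wm_def using vmE by (force simp: perm_act_def fun_eq_iff)
  have Wdisj: "Wp \<inter> Wm = {}"
  proof (rule ccontr)
    assume "Wp \<inter> Wm \<noteq> {}"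
    then obtain i where i: "i \<in> Jm" "vm i \<in> Wp" unfolding Wm_def by blast
    have "vm i (Mm i) = 0" using WpE[OF i(2), of "Mm i"] WmE[of "vm i" "Mm i"] i(1) unfolding Wm_def by simp
    with vmL[OF i(1)] show False by simp
  qed
  have cardWp: "card Wp = card Jp" unfolding Wp_def using LP(2) by (simp add: card_image)
  have cardWm: "card Wm = card Jm" unfolding Wm_def using LM(2) by (simp add: card_image)
  have cardU: "card U = card Std"
    unfolding U_def using card_Un_disjoint[of Wp Wm] Wdisj cardWp cardWm finIp finIm Idisj Iun
      card_Un_disjoint[of Jp Jm] by (simp add: Wp_def Wm_def)
  have US: "U \<subseteq> specht n lam" unfolding U_def Wp_def Wm_def using vpS vmS by auto
  have li: "lin_indep U"
    unfolding lin_indep_def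
  proof (intro allI impI)
    fix c assume z: "\<forall>R. (\<Sum>x\<in>U. c x * x R) = 0"
    define a where "a R = (\<Sum>x\<in>Wp. c x * x R)" for R
    define b where "b R = (\<Sum>x\<in>Wm. c x * x R)" for R
    have ab: "a R + b R = 0" for R
      using z Wdisj finIp finIm unfolding a_def b_def U_def Wp_def Wm_def
      by (simp add: sum.union_disjoint)
    have as: "a (R \<circ> s) = a R" for R unfolding a_def by (rule sum.cong[OF refl]) (simp add: WpE)
    have bs: "b (R \<circ> s) = - b R" for R unfolding b_def sum_negf[symmetric] by (rule sum.cong[OF refl]) (simp add: WmE)
    have a0: "a R = 0" and b0: "b R = 0" for R
      using ab[of R] ab[of "R \<circ> s"] as[of R] bs[of R] by auto
    have "\<forall>i\<in>Jp. c (vp i) = 0"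
    proof (rule LP(1))
      show "\<forall>R. (\<Sum>i\<in>Jp. c (vp i) * vp i R) = 0"
        using a0 unfolding a_def Wp_def by (simp add: sum.reindex[OF LP(2)])
    qed
    moreover have "\<forall>i\<in>Jm. c (vm i) = 0"
    proof (rule LM(1))
      show "\<forall>R. (\<Sum>i\<in>Jm. c (vm i) * vm i R) = 0"
        using b0 unfolding b_def Wm_def by (simp add: sum.reindex[OF LM(2)])
    qed
    ultimately show "\<forall>x\<in>U. c x = 0" unfolding U_def Wp_def Wm_def by blast
  qed
  have FVind: "FV.independent U"
  proof
    assume "FV.dependent U"
    then obtain u where u: "\<exists>v\<in>U. u v \<noteq> 0" "(\<Sum>v\<in>U. (\<lambda>x. u v * v x)) = 0"
      using FV.dependent_finite[OF finU] by blast
    have "\<forall>R. (\<Sum>v\<in>U. u v * v R) = 0"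
      using fun_cong[OF u(2)] by (simp add: sum_fun_apply)
    then have "\<forall>v\<in>U. u v = 0" using li unfolding lin_indep_def by blast
    with u(1) show False by blast
  qed
  have spans: "specht n lam \<subseteq> FV.span U"
  proof
    fix w assume w: "w \<in> specht n lam"
    show "w \<in> FV.span U"
    proof (rule ccontr)
      assume nw: "w \<notin> FV.span U"
      have ind: "FV.independent (insert w U)" by (rule FV.independent_insertI[OF nw FVind])
      have sub: "insert w U \<subseteq> FV.span (e ` Std)" using w US unfolding specht_Sp by blast
      have "card (insert w U) \<le> card (e ` Std)"
        using FV.independent_span_bound[OF _ ind sub] finStd by simp
      also have "\<dots> \<le> card Std" using finStd by (rule card_image_le)
      also have "\<dots> = card U" using cardU by simp
      finally have "card (insert w U) \<le> card U" .
      moreover have "w \<notin> U" using nw FV.span_base by blast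
      ultimately show False using finU by simp
    qed
  qed
  have basis: "is_basis_of U (specht n lam)"
    unfolding is_basis_of_def
  proof (intro conjI ballI)
    show "finite U" by (rule finU)
    show "U \<subseteq> specht n lam" by (rule US)
    show "lin_indep U" by (rule li)
    fix w assume "w \<in> specht n lam"
    then have "w \<in> FV.span U" using spans by blast
    then obtain u where "w = (\<Sum>v\<in>U. (\<lambda>x. u v * v x))" using FV.span_finite[OF finU] by blast
    then show "\<exists>c. \<forall>R. w R = (\<Sum>b\<in>U. c b * b R)" by (intro exI[of _ u]) (simp add: sum_fun_apply)
  qed
  have "specht_char n lam id = (\<Sum>x\<in>U. 1)"
    by (rule char_eigen[OF basis]) (simp add: perm_act_def)
  then show "specht_char n lam id = real (card Std)" using cardU by simp
  have "specht_char n lam s = (\<Sum>x\<in>U. if x \<in> Wm then -1 else 1)"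
  proof (rule char_eigen[OF basis])
    fix x assume x: "x \<in> U"
    show "perm_act s x = (\<lambda>R. (if x \<in> Wm then -1 else 1) * x R)"
    proof (cases "x \<in> Wm")
      case True then show ?thesis using WmE by (simp add: perm_act_def fun_eq_iff)
    next
      case False
      then have "x \<in> Wp" using x unfolding U_def by simp
      then show ?thesis using WpE False by (simp add: perm_act_def fun_eq_iff)
    qed
  qed
  also have "\<dots> = (\<Sum>x\<in>Wp. 1) + (\<Sum>x\<in>Wm. -1)"
  proof -
    have "(\<Sum>x\<in>U. if x \<in> Wm then -1 else 1) = (\<Sum>x\<in>Wp. if x \<in> Wm then -1 else 1) + (\<Sum>x\<in>Wm. if x \<in> Wm then -1 else (1::real))"
      unfolding U_def by (rule sum.union_disjoint) (use finIp finIm Wdisj in \<open>auto simp: Wp_def Wm_def\<close>)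
    moreover have "(\<Sum>x\<in>Wp. if x \<in> Wm then -1 else 1) = (\<Sum>x\<in>Wp. (1::real))"
      by (rule sum.cong) (use Wdisj in auto)
    ultimately show ?thesis by simp
  qed
  also have "\<dots> = real (card Std) - 2 * real (card Jm)"
    using cardWp cardWm finIp finIm Idisj Iun card_Un_disjoint[of Jp Jm] by simp
  finally show "specht_char n lam s = real (card Std) - 2 * real (card Jm)" .
qed

end

lemma s1_tr: "s1 = Transposition.transpose 1 2"
  by (auto simp: s1_def fun_eq_iff transpose_def)
lemma s3_tr: "s3 = Transposition.transpose 3 4"
  by (auto simp: s3_def fun_eq_iff transpose_def)
lemma s1_inv[simp]: "s1 (s1 k) = k" by (simp add: s1_def)
lemma s3_inv[simp]: "s3 (s3 k) = k" by (simp add: s3_def)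
lemma s13_comm: "s1 \<circ> s3 = s3 \<circ> s1" by (auto simp: s1_def s3_def fun_eq_iff)
lemma s13_inv[simp]: "(s1 \<circ> s3) ((s1 \<circ> s3) k) = k" by (simp add: s1_def s3_def)
lemma sign_s1: "sign s1 = -1" unfolding s1_tr by (simp add: sign_swap_id)
lemma sign_s3: "sign s3 = -1" unfolding s3_tr by (simp add: sign_swap_id)
lemma sign_s13: "sign (s1 \<circ> s3) = 1"
  by (simp add: sign_compose s1_tr s3_tr sign_swap_id permutation_swap_id)
lemma s1_big: "k > 4 \<Longrightarrow> s1 k = k" and s3_big: "k > 4 \<Longrightarrow> s3 k = k"
  by (auto simp: s1_def s3_def)
lemma s1_small: "k \<le> 4 \<Longrightarrow> s1 k \<le> 4" and s3_small: "k \<le> 4 \<Longrightarrow> s3 k \<le> 4"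
  by (auto simp: s1_def s3_def)

context young
begin

lemma s1_perm: "n \<ge> 4 \<Longrightarrow> s1 permutes {1..n}"
  unfolding s1_tr by (rule permutes_swap_id) auto
lemma s3_perm: "n \<ge> 4 \<Longrightarrow> s3 permutes {1..n}"
  unfolding s3_tr by (rule permutes_swap_id) auto
lemma s13_perm: "n \<ge> 4 \<Longrightarrow> s1 \<circ> s3 permutes {1..n}"
  by (rule permutes_compose[OF s3_perm s1_perm])
lemma id_perm: "id permutes {1..n}" by (rule permutes_id)

lemma e_cong: "(\<And>x. x \<in> C \<Longrightarrow> f x = g x) \<Longrightarrow> e f = e g"
proof -
  assume "\<And>x. x \<in> C \<Longrightarrow> f x = g x"
  then have "restrict f C = restrict g C" by (auto simp: restrict_def)
  then show ?thesis using e_restrict[of f] e_restrict[of g] by simp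
qed

lemma CS_transpose:
  assumes u: "u \<in> T" and a: "a \<in> {1..n}" and b: "b \<in> {1..n}" and c: "col u a = col u b"
  shows "Transposition.transpose a b \<in> CS u"
proof -
  have "col u (Transposition.transpose a b k) = col u k" for k
    using c by (cases "k = a"; cases "k = b") auto
  then show ?thesis using permutes_swap_id[OF a b] by (simp add: CS_def')
qed

lemma inv_invol: assumes "\<And>k. p (p k) = k" shows "inv p = p"
  by (rule inv_unique_comp) (use assms in \<open>auto simp: fun_eq_iff\<close>)

lemma tab_invol:
  assumes t: "t \<in> T" and p: "p permutes {1..n}" and pi: "\<And>k. p (p k) = k"
  shows "tab (restrict (p \<circ> t) C) = tab t \<circ> p"
  unfolding tab_restrict tab_perm[OF t p] inv_invol[OF pi] ..

lemma col_invol: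
  assumes t: "t \<in> T" and p: "p permutes {1..n}" and pi: "\<And>k. p (p k) = k" and k: "k \<in> {1..n}"
  shows "col (restrict (p \<circ> t) C) k = col t (p k)"
  using col_perm[OF t p k] inv_invol[OF pi] unfolding col_def cell_restrict by simp

lemma colinc_perm4:
  assumes t: "t \<in> T" and ct: "colinc t" and p: "p permutes {1..n}"
    and big: "\<And>k. k > 4 \<Longrightarrow> p k = k" and small: "\<And>k. k \<le> 4 \<Longrightarrow> p k \<le> 4"
    and cond: "\<And>a b. 1 \<le> a \<Longrightarrow> a < b \<Longrightarrow> b \<le> 4 \<Longrightarrow> col t a = col t b \<Longrightarrow> p a < p b"
  shows "colinc (restrict (p \<circ> t) C)"
  unfolding colinc_def
proof (intro allI impI)
  fix i i' j assume x: "(i,j) \<in> C" and y: "(i',j) \<in> C" and ii: "i < i'"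
  define a where "a = t (i,j)"
  define b where "b = t (i',j)"
  have ab: "a < b" using ct x y ii unfolding colinc_def a_def b_def by blast
  have a1: "1 \<le> a" using t_in[OF t x] unfolding a_def by simp
  have "p a < p b"
  proof (cases "b > 4")
    case True
    then have pb: "p b = b" using big by simp
    show ?thesis
    proof (cases "a > 4")
      case True then show ?thesis using big pb ab by simp
    next
      case False then show ?thesis using small[of a] pb True by simp
    qed
  next
    case False
    have "col t a = col t b" unfolding a_def b_def using col_cell[OF t x] col_cell[OF t y] by simp
    then show ?thesis using cond[OF a1 ab] False by simp
  qed
  then show "restrict (p \<circ> t) C (i,j) < restrict (p \<circ> t) C (i',j)" using x y unfolding a_def b_def by simp
qed

lemma key_cmp4:
  assumes t: "t \<in> T" and p: "p permutes {1..n}" and pi: "\<And>k. p (p k) = k"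
    and k0: "k0 \<in> {1..n}" and before: "\<And>k. k \<in> {1..n} \<Longrightarrow> k < k0 \<Longrightarrow> row t (p k) = row t k"
    and lt: "row t (p k0) < row t k0"
  shows "key n (tab (restrict (p \<circ> t) C)) < key n (tab t)"
proof (rule key_less[OF _ k0])
  show "tab (restrict (p \<circ> t) C) k \<le> n" if "k \<in> {1..n}" for k
    unfolding tab_invol[OF t p pi] using tab_digit[OF t perm_in[OF p that]] by simp
  show "tab (restrict (p \<circ> t) C) k = tab t k" if "k \<in> {1..n}" "k < k0" for k
    unfolding tab_invol[OF t p pi] using before[OF that] that perm_in[OF p that(1)] by (simp add: tab_eq)
  show "tab (restrict (p \<circ> t) C) k0 < tab t k0"
    unfolding tab_invol[OF t p pi] using lt k0 perm_in[OF p k0] by (simp add: tab_eq)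
qed

lemma tab_same4:
  assumes t: "t \<in> T" and p: "p permutes {1..n}" and pi: "\<And>k. p (p k) = k"
    and big: "\<And>k. k > 4 \<Longrightarrow> p k = k" and same: "\<And>k. 1 \<le> k \<Longrightarrow> k \<le> 4 \<Longrightarrow> row t (p k) = row t k"
  shows "tab (restrict (p \<circ> t) C) = tab t"
proof (rule ext)
  fix k
  show "tab (restrict (p \<circ> t) C) k = tab t k"
  proof (cases "k \<in> {1..n}")
    case True
    then show ?thesis unfolding tab_invol[OF t p pi] using perm_in[OF p True] big[of k] same[of k]
      by (cases "k \<le> 4") (auto simp: tab_eq)
  next
    case False
    then show ?thesis unfolding tab_invol[OF t p pi] using permutes_not_in[OF p False] by simp
  qed
qed

lemma key_tab_inj:
  assumes "u \<in> T" "w \<in> T" "key n (tab u) = key n (tab w)"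
  shows "tab u = tab w"
proof (rule ext)
  fix k
  have "\<forall>k\<in>{1..n}. tab u k = tab w k"
    by (rule key_inj) (use tab_digit assms in auto)
  then show "tab u k = tab w k" by (cases "k \<in> {1..n}") (auto simp: tab_eq)
qed

lemma GE:
  assumes s: "s permutes {1..n}" and si: "\<And>k. s (s k) = k" and t: "t \<in> T" and ct: "colinc t"
    and p: "p permutes {1..n}" and pi: "\<And>k. p (p k) = k" and cw: "colinc (restrict (p \<circ> t) C)"
    and es: "e (s \<circ> t) = (\<lambda>R. \<sigma> * e (p \<circ> t) R)" and \<sigma>: "\<sigma> = 1 \<or> \<sigma> = -1"
    and \<epsilon>: "\<epsilon> = 1 \<or> \<epsilon> = -1" and cond: "tab (restrict (p \<circ> t) C) = tab t \<longrightarrow> \<epsilon> * \<sigma> = 1"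
  defines "v \<equiv> (\<lambda>R. e t R + \<epsilon> * e (s \<circ> t) R)"
  shows "v \<in> specht n lam" "perm_act s v = (\<lambda>R. \<epsilon> * v R)"
    "key n (tab (restrict (p \<circ> t) C)) < key n (tab t) \<Longrightarrow>
       v (tab (restrict (p \<circ> t) C)) \<noteq> 0 \<and> (\<forall>R. v R \<noteq> 0 \<longrightarrow> key n (tab (restrict (p \<circ> t) C)) \<le> key n R)"
    "\<not> key n (tab (restrict (p \<circ> t) C)) < key n (tab t) \<Longrightarrow>
       v (tab t) \<noteq> 0 \<and> (\<forall>R. v R \<noteq> 0 \<longrightarrow> key n (tab t) \<le> key n R)"
proof -
  define u where "u = restrict (s \<circ> t) C"
  define w where "w = restrict (p \<circ> t) C"
  have uT: "u \<in> T" unfolding u_def by (rule perm_tab_in_T[OF t s])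
  have wT: "w \<in> T" unfolding w_def by (rule perm_tab_in_T[OF t p])
  have eu: "e (s \<circ> t) = e u" unfolding u_def e_restrict ..
  have ew: "e (p \<circ> t) = e w" unfolding w_def e_restrict ..
  have ss: "e (s \<circ> u) = e t"
  proof -
    have "e (s \<circ> u) = e (s \<circ> s \<circ> t)" by (rule e_cong) (simp add: u_def)
    also have "s \<circ> s \<circ> t = t" using si by (simp add: fun_eq_iff)
    finally show ?thesis .
  qed
  show "v \<in> specht n lam" unfolding v_def eu by (rule specht_add[OF e_in_specht[OF t] e_in_specht[OF uT]])
  have pa1: "perm_act s (e t) = e u" using perm_act_e[OF t s] eu by simp
  have pa2: "perm_act s (e u) = e t" using perm_act_e[OF uT s] ss by simp
  have ee: "\<epsilon> * \<epsilon> = 1" using \<epsilon> by auto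
  show "perm_act s v = (\<lambda>R. \<epsilon> * v R)"
  proof (rule ext)
    fix R
    have "perm_act s v R = e t (R \<circ> s) + \<epsilon> * e u (R \<circ> s)" unfolding v_def eu perm_act_def by simp
    also have "\<dots> = e u R + \<epsilon> * e t R" using fun_cong[OF pa1, of R] fun_cong[OF pa2, of R]
      by (simp add: perm_act_def)
    also have "\<dots> = \<epsilon> * (e t R + \<epsilon> * e u R)" using ee by (simp add: algebra_simps)
    finally show "perm_act s v R = \<epsilon> * v R" unfolding v_def eu .
  qed
  have vR: "v R = e t R + \<epsilon> * \<sigma> * e w R" for R unfolding v_def es ew by simp
  have lt: "e t (tab t) = 1" and lt2: "\<And>R. e t R \<noteq> 0 \<Longrightarrow> R = tab t \<or> key n (tab t) < key n R"
    using e_lead[OF t ct] by auto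
  have lw: "e w (tab w) = 1" and lw2: "\<And>R. e w R \<noteq> 0 \<Longrightarrow> R = tab w \<or> key n (tab w) < key n R"
    using e_lead[OF wT cw[folded w_def]] by auto
  have es0: "\<epsilon> * \<sigma> \<noteq> 0" using \<epsilon> \<sigma> by auto
  show "key n (tab (restrict (p \<circ> t) C)) < key n (tab t) \<Longrightarrow>
       v (tab (restrict (p \<circ> t) C)) \<noteq> 0 \<and> (\<forall>R. v R \<noteq> 0 \<longrightarrow> key n (tab (restrict (p \<circ> t) C)) \<le> key n R)"
  proof -
    assume k: "key n (tab (restrict (p \<circ> t) C)) < key n (tab t)"
    then have k': "key n (tab w) < key n (tab t)" unfolding w_def .
    have "e t (tab w) = 0" using lt2[of "tab w"] k' by (metis less_not_sym)
    then have "v (tab w) = \<epsilon> * \<sigma>" using vR lw by simp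
    moreover have "key n (tab w) \<le> key n R" if "v R \<noteq> 0" for R
    proof -
      have "e t R \<noteq> 0 \<or> e w R \<noteq> 0" using that vR[of R] by auto
      then show ?thesis using lt2 lw2 k' by fastforce
    qed
    ultimately show ?thesis using es0 unfolding w_def by simp
  qed
  show "\<not> key n (tab (restrict (p \<circ> t) C)) < key n (tab t) \<Longrightarrow>
       v (tab t) \<noteq> 0 \<and> (\<forall>R. v R \<noteq> 0 \<longrightarrow> key n (tab t) \<le> key n R)"
  proof -
    assume k: "\<not> key n (tab (restrict (p \<circ> t) C)) < key n (tab t)"
    then have k': "key n (tab t) \<le> key n (tab w)" unfolding w_def by simp
    have "v (tab t) \<noteq> 0"
    proof (cases "tab w = tab t")
      case True
      then have "\<epsilon> * \<sigma> = 1" using cond unfolding w_def by simp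
      then show ?thesis using vR[of "tab t"] lt True lw by simp
    next
      case False
      then have "key n (tab t) < key n (tab w)" using k' key_tab_inj[OF wT t] by fastforce
      then have "e w (tab t) = 0" using lw2[of "tab t"] False by (metis less_not_sym)
      then show ?thesis using vR[of "tab t"] lt by simp
    qed
    moreover have "key n (tab t) \<le> key n R" if "v R \<noteq> 0" for R
    proof -
      have "e t R \<noteq> 0 \<or> e w R \<noteq> 0" using that vR[of R] by auto
      then show ?thesis using lt2 lw2 k' by fastforce
    qed
    ultimately show ?thesis by simp
  qed
qed

end

context young
begin

lemma count_agree:
  assumes dc: "\<And>i j i' j'. (i,j) \<in> N \<Longrightarrow> i' \<le> i \<Longrightarrow> j' \<le> j \<Longrightarrow> (i',j') \<in> N"
    and N: "N = cells mu" and m: "m = card N"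
    and Fb: "bij_betw F N {1..m}"
    and Fr: "\<And>i j j'. (i,j) \<in> N \<Longrightarrow> (i,j') \<in> N \<Longrightarrow> j < j' \<Longrightarrow> F (i,j) < F (i,j')"
    and Fc: "\<And>i i' j. (i,j) \<in> N \<Longrightarrow> (i',j) \<in> N \<Longrightarrow> i < i' \<Longrightarrow> F (i,j) < F (i',j)"
  shows "card {t \<in> Std. \<forall>x\<in>N. x \<in> C \<and> t x = F x} = f_skew lam mu"
proof (cases "N \<subseteq> C")
  case False
  then have e0: "{t \<in> Std. \<forall>x\<in>N. x \<in> C \<and> t x = F x} = {}" by blast
  show ?thesis unfolding e0 using False N by (simp add: f_skew_def)
next
  case sub: True
  define A where "A = {t \<in> Std. \<forall>x\<in>N. x \<in> C \<and> t x = F x}"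
  define SF where "SF = standard_fillings (C - N)"
  have finN: "finite N" by (rule finite_subset[OF sub finite_cells])
  have cardCN: "card (C - N) = n - m" using card_Diff_subset[OF finN sub] card_C m by simp
  have mn: "m \<le> n" using card_mono[OF finite_cells sub] card_C m by simp
  have Fin: "F x \<in> {1..m}" if "x \<in> N" for x using Fb that by (auto simp: bij_betw_def)
  have Finj: "inj_on F N" using Fb by (auto simp: bij_betw_def)
  have Fsurj: "F ` N = {1..m}" using Fb by (auto simp: bij_betw_def)
  define \<phi> where "\<phi> t = restrict (\<lambda>x. t x - m) (C - N)" for t :: "nat \<times> nat \<Rightarrow> nat"
  define \<psi> where "\<psi> T' = restrict (\<lambda>x. if x \<in> N then F x else T' x + m) C" for T' :: "nat \<times> nat \<Rightarrow> nat"
  have big: "t x > m" if t: "t \<in> A" and x: "x \<in> C - N" for t x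
  proof (rule ccontr)
    assume "\<not> t x > m"
    moreover have tT: "t \<in> T" using t by (simp add: A_def Std_def)
    moreover have "t x \<ge> 1" using t_in[OF tT] x by auto
    ultimately have "t x \<in> F ` N" using Fsurj by auto
    then obtain y where y: "y \<in> N" "F y = t x" by auto
    have "t y = F y" using t y(1) by (simp add: A_def)
    then have "y = x" using t_inj[OF tT, of y x] y x sub by auto
    with x y show False by simp
  qed
  have phiSF: "\<phi> t \<in> SF" if t: "t \<in> A" for t
  proof -
    have tT: "t \<in> T" and ct: "colinc t" and rt: "rowinc t" using t by (auto simp: A_def Std_def)
    have inj: "inj_on (\<phi> t) (C - N)"
    proof (rule inj_onI)
      fix x y assume x: "x \<in> C - N" and y: "y \<in> C - N" and eq: "\<phi> t x = \<phi> t y"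
      then have "t x = t y" using big[OF t x] big[OF t y] unfolding \<phi>_def by simp
      then show "x = y" using t_inj[OF tT] x y by auto
    qed
    have img: "\<phi> t ` (C - N) = {1..card (C - N)}"
    proof
      show "\<phi> t ` (C - N) \<subseteq> {1..card (C - N)}"
        using big[OF t] t_in[OF tT] cardCN unfolding \<phi>_def by fastforce
      show "{1..card (C - N)} \<subseteq> \<phi> t ` (C - N)"
      proof
        fix k assume k: "k \<in> {1..card (C - N)}"
        then have "k + m \<in> {1..n}" using cardCN mn by auto
        moreover have "t ` C = {1..n}" using tabE(1)[OF tT] by (simp add: bij_betw_def)
        ultimately have "k + m \<in> t ` C" by simp
        then obtain x where x0: "x \<in> C" "k + m = t x" by (rule imageE)
        then have x: "x \<in> C" "t x = k + m" by simp_all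
        have "x \<notin> N"
        proof
          assume "x \<in> N"
          then have "t x = F x" using t by (simp add: A_def)
          then show False using Fin[OF \<open>x \<in> N\<close>] x k by auto
        qed
        then show "k \<in> \<phi> t ` (C - N)" using x unfolding \<phi>_def by (intro image_eqI[of _ _ x]) auto
      qed
    qed
    show ?thesis unfolding SF_def standard_fillings_def
    proof (intro CollectI conjI allI impI)
      show "\<phi> t \<in> extensional (C - N)" unfolding \<phi>_def by simp
      show "bij_betw (\<phi> t) (C - N) {1..card (C - N)}" using inj img by (simp add: bij_betw_def)
    next
      fix i j j' assume a: "(i,j) \<in> C - N" "(i,j') \<in> C - N" "j < j'"
      then have "t (i,j) < t (i,j')" using rt unfolding rowinc_def by blast
      then show "\<phi> t (i,j) < \<phi> t (i,j')"
        using big[OF t a(1)] big[OF t a(2)] a unfolding \<phi>_def by simp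
    next
      fix i i' j assume a: "(i,j) \<in> C - N" "(i',j) \<in> C - N" "i < i'"
      then have "t (i,j) < t (i',j)" using ct unfolding colinc_def by blast
      then show "\<phi> t (i,j) < \<phi> t (i',j)"
        using big[OF t a(1)] big[OF t a(2)] a unfolding \<phi>_def by simp
    qed
  qed
  have psiA: "\<psi> T' \<in> A" if T': "T' \<in> SF" for T'
  proof -
    have Text: "T' \<in> extensional (C - N)" and Tb: "bij_betw T' (C - N) {1..n - m}"
      and Tr: "\<And>i j j'. (i, j) \<in> C - N \<Longrightarrow> (i, j') \<in> C - N \<Longrightarrow> j < j' \<Longrightarrow> T' (i, j) < T' (i, j')"
      and Tc: "\<And>i i' j. (i, j) \<in> C - N \<Longrightarrow> (i', j) \<in> C - N \<Longrightarrow> i < i' \<Longrightarrow> T' (i, j) < T' (i', j)"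
      using T' cardCN unfolding SF_def standard_fillings_def by auto
    have Tin: "T' x \<in> {1..n - m}" if "x \<in> C - N" for x using Tb that by (auto simp: bij_betw_def)
    have Tinj: "inj_on T' (C - N)" using Tb by (auto simp: bij_betw_def)
    have Tsurj: "T' ` (C - N) = {1..n - m}" using Tb by (auto simp: bij_betw_def)
    have inj: "inj_on (\<psi> T') C"
    proof (rule inj_onI)
      fix x y assume x: "x \<in> C" and y: "y \<in> C" and eq: "\<psi> T' x = \<psi> T' y"
      show "x = y"
      proof (cases "x \<in> N"; cases "y \<in> N")
        assume "x \<in> N" "y \<in> N" then show "x = y" using eq x y Finj by (auto simp: \<psi>_def inj_on_def)
      next
        assume "x \<in> N" "y \<notin> N" then show "x = y" using eq x y Fin[of x] Tin[of y] by (auto simp: \<psi>_def)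
      next
        assume "x \<notin> N" "y \<in> N" then show "x = y" using eq x y Fin[of y] Tin[of x] by (auto simp: \<psi>_def)
      next
        assume "x \<notin> N" "y \<notin> N" then show "x = y" using eq x y Tinj by (auto simp: \<psi>_def inj_on_def)
      qed
    qed
    have img: "\<psi> T' ` C = {1..n}"
    proof
      show "\<psi> T' ` C \<subseteq> {1..n}" using Fin Tin mn unfolding \<psi>_def by fastforce
      show "{1..n} \<subseteq> \<psi> T' ` C"
      proof
        fix k assume k: "k \<in> {1..n}"
        show "k \<in> \<psi> T' ` C"
        proof (cases "k \<le> m")
          case True
          then have "k \<in> F ` N" using Fsurj k by auto
          then obtain x where "x \<in> N" "F x = k" by auto
          then show ?thesis using sub unfolding \<psi>_def by (intro image_eqI[of _ _ x]) auto
        next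
          case False
          then have "k - m \<in> T' ` (C - N)" using Tsurj k by auto
          then obtain x where "x \<in> C - N" "T' x = k - m" by auto
          then show ?thesis using False unfolding \<psi>_def by (intro image_eqI[of _ _ x]) auto
        qed
      qed
    qed
    have TT: "\<psi> T' \<in> T" unfolding tableaux_def using inj img by (auto simp: \<psi>_def bij_betw_def)
    have le: "\<psi> T' x < \<psi> T' y" if x: "x \<in> C" and y: "y \<in> C" and xy: "x \<noteq> y"
      and comp: "fst x \<le> fst y" "snd x \<le> snd y"
      and inN: "x \<in> N \<Longrightarrow> y \<in> N \<Longrightarrow> F x < F y" and out: "x \<notin> N \<Longrightarrow> y \<notin> N \<Longrightarrow> T' x < T' y" for x y
    proof (cases "x \<in> N"; cases "y \<in> N")
      assume "x \<in> N" "y \<in> N" then show ?thesis using inN x y by (simp add: \<psi>_def)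
    next
      assume "x \<in> N" "y \<notin> N" then show ?thesis using x y Fin[of x] Tin[of y] by (simp add: \<psi>_def)
    next
      assume "x \<notin> N" "y \<in> N"
      then have "x \<in> N" using dc[of "fst y" "snd y" "fst x" "snd x"] comp by simp
      with \<open>x \<notin> N\<close> show ?thesis by simp
    next
      assume "x \<notin> N" "y \<notin> N" then show ?thesis using out x y by (simp add: \<psi>_def)
    qed
    have ri: "rowinc (\<psi> T')" unfolding rowinc_def
    proof (intro allI impI)
      fix i j j' assume a: "(i,j) \<in> C" "(i,j') \<in> C" "j < j'"
      show "\<psi> T' (i,j) < \<psi> T' (i,j')" by (rule le) (use a Fr Tr in auto)
    qed
    have ci: "colinc (\<psi> T')" unfolding colinc_def
    proof (intro allI impI)
      fix i i' j assume a: "(i,j) \<in> C" "(i',j) \<in> C" "i < i'"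
      show "\<psi> T' (i,j) < \<psi> T' (i',j)" by (rule le) (use a Fc Tc in auto)
    qed
    show ?thesis unfolding A_def Std_def using TT ri ci sub by (auto simp: \<psi>_def)
  qed
  have bij: "bij_betw \<phi> A SF"
  proof (rule bij_betw_byWitness[where f' = \<psi>])
    show "\<forall>t\<in>A. \<psi> (\<phi> t) = t"
    proof
      fix t assume t: "t \<in> A"
      have tT: "t \<in> T" using t by (simp add: A_def Std_def)
      show "\<psi> (\<phi> t) = t"
      proof (rule ext)
        fix x show "\<psi> (\<phi> t) x = t x"
        proof (cases "x \<in> C")
          case True then show ?thesis using t big[OF t, of x] by (auto simp: \<psi>_def \<phi>_def A_def)
        next
          case False
          then have "t x = undefined" by (rule extensional_arb[OF tabE(2)[OF tT]])
          then show ?thesis using False by (simp add: \<psi>_def)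
        qed
      qed
    qed
    show "\<forall>T'\<in>SF. \<phi> (\<psi> T') = T'"
    proof
      fix T' assume T': "T' \<in> SF"
      have Text: "T' \<in> extensional (C - N)" using T' unfolding SF_def standard_fillings_def by auto
      show "\<phi> (\<psi> T') = T'"
      proof (rule ext)
        fix x show "\<phi> (\<psi> T') x = T' x"
        proof (cases "x \<in> C - N")
          case True then show ?thesis by (auto simp: \<psi>_def \<phi>_def)
        next
          case False
          then have "T' x = undefined" by (rule extensional_arb[OF Text])
          then show ?thesis using False by (auto simp: \<phi>_def)
        qed
      qed
    qed
    show "\<phi> ` A \<subseteq> SF" using phiSF by blast
    show "\<psi> ` SF \<subseteq> A" using psiA by blast
  qed
  have "card A = card SF" using bij by (rule bij_betw_same_card)
  then show ?thesis unfolding A_def SF_def f_skew_def using sub N by simp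
qed

end

definition addable :: "(nat \<times> nat) set \<Rightarrow> nat \<times> nat \<Rightarrow> bool" where
  "addable S x \<longleftrightarrow> x \<notin> S \<and> (0 < fst x \<longrightarrow> (fst x - 1, snd x) \<in> S) \<and> (0 < snd x \<longrightarrow> (fst x, snd x - 1) \<in> S)"

lemma add1: "addable {(0,0)} x \<Longrightarrow> x \<in> {(0,1),(1,0)}"
  by (cases x; rename_tac i j; case_tac i; case_tac j) (auto simp: addable_def)
lemma add2a: "addable {(0,0),(0,1)} x \<Longrightarrow> x \<in> {(0,2),(1,0)}"
  by (cases x; rename_tac i j; case_tac i; case_tac j) (auto simp: addable_def)
lemma add2b: "addable {(0,0),(1,0)} x \<Longrightarrow> x \<in> {(0,1),(2,0)}"
  by (cases x; rename_tac i j; case_tac i; case_tac j) (auto simp: addable_def)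
lemma add3a: "addable {(0,0),(0,1),(0,2)} x \<Longrightarrow> x \<in> {(0,3),(1,0)}"
  by (cases x; rename_tac i j; case_tac i; case_tac j) (auto simp: addable_def)
lemma add3b: "addable {(0,0),(0,1),(1,0)} x \<Longrightarrow> x \<in> {(0,2),(1,1),(2,0)}"
  by (cases x; rename_tac i j; case_tac i; case_tac j) (auto simp: addable_def)
lemma add3c: "addable {(0,0),(1,0),(2,0)} x \<Longrightarrow> x \<in> {(0,1),(3,0)}"
  by (cases x; rename_tac i j; case_tac i; case_tac j) (auto simp: addable_def)


context young
begin

lemma cell_inj: "t \<in> T \<Longrightarrow> a \<in> {1..n} \<Longrightarrow> b \<in> {1..n} \<Longrightarrow> cell t a = cell t b \<Longrightarrow> a = b"
  using cell_in(2) by metis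

lemma std_addable:
  assumes t: "t \<in> Std" and k: "k \<in> {1..n}"
  shows "addable (cell t ` {1..<k}) (cell t k)"
proof -
  have tT: "t \<in> T" and ct: "colinc t" and rt: "rowinc t" using t by (auto simp: Std_def)
  obtain i j where ij: "cell t k = (i,j)" by (cases "cell t k")
  have inC: "(i,j) \<in> C" using cell_in(1)[OF tT k] ij by simp
  have tk: "t (i,j) = k" using cell_in(2)[OF tT k] ij by simp
  have notin: "(i,j) \<notin> cell t ` {1..<k}"
  proof
    assume "(i,j) \<in> cell t ` {1..<k}"
    then obtain k' where "k' \<in> {1..<k}" "cell t k' = (i,j)" by auto
    then show False using cell_inj[OF tT, of k' k] k ij by auto
  qed
  have up: "(i - 1, j) \<in> cell t ` {1..<k}" if "0 < i"
  proof -
    have c': "(i - 1, j) \<in> C" using down_closed[OF inC, of "i - 1" j] by simp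
    have "t (i - 1, j) < k" using ct c' inC that tk unfolding colinc_def by (metis diff_less zero_less_one)
    moreover have "t (i - 1, j) \<ge> 1" using t_in[OF tT c'] by simp
    ultimately show ?thesis using cell_t[OF tT c'] by (intro image_eqI[of _ _ "t (i - 1, j)"]) auto
  qed
  have left: "(i, j - 1) \<in> cell t ` {1..<k}" if "0 < j"
  proof -
    have c': "(i, j - 1) \<in> C" using down_closed[OF inC, of i "j - 1"] by simp
    have "t (i, j - 1) < k" using rt c' inC that tk unfolding rowinc_def by (metis diff_less zero_less_one)
    moreover have "t (i, j - 1) \<ge> 1" using t_in[OF tT c'] by simp
    ultimately show ?thesis using cell_t[OF tT c'] by (intro image_eqI[of _ _ "t (i, j - 1)"]) auto
  qed
  show ?thesis unfolding addable_def ij using notin up left by simp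
qed

definition pat where "pat t = (cell t 2, cell t 3, cell t 4)"

lemma classify:
  assumes t: "t \<in> Std" and n4: "n \<ge> 4"
  shows "cell t 1 = (0,0)"
    and "pat t \<in> {((0,1),(0,2),(0,3)), ((0,1),(0,2),(1,0)), ((0,1),(1,0),(0,2)), ((1,0),(0,1),(0,2)),
                   ((0,1),(1,0),(1,1)), ((1,0),(0,1),(1,1)), ((0,1),(1,0),(2,0)), ((1,0),(0,1),(2,0)),
                   ((1,0),(2,0),(0,1)), ((1,0),(2,0),(3,0))}"
proof -
  have k: "1 \<in> {1..n}" "2 \<in> {1..n}" "3 \<in> {1..n}" "4 \<in> {1..n}" using n4 by auto
  have i1: "cell t ` {1..<1} = {}" by simp
  have i2: "cell t ` {1..<2} = {cell t 1}"
  proof -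
    have "{1..<2::nat} = {1}" by auto
    then show ?thesis by simp
  qed
  have i3: "cell t ` {1..<3} = {cell t 1, cell t 2}"
  proof -
    have "{1..<3::nat} = {1,2}" by auto
    then show ?thesis by simp
  qed
  have i4: "cell t ` {1..<4} = {cell t 1, cell t 2, cell t 3}"
  proof -
    have "{1..<4::nat} = {1,2,3}" by auto
    then show ?thesis by simp
  qed
  have a1: "addable {} (cell t 1)" using std_addable[OF t k(1)] i1 by simp
  then show c1: "cell t 1 = (0,0)" unfolding addable_def by (cases "cell t 1") auto
  have a2: "addable {(0,0)} (cell t 2)" using std_addable[OF t k(2)] i2 c1 by simp
  have a3: "addable {(0,0), cell t 2} (cell t 3)" using std_addable[OF t k(3)] i3 c1 by simp
  have a4: "addable {(0,0), cell t 2, cell t 3} (cell t 4)" using std_addable[OF t k(4)] i4 c1 by simp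
  have c2: "cell t 2 \<in> {(0,1),(1,0)}" by (rule add1[OF a2])
  show "pat t \<in> {((0,1),(0,2),(0,3)), ((0,1),(0,2),(1,0)), ((0,1),(1,0),(0,2)), ((1,0),(0,1),(0,2)),
                   ((0,1),(1,0),(1,1)), ((1,0),(0,1),(1,1)), ((0,1),(1,0),(2,0)), ((1,0),(0,1),(2,0)),
                   ((1,0),(2,0),(0,1)), ((1,0),(2,0),(3,0))}"
  proof (cases "cell t 2 = (0,1)")
    case True
    then have c3: "cell t 3 \<in> {(0,2),(1,0)}" using add2a a3 by simp
    show ?thesis
    proof (cases "cell t 3 = (0,2)")
      case True
      then have "cell t 4 \<in> {(0,3),(1,0)}" using add3a a4 \<open>cell t 2 = (0,1)\<close> by simp
      then show ?thesis using True \<open>cell t 2 = (0,1)\<close> by (auto simp: pat_def)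
    next
      case False
      then have c3': "cell t 3 = (1,0)" using c3 by simp
      have "addable {(0,0),(0,1),(1,0)} (cell t 4)" using a4 c3' \<open>cell t 2 = (0,1)\<close> by simp
      then have "cell t 4 \<in> {(0,2),(1,1),(2,0)}" by (rule add3b)
      then show ?thesis using c3' \<open>cell t 2 = (0,1)\<close> by (auto simp: pat_def)
    qed
  next
    case False
    then have c2': "cell t 2 = (1,0)" using c2 by simp
    then have c3: "cell t 3 \<in> {(0,1),(2,0)}" using add2b a3 by simp
    show ?thesis
    proof (cases "cell t 3 = (0,1)")
      case True
      have "addable {(0,0),(0,1),(1,0)} (cell t 4)" using a4 True c2' by (simp add: insert_commute)
      then have "cell t 4 \<in> {(0,2),(1,1),(2,0)}" by (rule add3b)
      then show ?thesis using True c2' by (auto simp: pat_def)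
    next
      case False
      then have c3': "cell t 3 = (2,0)" using c3 by simp
      have "cell t 4 \<in> {(0,1),(3,0)}" using add3c a4 c3' c2' by simp
      then show ?thesis using c3' c2' by (auto simp: pat_def)
    qed
  qed
qed

lemma rowcol_of: "row t k = fst (cell t k)" "col t k = snd (cell t k)"
  by (simp_all add: row_def col_def)


lemma restrict_id_T: assumes "t \<in> T" shows "restrict (id \<circ> t) C = t"
proof (rule ext)
  fix x show "restrict (id \<circ> t) C x = t x"
    by (cases "x \<in> C") (simp_all add: extensional_arb[OF tabE(2)[OF assms]])
qed

lemma cells_11: "cells [1,1] = {(0,0),(1,0)}"
  by (auto simp: cells_def less_Suc_eq nth_Cons')

lemma part1:
  assumes n4: "n \<ge> 4"
  shows "(specht_char n lam id - specht_char n lam s1) / 2 = real (f_skew lam [1,1])"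
proof -
  define Jm where "Jm = {t \<in> Std. cell t 2 = (1,0)}"
  define Jp where "Jp = {t \<in> Std. cell t 2 \<noteq> (1,0)}"
  have s1p: "s1 permutes {1..n}" using s1_perm[OF n4] .
  have k: "1 \<in> {1..n}" "2 \<in> {1..n}" "3 \<in> {1..n}" "4 \<in> {1..n}" using n4 by auto
  have stdT: "t \<in> T" "colinc t" "rowinc t" if "t \<in> Std" for t using that by (auto simp: Std_def)
  have GEm: "(\<lambda>R. e t R + (-1) * e (s1 \<circ> t) R) \<in> specht n lam \<and>
      perm_act s1 (\<lambda>R. e t R + (-1) * e (s1 \<circ> t) R) = (\<lambda>R. - (e t R + (-1) * e (s1 \<circ> t) R)) \<and>
      (\<lambda>R. e t R + (-1) * e (s1 \<circ> t) R) (tab t) \<noteq> 0 \<and>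
      (\<forall>R. (\<lambda>R. e t R + (-1) * e (s1 \<circ> t) R) R \<noteq> 0 \<longrightarrow> key n (tab t) \<le> key n R)" if t: "t \<in> Jm" for t
  proof -
    have ts: "t \<in> Std" and c2: "cell t 2 = (1,0)" using t by (auto simp: Jm_def)
    note tt = stdT[OF ts]
    have c1: "cell t 1 = (0,0)" using classify(1)[OF ts n4] .
    have cc: "col t 1 = col t 2" unfolding rowcol_of c1 c2 by simp
    have "Transposition.transpose 1 2 \<in> CS t"
      by (rule CS_transpose[OF tt(1) k(1,2) cc])
    then have s1CS: "s1 \<in> CS t" by (simp add: s1_tr)
    have es: "e (s1 \<circ> t) = (\<lambda>R. (-1) * e (id \<circ> t) R)"
      using e_sign[OF tt(1) s1CS] by (simp add: sign_s1 fun_eq_iff)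
    have cw: "colinc (restrict (id \<circ> t) C)" unfolding restrict_id_T[OF tt(1)] by (rule tt(2))
    have idi: "\<And>k. id (id k) = k" by simp
    have sg: "(-1::real) = 1 \<or> (-1::real) = -1" by simp
    have cd: "tab (restrict (id \<circ> t) C) = tab t \<longrightarrow> (-1) * (-1) = (1::real)" by simp
    note G = GE[OF s1p s1_inv tt(1,2) id_perm idi cw es sg sg cd]
    have nk: "\<not> key n (tab (restrict (id \<circ> t) C)) < key n (tab t)" unfolding restrict_id_T[OF tt(1)] by simp
    show ?thesis using G(1,2) G(4)[OF nk] by (simp add: fun_eq_iff)
  qed
  have GEp: "(\<lambda>R. e t R + 1 * e (s1 \<circ> t) R) \<in> specht n lam \<and>
      perm_act s1 (\<lambda>R. e t R + 1 * e (s1 \<circ> t) R) = (\<lambda>R. e t R + 1 * e (s1 \<circ> t) R) \<and>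
      (\<lambda>R. e t R + 1 * e (s1 \<circ> t) R) (tab t) \<noteq> 0 \<and>
      (\<forall>R. (\<lambda>R. e t R + 1 * e (s1 \<circ> t) R) R \<noteq> 0 \<longrightarrow> key n (tab t) \<le> key n R)" if t: "t \<in> Jp" for t
  proof -
    have ts: "t \<in> Std" and c2': "cell t 2 \<noteq> (1,0)" using t by (auto simp: Jp_def)
    note tt = stdT[OF ts]
    have c1: "cell t 1 = (0,0)" using classify(1)[OF ts n4] .
    have c2: "cell t 2 = (0,1)" using classify(2)[OF ts n4] c2' by (auto simp: pat_def)
    have es: "e (s1 \<circ> t) = (\<lambda>R. 1 * e (s1 \<circ> t) R)" by simp
    have cw: "colinc (restrict (s1 \<circ> t) C)"
    proof (rule colinc_perm4[OF tt(1,2) s1p s1_big s1_small])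
      fix a b :: nat assume ab: "1 \<le> a" "a < b" "b \<le> 4" "col t a = col t b"
      have "\<not> (a = 1 \<and> b = 2)" using ab(4) c1 c2 by (auto simp: rowcol_of)
      then show "s1 a < s1 b" using ab(1-3) by (auto simp: s1_def)
    qed
    have same: "tab (restrict (s1 \<circ> t) C) = tab t"
    proof (rule tab_same4[OF tt(1) s1p s1_inv s1_big])
      fix k :: nat assume "1 \<le> k" "k \<le> 4"
      then show "row t (s1 k) = row t k" using c1 c2 by (auto simp: s1_def rowcol_of)
    qed
    have sg: "(1::real) = 1 \<or> (1::real) = -1" by simp
    have cd: "tab (restrict (s1 \<circ> t) C) = tab t \<longrightarrow> 1 * 1 = (1::real)" by simp
    note G = GE[OF s1p s1_inv tt(1,2) s1p s1_inv cw es sg sg cd]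
    have nk: "\<not> key n (tab (restrict (s1 \<circ> t) C)) < key n (tab t)" using same by simp
    show ?thesis using G(1,2) G(4)[OF nk] by (simp add: fun_eq_iff)
  qed
  have injS: "inj_on (\<lambda>t. key n (tab t)) J" if "J \<subseteq> Std" for J
  proof (rule inj_onI)
    fix t u assume tu: "t \<in> J" "u \<in> J" "key n (tab t) = key n (tab u)"
    then have ts: "t \<in> Std" "u \<in> Std" using that by auto
    have "tab t = tab u" by (rule key_tab_inj) (use tu ts stdT in auto)
    then show "t = u" using std_unique stdT ts by blast
  qed
  have Idisj: "Jp \<inter> Jm = {}" and Iun: "Jp \<union> Jm = Std" unfolding Jp_def Jm_def by auto
  note BC = basis_char[OF s1p Idisj Iun, where vp = "\<lambda>t R. e t R + 1 * e (s1 \<circ> t) R" and Mp = tab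
      and vm = "\<lambda>t R. e t R + (-1) * e (s1 \<circ> t) R" and Mm = tab]
  have JpS: "Jp \<subseteq> Std" and JmS: "Jm \<subseteq> Std" unfolding Jp_def Jm_def by auto
  have prem: "\<And>i. i \<in> Jp \<Longrightarrow> (\<lambda>R. e i R + 1 * e (s1 \<circ> i) R) \<in> specht n lam"
    "\<And>i. i \<in> Jp \<Longrightarrow> perm_act s1 (\<lambda>R. e i R + 1 * e (s1 \<circ> i) R) = (\<lambda>R. e i R + 1 * e (s1 \<circ> i) R)"
    "\<And>i. i \<in> Jp \<Longrightarrow> e i (tab i) + 1 * e (s1 \<circ> i) (tab i) \<noteq> 0"
    "\<And>i R. i \<in> Jp \<Longrightarrow> e i R + 1 * e (s1 \<circ> i) R \<noteq> 0 \<Longrightarrow> key n (tab i) \<le> key n R"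
    "inj_on (\<lambda>i. key n (tab i)) Jp"
    "\<And>i. i \<in> Jm \<Longrightarrow> (\<lambda>R. e i R + (-1) * e (s1 \<circ> i) R) \<in> specht n lam"
    "\<And>i. i \<in> Jm \<Longrightarrow> perm_act s1 (\<lambda>R. e i R + (-1) * e (s1 \<circ> i) R) = (\<lambda>R. - (e i R + (-1) * e (s1 \<circ> i) R))"
    "\<And>i. i \<in> Jm \<Longrightarrow> e i (tab i) + (-1) * e (s1 \<circ> i) (tab i) \<noteq> 0"
    "\<And>i R. i \<in> Jm \<Longrightarrow> e i R + (-1) * e (s1 \<circ> i) R \<noteq> 0 \<Longrightarrow> key n (tab i) \<le> key n R"
    "inj_on (\<lambda>i. key n (tab i)) Jm"
    using GEp GEm injS[OF JpS] injS[OF JmS] by auto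
  have ch1: "specht_char n lam id = real (card Std)" by (rule BC(1)[OF prem])
  have ch2: "specht_char n lam s1 = real (card Std) - 2 * real (card Jm)" by (rule BC(2)[OF prem])
  define N where "N = {(0::nat,0::nat),(1,0)}"
  define F where "F x = (if x = (0,0) then 1 else (2::nat))" for x :: "nat \<times> nat"
  have JmA: "Jm = {t \<in> Std. \<forall>x\<in>N. x \<in> C \<and> t x = F x}"
  proof (intro set_eqI iffI)
    fix t assume t: "t \<in> Jm"
    then have ts: "t \<in> Std" and c2: "cell t 2 = (1,0)" by (auto simp: Jm_def)
    have c1: "cell t 1 = (0,0)" using classify(1)[OF ts n4] .
    show "t \<in> {t \<in> Std. \<forall>x\<in>N. x \<in> C \<and> t x = F x}"
      using ts cell_in[OF stdT(1)[OF ts] k(1)] cell_in[OF stdT(1)[OF ts] k(2)] c1 c2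
      by (auto simp: N_def F_def)
  next
    fix t assume t: "t \<in> {t \<in> Std. \<forall>x\<in>N. x \<in> C \<and> t x = F x}"
    then have ts: "t \<in> Std" and "(1,0) \<in> C" "t (1,0) = 2" by (auto simp: N_def F_def)
    then have "cell t 2 = (1,0)" using cell_eqI[OF stdT(1)[OF ts]] by simp
    then show "t \<in> Jm" using ts by (simp add: Jm_def)
  qed
  have cnt: "card Jm = f_skew lam [1,1]"
    unfolding JmA
  proof (rule count_agree)
    show "N = cells [1,1]" unfolding N_def cells_11 ..
    show "(i',j') \<in> N" if "(i,j) \<in> N" "i' \<le> i" "j' \<le> j" for i j i' j'
      using that by (auto simp: N_def)
    show "2 = card N" by (simp add: N_def)
    show "bij_betw F N {1..2}" by (auto simp: bij_betw_def inj_on_def N_def F_def)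
    show "F (i,j) < F (i,j')" if "(i,j) \<in> N" "(i,j') \<in> N" "j < j'" for i j j'
      using that by (auto simp: N_def)
    show "F (i,j) < F (i',j)" if "(i,j) \<in> N" "(i',j) \<in> N" "i < i'" for i i' j
      using that by (auto simp: N_def F_def)
  qed
  show ?thesis using ch1 ch2 cnt by simp
qed

end

lemma ss_big: "k > 4 \<Longrightarrow> (s1 \<circ> s3) k = k" by (auto simp: s1_def s3_def)
lemma ss_small: "k \<le> 4 \<Longrightarrow> (s1 \<circ> s3) k \<le> 4" by (auto simp: s1_def s3_def)
lemma pairs4: "1 \<le> a \<Longrightarrow> a < b \<Longrightarrow> b \<le> (4::nat) \<Longrightarrow> (a,b) \<in> {(1,2),(1,3),(1,4),(2,3),(2,4),(3,4)}"
  by auto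
lemma lt3: "k < (3::nat) \<Longrightarrow> 1 \<le> k \<Longrightarrow> k = 1 \<or> k = 2" by auto

context young
begin

lemma key_cmp4r:
  assumes t: "t \<in> T" and p: "p permutes {1..n}" and pi: "\<And>k. p (p k) = k"
    and k0: "k0 \<in> {1..n}" and before: "\<And>k. k \<in> {1..n} \<Longrightarrow> k < k0 \<Longrightarrow> row t (p k) = row t k"
    and gt: "row t k0 < row t (p k0)"
  shows "key n (tab t) < key n (tab (restrict (p \<circ> t) C))"
proof (rule key_less[OF _ k0])
  show "tab t k \<le> n" if "k \<in> {1..n}" for k using tab_digit[OF t that] .
  show "tab t k = tab (restrict (p \<circ> t) C) k" if "k \<in> {1..n}" "k < k0" for k
    unfolding tab_invol[OF t p pi] using before[OF that] that perm_in[OF p that(1)] by (simp add: tab_eq)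
  show "tab t k0 < tab (restrict (p \<circ> t) C) k0"
    unfolding tab_invol[OF t p pi] using gt k0 perm_in[OF p k0] by (simp add: tab_eq)
qed

lemma rc4:
  assumes t: "t \<in> Std" and n4: "n \<ge> 4" and p: "pat t = (a2, a3, a4)"
  shows "row t 1 = 0" "col t 1 = 0" "row t 2 = fst a2" "col t 2 = snd a2"
    "row t 3 = fst a3" "col t 3 = snd a3" "row t 4 = fst a4" "col t 4 = snd a4"
  using classify(1)[OF t n4] p by (auto simp: rowcol_of pat_def)

lemma es_s3:
  assumes t: "t \<in> T" and n4: "n \<ge> 4" and c: "col t 1 = col t 2"
  shows "e (s1 \<circ> s3 \<circ> t) = (\<lambda>R. (-1) * e (s3 \<circ> t) R)"
proof -
  define u where "u = restrict (s3 \<circ> t) C"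
  have uT: "u \<in> T" unfolding u_def by (rule perm_tab_in_T[OF t s3_perm[OF n4]])
  have k: "1 \<in> {1..n}" "2 \<in> {1..n}" using n4 by auto
  have "col u 1 = col u 2" unfolding u_def using col_invol[OF t s3_perm[OF n4] s3_inv] k c
    by (simp add: s3_def)
  then have "Transposition.transpose 1 2 \<in> CS u" by (rule CS_transpose[OF uT k])
  then have s1CS: "s1 \<in> CS u" by (simp add: s1_tr)
  have "e (s1 \<circ> u) = e (s1 \<circ> s3 \<circ> t)" by (rule e_cong) (simp add: u_def)
  moreover have "e (s1 \<circ> u) R = (-1) * e u R" for R using e_sign[OF uT s1CS] by (simp add: sign_s1)
  moreover have "e u = e (s3 \<circ> t)" unfolding u_def e_restrict ..
  ultimately show ?thesis by (auto simp: fun_eq_iff)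
qed

lemma es_s1:
  assumes t: "t \<in> T" and n4: "n \<ge> 4" and c: "col t 3 = col t 4"
  shows "e (s1 \<circ> s3 \<circ> t) = (\<lambda>R. (-1) * e (s1 \<circ> t) R)"
proof -
  define u where "u = restrict (s1 \<circ> t) C"
  have uT: "u \<in> T" unfolding u_def by (rule perm_tab_in_T[OF t s1_perm[OF n4]])
  have k: "3 \<in> {1..n}" "4 \<in> {1..n}" using n4 by auto
  have "col u 3 = col u 4" unfolding u_def using col_invol[OF t s1_perm[OF n4] s1_inv] k c
    by (simp add: s1_def)
  then have "Transposition.transpose 3 4 \<in> CS u" by (rule CS_transpose[OF uT k])
  then have s3CS: "s3 \<in> CS u" by (simp add: s3_tr)
  have "e (s3 \<circ> u) = e (s1 \<circ> s3 \<circ> t)" by (rule e_cong) (simp add: u_def s1_def s3_def)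
  moreover have "e (s3 \<circ> u) R = (-1) * e u R" for R using e_sign[OF uT s3CS] by (simp add: sign_s3)
  moreover have "e u = e (s1 \<circ> t)" unfolding u_def e_restrict ..
  ultimately show ?thesis by (auto simp: fun_eq_iff)
qed

lemma es_id:
  assumes t: "t \<in> T" and n4: "n \<ge> 4" and c: "col t 1 = col t 2" "col t 3 = col t 4"
  shows "e (s1 \<circ> s3 \<circ> t) = (\<lambda>R. 1 * e (id \<circ> t) R)"
proof -
  have k: "1 \<in> {1..n}" "2 \<in> {1..n}" "3 \<in> {1..n}" "4 \<in> {1..n}" using n4 by auto
  have "s1 \<in> CS t" using CS_transpose[OF t k(1,2) c(1)] by (simp add: s1_tr)
  moreover have "s3 \<in> CS t" using CS_transpose[OF t k(3,4) c(2)] by (simp add: s3_tr)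
  ultimately have "s1 \<circ> s3 \<in> CS t" by (rule CS_comp)
  from e_sign[OF t this] show ?thesis by (simp add: sign_s13 fun_eq_iff)
qed

lemma pat1:
  assumes t: "t \<in> Std" and n4: "n \<ge> 4" and p: "pat t = ((0,1),(0,2),(0,3))"
  shows "(\<lambda>R. e t R + 1 * e (s1 \<circ> s3 \<circ> t) R) \<in> specht n lam \<and>
    perm_act (s1 \<circ> s3) (\<lambda>R. e t R + 1 * e (s1 \<circ> s3 \<circ> t) R) = (\<lambda>R. 1 * (e t R + 1 * e (s1 \<circ> s3 \<circ> t) R)) \<and>
    e t (tab t) + 1 * e (s1 \<circ> s3 \<circ> t) (tab t) \<noteq> 0 \<and> (\<forall>R. e t R + 1 * e (s1 \<circ> s3 \<circ> t) R \<noteq> 0 \<longrightarrow> key n (tab t) \<le> key n R)"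
proof -
  have tT: "t \<in> T" and ct: "colinc t" using t by (auto simp: Std_def)
  note rc = rc4[OF t n4 p]
  have idi: "\<And>k. id (id k) = k" by simp
  have k3: "3 \<in> {1..n}" using n4 by simp
  have cw: "colinc (restrict ((s1 \<circ> s3) \<circ> t) C)"
  proof (rule colinc_perm4[OF tT ct s13_perm[OF n4] ss_big ss_small])
    fix a b :: nat assume ab: "1 \<le> a" "a < b" "b \<le> 4" "col t a = col t b"
    from pairs4[OF ab(1-3)] show "(s1 \<circ> s3) a < (s1 \<circ> s3) b" using ab(4) rc by (auto simp: s1_def s3_def)
  qed
  have es: "e (s1 \<circ> s3 \<circ> t) = (\<lambda>R. 1 * e ((s1 \<circ> s3) \<circ> t) R)" by simp
  have sg: "(1::real) = 1 \<or> (1::real) = -1" by simp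
  have ep: "(1::real) = 1 \<or> (1::real) = -1" by simp
  have same: "tab (restrict ((s1 \<circ> s3) \<circ> t) C) = tab t"
  proof (rule tab_same4[OF tT s13_perm[OF n4] s13_inv ss_big])
    fix k :: nat assume "1 \<le> k" "k \<le> 4"
    then have "k = 1 \<or> k = 2 \<or> k = 3 \<or> k = 4" by auto
    then show "row t ((s1 \<circ> s3) k) = row t k" using rc by (auto simp: s1_def s3_def)
  qed
  have nk: "\<not> key n (tab (restrict ((s1 \<circ> s3) \<circ> t) C)) < key n (tab t)" using same by simp
  have cd: "tab (restrict ((s1 \<circ> s3) \<circ> t) C) = tab t \<longrightarrow> 1 * 1 = (1::real)" by simp
  note G = GE[OF s13_perm[OF n4] s13_inv tT ct s13_perm[OF n4] s13_inv cw es sg ep cd]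
  show ?thesis using G(1,2) G(4)[OF nk] by simp
qed

lemma pat2:
  assumes t: "t \<in> Std" and n4: "n \<ge> 4" and p: "pat t = ((0,1),(0,2),(1,0))"
  shows "(\<lambda>R. e t R + (-1) * e (s1 \<circ> s3 \<circ> t) R) \<in> specht n lam \<and>
    perm_act (s1 \<circ> s3) (\<lambda>R. e t R + (-1) * e (s1 \<circ> s3 \<circ> t) R) = (\<lambda>R. (-1) * (e t R + (-1) * e (s1 \<circ> s3 \<circ> t) R)) \<and>
    e t (tab t) + (-1) * e (s1 \<circ> s3 \<circ> t) (tab t) \<noteq> 0 \<and> (\<forall>R. e t R + (-1) * e (s1 \<circ> s3 \<circ> t) R \<noteq> 0 \<longrightarrow> key n (tab t) \<le> key n R)"
proof -
  have tT: "t \<in> T" and ct: "colinc t" using t by (auto simp: Std_def)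
  note rc = rc4[OF t n4 p]
  have idi: "\<And>k. id (id k) = k" by simp
  have k3: "3 \<in> {1..n}" using n4 by simp
  have cw: "colinc (restrict ((s1 \<circ> s3) \<circ> t) C)"
  proof (rule colinc_perm4[OF tT ct s13_perm[OF n4] ss_big ss_small])
    fix a b :: nat assume ab: "1 \<le> a" "a < b" "b \<le> 4" "col t a = col t b"
    from pairs4[OF ab(1-3)] show "(s1 \<circ> s3) a < (s1 \<circ> s3) b" using ab(4) rc by (auto simp: s1_def s3_def)
  qed
  have es: "e (s1 \<circ> s3 \<circ> t) = (\<lambda>R. 1 * e ((s1 \<circ> s3) \<circ> t) R)" by simp
  have sg: "(1::real) = 1 \<or> (1::real) = -1" by simp
  have ep: "((-1)::real) = 1 \<or> ((-1)::real) = -1" by simp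
  have kk: "key n (tab t) < key n (tab (restrict ((s1 \<circ> s3) \<circ> t) C))"
  proof (rule key_cmp4r[OF tT s13_perm[OF n4] s13_inv k3])
    fix k assume "k \<in> {1..n}" "k < 3"
    then have "k = 1 \<or> k = 2" by auto
    then show "row t ((s1 \<circ> s3) k) = row t k" using rc by (auto simp: s1_def s3_def)
  qed (use rc in \<open>simp add: s1_def s3_def\<close>)
  have nk: "\<not> key n (tab (restrict ((s1 \<circ> s3) \<circ> t) C)) < key n (tab t)" using kk by simp
  have cd: "tab (restrict ((s1 \<circ> s3) \<circ> t) C) = tab t \<longrightarrow> (-1) * 1 = (1::real)" using kk by auto
  note G = GE[OF s13_perm[OF n4] s13_inv tT ct s13_perm[OF n4] s13_inv cw es sg ep cd]
  show ?thesis using G(1,2) G(4)[OF nk] by simp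
qed

lemma pat3:
  assumes t: "t \<in> Std" and n4: "n \<ge> 4" and p: "pat t = ((0,1),(1,0),(0,2))"
  shows "(\<lambda>R. e t R + 1 * e (s1 \<circ> s3 \<circ> t) R) \<in> specht n lam \<and>
    perm_act (s1 \<circ> s3) (\<lambda>R. e t R + 1 * e (s1 \<circ> s3 \<circ> t) R) = (\<lambda>R. 1 * (e t R + 1 * e (s1 \<circ> s3 \<circ> t) R)) \<and>
    e t (tab (restrict ((s1 \<circ> s3) \<circ> t) C)) + 1 * e (s1 \<circ> s3 \<circ> t) (tab (restrict ((s1 \<circ> s3) \<circ> t) C)) \<noteq> 0 \<and> (\<forall>R. e t R + 1 * e (s1 \<circ> s3 \<circ> t) R \<noteq> 0 \<longrightarrow> key n (tab (restrict ((s1 \<circ> s3) \<circ> t) C)) \<le> key n R)"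
proof -
  have tT: "t \<in> T" and ct: "colinc t" using t by (auto simp: Std_def)
  note rc = rc4[OF t n4 p]
  have idi: "\<And>k. id (id k) = k" by simp
  have k3: "3 \<in> {1..n}" using n4 by simp
  have cw: "colinc (restrict ((s1 \<circ> s3) \<circ> t) C)"
  proof (rule colinc_perm4[OF tT ct s13_perm[OF n4] ss_big ss_small])
    fix a b :: nat assume ab: "1 \<le> a" "a < b" "b \<le> 4" "col t a = col t b"
    from pairs4[OF ab(1-3)] show "(s1 \<circ> s3) a < (s1 \<circ> s3) b" using ab(4) rc by (auto simp: s1_def s3_def)
  qed
  have es: "e (s1 \<circ> s3 \<circ> t) = (\<lambda>R. 1 * e ((s1 \<circ> s3) \<circ> t) R)" by simp
  have sg: "(1::real) = 1 \<or> (1::real) = -1" by simp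
  have ep: "(1::real) = 1 \<or> (1::real) = -1" by simp
  have kk: "key n (tab (restrict ((s1 \<circ> s3) \<circ> t) C)) < key n (tab t)"
  proof (rule key_cmp4[OF tT s13_perm[OF n4] s13_inv k3])
    fix k assume "k \<in> {1..n}" "k < 3"
    then have "k = 1 \<or> k = 2" by auto
    then show "row t ((s1 \<circ> s3) k) = row t k" using rc by (auto simp: s1_def s3_def)
  qed (use rc in \<open>simp add: s1_def s3_def\<close>)
  have cd: "tab (restrict ((s1 \<circ> s3) \<circ> t) C) = tab t \<longrightarrow> 1 * 1 = (1::real)" using kk by auto
  note G = GE[OF s13_perm[OF n4] s13_inv tT ct s13_perm[OF n4] s13_inv cw es sg ep cd]
  show ?thesis using G(1,2) G(3)[OF kk] by simp
qed

lemma pat4: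
  assumes t: "t \<in> Std" and n4: "n \<ge> 4" and p: "pat t = ((1,0),(0,1),(0,2))"
  shows "(\<lambda>R. e t R + (-1) * e (s1 \<circ> s3 \<circ> t) R) \<in> specht n lam \<and>
    perm_act (s1 \<circ> s3) (\<lambda>R. e t R + (-1) * e (s1 \<circ> s3 \<circ> t) R) = (\<lambda>R. (-1) * (e t R + (-1) * e (s1 \<circ> s3 \<circ> t) R)) \<and>
    e t (tab t) + (-1) * e (s1 \<circ> s3 \<circ> t) (tab t) \<noteq> 0 \<and> (\<forall>R. e t R + (-1) * e (s1 \<circ> s3 \<circ> t) R \<noteq> 0 \<longrightarrow> key n (tab t) \<le> key n R)"
proof -
  have tT: "t \<in> T" and ct: "colinc t" using t by (auto simp: Std_def)
  note rc = rc4[OF t n4 p]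
  have idi: "\<And>k. id (id k) = k" by simp
  have k3: "3 \<in> {1..n}" using n4 by simp
  have cw: "colinc (restrict (s3 \<circ> t) C)"
  proof (rule colinc_perm4[OF tT ct s3_perm[OF n4] s3_big s3_small])
    fix a b :: nat assume ab: "1 \<le> a" "a < b" "b \<le> 4" "col t a = col t b"
    from pairs4[OF ab(1-3)] show "s3 a < s3 b" using ab(4) rc by (auto simp: s1_def s3_def)
  qed
  have es: "e (s1 \<circ> s3 \<circ> t) = (\<lambda>R. (-1) * e (s3 \<circ> t) R)" by (rule es_s3[OF tT n4]) (simp add: rc rc[unfolded One_nat_def])
  have sg: "((-1)::real) = 1 \<or> ((-1)::real) = -1" by simp
  have ep: "((-1)::real) = 1 \<or> ((-1)::real) = -1" by simp
  have same: "tab (restrict (s3 \<circ> t) C) = tab t"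
  proof (rule tab_same4[OF tT s3_perm[OF n4] s3_inv s3_big])
    fix k :: nat assume "1 \<le> k" "k \<le> 4"
    then have "k = 1 \<or> k = 2 \<or> k = 3 \<or> k = 4" by auto
    then show "row t (s3 k) = row t k" using rc by (auto simp: s1_def s3_def)
  qed
  have nk: "\<not> key n (tab (restrict (s3 \<circ> t) C)) < key n (tab t)" using same by simp
  have cd: "tab (restrict (s3 \<circ> t) C) = tab t \<longrightarrow> (-1) * (-1) = (1::real)" by simp
  note G = GE[OF s13_perm[OF n4] s13_inv tT ct s3_perm[OF n4] s3_inv cw es sg ep cd]
  show ?thesis using G(1,2) G(4)[OF nk] by simp
qed

lemma pat5:
  assumes t: "t \<in> Std" and n4: "n \<ge> 4" and p: "pat t = ((0,1),(1,0),(1,1))"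
  shows "(\<lambda>R. e t R + 1 * e (s1 \<circ> s3 \<circ> t) R) \<in> specht n lam \<and>
    perm_act (s1 \<circ> s3) (\<lambda>R. e t R + 1 * e (s1 \<circ> s3 \<circ> t) R) = (\<lambda>R. 1 * (e t R + 1 * e (s1 \<circ> s3 \<circ> t) R)) \<and>
    e t (tab t) + 1 * e (s1 \<circ> s3 \<circ> t) (tab t) \<noteq> 0 \<and> (\<forall>R. e t R + 1 * e (s1 \<circ> s3 \<circ> t) R \<noteq> 0 \<longrightarrow> key n (tab t) \<le> key n R)"
proof -
  have tT: "t \<in> T" and ct: "colinc t" using t by (auto simp: Std_def)
  note rc = rc4[OF t n4 p]
  have idi: "\<And>k. id (id k) = k" by simp
  have k3: "3 \<in> {1..n}" using n4 by simp
  have cw: "colinc (restrict ((s1 \<circ> s3) \<circ> t) C)"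
  proof (rule colinc_perm4[OF tT ct s13_perm[OF n4] ss_big ss_small])
    fix a b :: nat assume ab: "1 \<le> a" "a < b" "b \<le> 4" "col t a = col t b"
    from pairs4[OF ab(1-3)] show "(s1 \<circ> s3) a < (s1 \<circ> s3) b" using ab(4) rc by (auto simp: s1_def s3_def)
  qed
  have es: "e (s1 \<circ> s3 \<circ> t) = (\<lambda>R. 1 * e ((s1 \<circ> s3) \<circ> t) R)" by simp
  have sg: "(1::real) = 1 \<or> (1::real) = -1" by simp
  have ep: "(1::real) = 1 \<or> (1::real) = -1" by simp
  have same: "tab (restrict ((s1 \<circ> s3) \<circ> t) C) = tab t"
  proof (rule tab_same4[OF tT s13_perm[OF n4] s13_inv ss_big])
    fix k :: nat assume "1 \<le> k" "k \<le> 4"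
    then have "k = 1 \<or> k = 2 \<or> k = 3 \<or> k = 4" by auto
    then show "row t ((s1 \<circ> s3) k) = row t k" using rc by (auto simp: s1_def s3_def)
  qed
  have nk: "\<not> key n (tab (restrict ((s1 \<circ> s3) \<circ> t) C)) < key n (tab t)" using same by simp
  have cd: "tab (restrict ((s1 \<circ> s3) \<circ> t) C) = tab t \<longrightarrow> 1 * 1 = (1::real)" by simp
  note G = GE[OF s13_perm[OF n4] s13_inv tT ct s13_perm[OF n4] s13_inv cw es sg ep cd]
  show ?thesis using G(1,2) G(4)[OF nk] by simp
qed

lemma pat6:
  assumes t: "t \<in> Std" and n4: "n \<ge> 4" and p: "pat t = ((1,0),(0,1),(1,1))"
  shows "(\<lambda>R. e t R + 1 * e (s1 \<circ> s3 \<circ> t) R) \<in> specht n lam \<and>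
    perm_act (s1 \<circ> s3) (\<lambda>R. e t R + 1 * e (s1 \<circ> s3 \<circ> t) R) = (\<lambda>R. 1 * (e t R + 1 * e (s1 \<circ> s3 \<circ> t) R)) \<and>
    e t (tab t) + 1 * e (s1 \<circ> s3 \<circ> t) (tab t) \<noteq> 0 \<and> (\<forall>R. e t R + 1 * e (s1 \<circ> s3 \<circ> t) R \<noteq> 0 \<longrightarrow> key n (tab t) \<le> key n R)"
proof -
  have tT: "t \<in> T" and ct: "colinc t" using t by (auto simp: Std_def)
  note rc = rc4[OF t n4 p]
  have idi: "\<And>k. id (id k) = k" by simp
  have k3: "3 \<in> {1..n}" using n4 by simp
  have cw: "colinc (restrict (id \<circ> t) C)" unfolding restrict_id_T[OF tT] by (rule ct)
  have es: "e (s1 \<circ> s3 \<circ> t) = (\<lambda>R. 1 * e (id \<circ> t) R)" by (rule es_id[OF tT n4]) (simp_all add: rc rc[unfolded One_nat_def])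
  have sg: "(1::real) = 1 \<or> (1::real) = -1" by simp
  have ep: "(1::real) = 1 \<or> (1::real) = -1" by simp
  have same: "tab (restrict (id \<circ> t) C) = tab t" unfolding restrict_id_T[OF tT] ..
  have nk: "\<not> key n (tab (restrict (id \<circ> t) C)) < key n (tab t)" using same by simp
  have cd: "tab (restrict (id \<circ> t) C) = tab t \<longrightarrow> 1 * 1 = (1::real)" by simp
  note G = GE[OF s13_perm[OF n4] s13_inv tT ct id_perm idi cw es sg ep cd]
  show ?thesis using G(1,2) G(4)[OF nk] by simp
qed

lemma pat7:
  assumes t: "t \<in> Std" and n4: "n \<ge> 4" and p: "pat t = ((0,1),(1,0),(2,0))"
  shows "(\<lambda>R. e t R + (-1) * e (s1 \<circ> s3 \<circ> t) R) \<in> specht n lam \<and>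
    perm_act (s1 \<circ> s3) (\<lambda>R. e t R + (-1) * e (s1 \<circ> s3 \<circ> t) R) = (\<lambda>R. (-1) * (e t R + (-1) * e (s1 \<circ> s3 \<circ> t) R)) \<and>
    e t (tab t) + (-1) * e (s1 \<circ> s3 \<circ> t) (tab t) \<noteq> 0 \<and> (\<forall>R. e t R + (-1) * e (s1 \<circ> s3 \<circ> t) R \<noteq> 0 \<longrightarrow> key n (tab t) \<le> key n R)"
proof -
  have tT: "t \<in> T" and ct: "colinc t" using t by (auto simp: Std_def)
  note rc = rc4[OF t n4 p]
  have idi: "\<And>k. id (id k) = k" by simp
  have k3: "3 \<in> {1..n}" using n4 by simp
  have cw: "colinc (restrict (s1 \<circ> t) C)"
  proof (rule colinc_perm4[OF tT ct s1_perm[OF n4] s1_big s1_small])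
    fix a b :: nat assume ab: "1 \<le> a" "a < b" "b \<le> 4" "col t a = col t b"
    from pairs4[OF ab(1-3)] show "s1 a < s1 b" using ab(4) rc by (auto simp: s1_def s3_def)
  qed
  have es: "e (s1 \<circ> s3 \<circ> t) = (\<lambda>R. (-1) * e (s1 \<circ> t) R)" by (rule es_s1[OF tT n4]) (simp add: rc rc[unfolded One_nat_def])
  have sg: "((-1)::real) = 1 \<or> ((-1)::real) = -1" by simp
  have ep: "((-1)::real) = 1 \<or> ((-1)::real) = -1" by simp
  have same: "tab (restrict (s1 \<circ> t) C) = tab t"
  proof (rule tab_same4[OF tT s1_perm[OF n4] s1_inv s1_big])
    fix k :: nat assume "1 \<le> k" "k \<le> 4"
    then have "k = 1 \<or> k = 2 \<or> k = 3 \<or> k = 4" by auto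
    then show "row t (s1 k) = row t k" using rc by (auto simp: s1_def s3_def)
  qed
  have nk: "\<not> key n (tab (restrict (s1 \<circ> t) C)) < key n (tab t)" using same by simp
  have cd: "tab (restrict (s1 \<circ> t) C) = tab t \<longrightarrow> (-1) * (-1) = (1::real)" by simp
  note G = GE[OF s13_perm[OF n4] s13_inv tT ct s1_perm[OF n4] s1_inv cw es sg ep cd]
  show ?thesis using G(1,2) G(4)[OF nk] by simp
qed

lemma pat8:
  assumes t: "t \<in> Std" and n4: "n \<ge> 4" and p: "pat t = ((1,0),(0,1),(2,0))"
  shows "(\<lambda>R. e t R + (-1) * e (s1 \<circ> s3 \<circ> t) R) \<in> specht n lam \<and>
    perm_act (s1 \<circ> s3) (\<lambda>R. e t R + (-1) * e (s1 \<circ> s3 \<circ> t) R) = (\<lambda>R. (-1) * (e t R + (-1) * e (s1 \<circ> s3 \<circ> t) R)) \<and>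
    e t (tab t) + (-1) * e (s1 \<circ> s3 \<circ> t) (tab t) \<noteq> 0 \<and> (\<forall>R. e t R + (-1) * e (s1 \<circ> s3 \<circ> t) R \<noteq> 0 \<longrightarrow> key n (tab t) \<le> key n R)"
proof -
  have tT: "t \<in> T" and ct: "colinc t" using t by (auto simp: Std_def)
  note rc = rc4[OF t n4 p]
  have idi: "\<And>k. id (id k) = k" by simp
  have k3: "3 \<in> {1..n}" using n4 by simp
  have cw: "colinc (restrict (s3 \<circ> t) C)"
  proof (rule colinc_perm4[OF tT ct s3_perm[OF n4] s3_big s3_small])
    fix a b :: nat assume ab: "1 \<le> a" "a < b" "b \<le> 4" "col t a = col t b"
    from pairs4[OF ab(1-3)] show "s3 a < s3 b" using ab(4) rc by (auto simp: s1_def s3_def)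
  qed
  have es: "e (s1 \<circ> s3 \<circ> t) = (\<lambda>R. (-1) * e (s3 \<circ> t) R)" by (rule es_s3[OF tT n4]) (simp add: rc rc[unfolded One_nat_def])
  have sg: "((-1)::real) = 1 \<or> ((-1)::real) = -1" by simp
  have ep: "((-1)::real) = 1 \<or> ((-1)::real) = -1" by simp
  have kk: "key n (tab t) < key n (tab (restrict (s3 \<circ> t) C))"
  proof (rule key_cmp4r[OF tT s3_perm[OF n4] s3_inv k3])
    fix k assume "k \<in> {1..n}" "k < 3"
    then have "k = 1 \<or> k = 2" by auto
    then show "row t (s3 k) = row t k" using rc by (auto simp: s1_def s3_def)
  qed (use rc in \<open>simp add: s1_def s3_def\<close>)
  have nk: "\<not> key n (tab (restrict (s3 \<circ> t) C)) < key n (tab t)" using kk by simp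
  have cd: "tab (restrict (s3 \<circ> t) C) = tab t \<longrightarrow> (-1) * (-1) = (1::real)" using kk by auto
  note G = GE[OF s13_perm[OF n4] s13_inv tT ct s3_perm[OF n4] s3_inv cw es sg ep cd]
  show ?thesis using G(1,2) G(4)[OF nk] by simp
qed

lemma pat9:
  assumes t: "t \<in> Std" and n4: "n \<ge> 4" and p: "pat t = ((1,0),(2,0),(0,1))"
  shows "(\<lambda>R. e t R + 1 * e (s1 \<circ> s3 \<circ> t) R) \<in> specht n lam \<and>
    perm_act (s1 \<circ> s3) (\<lambda>R. e t R + 1 * e (s1 \<circ> s3 \<circ> t) R) = (\<lambda>R. 1 * (e t R + 1 * e (s1 \<circ> s3 \<circ> t) R)) \<and>
    e t (tab (restrict (s3 \<circ> t) C)) + 1 * e (s1 \<circ> s3 \<circ> t) (tab (restrict (s3 \<circ> t) C)) \<noteq> 0 \<and> (\<forall>R. e t R + 1 * e (s1 \<circ> s3 \<circ> t) R \<noteq> 0 \<longrightarrow> key n (tab (restrict (s3 \<circ> t) C)) \<le> key n R)"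
proof -
  have tT: "t \<in> T" and ct: "colinc t" using t by (auto simp: Std_def)
  note rc = rc4[OF t n4 p]
  have idi: "\<And>k. id (id k) = k" by simp
  have k3: "3 \<in> {1..n}" using n4 by simp
  have cw: "colinc (restrict (s3 \<circ> t) C)"
  proof (rule colinc_perm4[OF tT ct s3_perm[OF n4] s3_big s3_small])
    fix a b :: nat assume ab: "1 \<le> a" "a < b" "b \<le> 4" "col t a = col t b"
    from pairs4[OF ab(1-3)] show "s3 a < s3 b" using ab(4) rc by (auto simp: s1_def s3_def)
  qed
  have es: "e (s1 \<circ> s3 \<circ> t) = (\<lambda>R. (-1) * e (s3 \<circ> t) R)" by (rule es_s3[OF tT n4]) (simp add: rc rc[unfolded One_nat_def])
  have sg: "((-1)::real) = 1 \<or> ((-1)::real) = -1" by simp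
  have ep: "(1::real) = 1 \<or> (1::real) = -1" by simp
  have kk: "key n (tab (restrict (s3 \<circ> t) C)) < key n (tab t)"
  proof (rule key_cmp4[OF tT s3_perm[OF n4] s3_inv k3])
    fix k assume "k \<in> {1..n}" "k < 3"
    then have "k = 1 \<or> k = 2" by auto
    then show "row t (s3 k) = row t k" using rc by (auto simp: s1_def s3_def)
  qed (use rc in \<open>simp add: s1_def s3_def\<close>)
  have cd: "tab (restrict (s3 \<circ> t) C) = tab t \<longrightarrow> 1 * (-1) = (1::real)" using kk by auto
  note G = GE[OF s13_perm[OF n4] s13_inv tT ct s3_perm[OF n4] s3_inv cw es sg ep cd]
  show ?thesis using G(1,2) G(3)[OF kk] by simp
qed

lemma pat10:
  assumes t: "t \<in> Std" and n4: "n \<ge> 4" and p: "pat t = ((1,0),(2,0),(3,0))"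
  shows "(\<lambda>R. e t R + 1 * e (s1 \<circ> s3 \<circ> t) R) \<in> specht n lam \<and>
    perm_act (s1 \<circ> s3) (\<lambda>R. e t R + 1 * e (s1 \<circ> s3 \<circ> t) R) = (\<lambda>R. 1 * (e t R + 1 * e (s1 \<circ> s3 \<circ> t) R)) \<and>
    e t (tab t) + 1 * e (s1 \<circ> s3 \<circ> t) (tab t) \<noteq> 0 \<and> (\<forall>R. e t R + 1 * e (s1 \<circ> s3 \<circ> t) R \<noteq> 0 \<longrightarrow> key n (tab t) \<le> key n R)"
proof -
  have tT: "t \<in> T" and ct: "colinc t" using t by (auto simp: Std_def)
  note rc = rc4[OF t n4 p]
  have idi: "\<And>k. id (id k) = k" by simp
  have k3: "3 \<in> {1..n}" using n4 by simp
  have cw: "colinc (restrict (id \<circ> t) C)" unfolding restrict_id_T[OF tT] by (rule ct)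
  have es: "e (s1 \<circ> s3 \<circ> t) = (\<lambda>R. 1 * e (id \<circ> t) R)" by (rule es_id[OF tT n4]) (simp_all add: rc rc[unfolded One_nat_def])
  have sg: "(1::real) = 1 \<or> (1::real) = -1" by simp
  have ep: "(1::real) = 1 \<or> (1::real) = -1" by simp
  have same: "tab (restrict (id \<circ> t) C) = tab t" unfolding restrict_id_T[OF tT] ..
  have nk: "\<not> key n (tab (restrict (id \<circ> t) C)) < key n (tab t)" using same by simp
  have cd: "tab (restrict (id \<circ> t) C) = tab t \<longrightarrow> 1 * 1 = (1::real)" by simp
  note G = GE[OF s13_perm[OF n4] s13_inv tT ct id_perm idi cw es sg ep cd]
  show ?thesis using G(1,2) G(4)[OF nk] by simp
qed

end

lemma cells_31: "cells [3,1] = {(0,0),(0,1),(0,2),(1,0)}"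
  by (auto simp: cells_def less_Suc_eq nth_Cons' numeral_3_eq_3)
lemma cells_211: "cells [2,1,1] = {(0,0),(0,1),(1,0),(2,0)}"
  by (auto simp: cells_def less_Suc_eq nth_Cons' numeral_2_eq_2 numeral_3_eq_3)

context young
begin

lemma pat_agree:
  assumes t: "t \<in> Std" and n4: "n \<ge> 4"
    and F: "F (0,0) = 1" "F a2 = 2" "F a3 = 3" "F a4 = 4"
  shows "pat t = (a2,a3,a4) \<longleftrightarrow> (\<forall>x\<in>{(0,0),a2,a3,a4}. x \<in> C \<and> t x = F x)"
proof -
  have tT: "t \<in> T" using t by (simp add: Std_def)
  have k: "1 \<in> {1..n}" "2 \<in> {1..n}" "3 \<in> {1..n}" "4 \<in> {1..n}" using n4 by auto
  have c1: "cell t 1 = (0,0)" using classify(1)[OF t n4] .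
  show ?thesis
  proof
    assume p: "pat t = (a2,a3,a4)"
    then have c: "cell t 2 = a2" "cell t 3 = a3" "cell t 4 = a4" by (auto simp: pat_def)
    show "\<forall>x\<in>{(0,0),a2,a3,a4}. x \<in> C \<and> t x = F x"
      using cell_in[OF tT k(1)] cell_in[OF tT k(2)] cell_in[OF tT k(3)] cell_in[OF tT k(4)] c c1 F
      by auto
  next
    assume a: "\<forall>x\<in>{(0,0),a2,a3,a4}. x \<in> C \<and> t x = F x"
    then have "cell t 2 = a2" "cell t 3 = a3" "cell t 4 = a4"
      using cell_eqI[OF tT] F by auto
    then show "pat t = (a2,a3,a4)" by (simp add: pat_def)
  qed
qed


lemma count2:
  assumes n4: "n \<ge> 4"
  shows "card {t \<in> Std. pat t = ((0,1),(0,2),(1,0))} = f_skew lam [3,1]"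
proof -
  define F where "F x = (if x = (0,0) then 1 else if x = (0,1) then 2 else if x = (0,2) then 3 else (4::nat))" for x :: "nat \<times> nat"
  define N where "N = {(0::nat,0::nat),(0,1),(0,2),(1,0)}"
  have F: "F (0,0) = 1" "F (0,1) = 2" "F (0,2) = 3" "F (1,0) = 4" by (simp_all add: F_def)
  have eq: "{t \<in> Std. pat t = ((0,1),(0,2),(1,0))} = {t \<in> Std. \<forall>x\<in>N. x \<in> C \<and> t x = F x}"
    unfolding N_def using pat_agree[OF _ n4 F] by blast
  show ?thesis unfolding eq
  proof (rule count_agree)
    show "N = cells [3,1]" unfolding N_def cells_31 by auto
    show "(i',j') \<in> N" if "(i,j) \<in> N" "i' \<le> i" "j' \<le> j" for i j i' j'
      using that by (auto simp: N_def le_Suc_eq numeral_2_eq_2)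
    show "4 = card N" by (simp add: N_def)
    show "bij_betw F N {1..4}"
    proof -
      have "F ` N = {1..4}" by (auto simp: N_def F_def)
      moreover have "inj_on F N" by (auto simp: N_def F_def inj_on_def)
      ultimately show ?thesis by (simp add: bij_betw_def)
    qed
    show "F (i,j) < F (i,j')" if "(i,j) \<in> N" "(i,j') \<in> N" "j < j'" for i j j'
      using that by (auto simp: N_def F_def)
    show "F (i,j) < F (i',j)" if "(i,j) \<in> N" "(i',j) \<in> N" "i < i'" for i i' j
      using that by (auto simp: N_def F_def)
  qed
qed

lemma count4:
  assumes n4: "n \<ge> 4"
  shows "card {t \<in> Std. pat t = ((1,0),(0,1),(0,2))} = f_skew lam [3,1]"
proof -
  define F where "F x = (if x = (0,0) then 1 else if x = (1,0) then 2 else if x = (0,1) then 3 else (4::nat))" for x :: "nat \<times> nat"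
  define N where "N = {(0::nat,0::nat),(1,0),(0,1),(0,2)}"
  have F: "F (0,0) = 1" "F (1,0) = 2" "F (0,1) = 3" "F (0,2) = 4" by (simp_all add: F_def)
  have eq: "{t \<in> Std. pat t = ((1,0),(0,1),(0,2))} = {t \<in> Std. \<forall>x\<in>N. x \<in> C \<and> t x = F x}"
    unfolding N_def using pat_agree[OF _ n4 F] by blast
  show ?thesis unfolding eq
  proof (rule count_agree)
    show "N = cells [3,1]" unfolding N_def cells_31 by auto
    show "(i',j') \<in> N" if "(i,j) \<in> N" "i' \<le> i" "j' \<le> j" for i j i' j'
      using that by (auto simp: N_def le_Suc_eq numeral_2_eq_2)
    show "4 = card N" by (simp add: N_def)
    show "bij_betw F N {1..4}"
    proof -
      have "F ` N = {1..4}" by (auto simp: N_def F_def)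
      moreover have "inj_on F N" by (auto simp: N_def F_def inj_on_def)
      ultimately show ?thesis by (simp add: bij_betw_def)
    qed
    show "F (i,j) < F (i,j')" if "(i,j) \<in> N" "(i,j') \<in> N" "j < j'" for i j j'
      using that by (auto simp: N_def F_def)
    show "F (i,j) < F (i',j)" if "(i,j) \<in> N" "(i',j) \<in> N" "i < i'" for i i' j
      using that by (auto simp: N_def F_def)
  qed
qed

lemma count7:
  assumes n4: "n \<ge> 4"
  shows "card {t \<in> Std. pat t = ((0,1),(1,0),(2,0))} = f_skew lam [2,1,1]"
proof -
  define F where "F x = (if x = (0,0) then 1 else if x = (0,1) then 2 else if x = (1,0) then 3 else (4::nat))" for x :: "nat \<times> nat"
  define N where "N = {(0::nat,0::nat),(0,1),(1,0),(2,0)}"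
  have F: "F (0,0) = 1" "F (0,1) = 2" "F (1,0) = 3" "F (2,0) = 4" by (simp_all add: F_def)
  have eq: "{t \<in> Std. pat t = ((0,1),(1,0),(2,0))} = {t \<in> Std. \<forall>x\<in>N. x \<in> C \<and> t x = F x}"
    unfolding N_def using pat_agree[OF _ n4 F] by blast
  show ?thesis unfolding eq
  proof (rule count_agree)
    show "N = cells [2,1,1]" unfolding N_def cells_211 by auto
    show "(i',j') \<in> N" if "(i,j) \<in> N" "i' \<le> i" "j' \<le> j" for i j i' j'
      using that by (auto simp: N_def le_Suc_eq numeral_2_eq_2)
    show "4 = card N" by (simp add: N_def)
    show "bij_betw F N {1..4}"
    proof -
      have "F ` N = {1..4}" by (auto simp: N_def F_def)
      moreover have "inj_on F N" by (auto simp: N_def F_def inj_on_def)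
      ultimately show ?thesis by (simp add: bij_betw_def)
    qed
    show "F (i,j) < F (i,j')" if "(i,j) \<in> N" "(i,j') \<in> N" "j < j'" for i j j'
      using that by (auto simp: N_def F_def)
    show "F (i,j) < F (i',j)" if "(i,j) \<in> N" "(i',j) \<in> N" "i < i'" for i i' j
      using that by (auto simp: N_def F_def)
  qed
qed

lemma count8:
  assumes n4: "n \<ge> 4"
  shows "card {t \<in> Std. pat t = ((1,0),(0,1),(2,0))} = f_skew lam [2,1,1]"
proof -
  define F where "F x = (if x = (0,0) then 1 else if x = (1,0) then 2 else if x = (0,1) then 3 else (4::nat))" for x :: "nat \<times> nat"
  define N where "N = {(0::nat,0::nat),(1,0),(0,1),(2,0)}"
  have F: "F (0,0) = 1" "F (1,0) = 2" "F (0,1) = 3" "F (2,0) = 4" by (simp_all add: F_def)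
  have eq: "{t \<in> Std. pat t = ((1,0),(0,1),(2,0))} = {t \<in> Std. \<forall>x\<in>N. x \<in> C \<and> t x = F x}"
    unfolding N_def using pat_agree[OF _ n4 F] by blast
  show ?thesis unfolding eq
  proof (rule count_agree)
    show "N = cells [2,1,1]" unfolding N_def cells_211 by auto
    show "(i',j') \<in> N" if "(i,j) \<in> N" "i' \<le> i" "j' \<le> j" for i j i' j'
      using that by (auto simp: N_def le_Suc_eq numeral_2_eq_2)
    show "4 = card N" by (simp add: N_def)
    show "bij_betw F N {1..4}"
    proof -
      have "F ` N = {1..4}" by (auto simp: N_def F_def)
      moreover have "inj_on F N" by (auto simp: N_def F_def inj_on_def)
      ultimately show ?thesis by (simp add: bij_betw_def)
    qed
    show "F (i,j) < F (i,j')" if "(i,j) \<in> N" "(i,j') \<in> N" "j < j'" for i j j'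
      using that by (auto simp: N_def F_def)
    show "F (i,j) < F (i',j)" if "(i,j) \<in> N" "(i',j) \<in> N" "i < i'" for i i' j
      using that by (auto simp: N_def F_def)
  qed
qed


lemma finite_Std: "finite Std"
  using finite_T by (rule finite_subset[rotated]) (auto simp: Std_def)

lemma part2:
  assumes n4: "n \<ge> 4"
  shows "(specht_char n lam id - specht_char n lam (s1 \<circ> s3)) / 2
           = 2 * (real (f_skew lam [3, 1]) + real (f_skew lam [2, 1, 1]))"
proof -
  define Q where "Q = {((0::nat,1::nat),(0::nat,2::nat),(1::nat,0::nat)), ((1,0),(0,1),(0,2)), ((0,1),(1,0),(2,0)), ((1,0),(0,1),(2,0))}"
  define Jm where "Jm = {t \<in> Std. pat t \<in> Q}"
  define Jp where "Jp = {t \<in> Std. pat t \<notin> Q}"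
  define \<rho> where "\<rho> t = (if pat t = ((0,1),(1,0),(0,2)) then s1 \<circ> s3 else if pat t = ((1,0),(2,0),(0,1)) then s3 else id)" for t
  define Mp where "Mp t = tab (restrict (\<rho> t \<circ> t) C)" for t
  have ssp: "s1 \<circ> s3 permutes {1..n}" using s13_perm[OF n4] .
  have stdT: "t \<in> T" if "t \<in> Std" for t using that by (simp add: Std_def)
  have rp: "\<rho> t permutes {1..n}" for t unfolding \<rho>_def using s13_perm[OF n4] s3_perm[OF n4] id_perm by simp
  have ri: "\<rho> t (\<rho> t k) = k" for t k unfolding \<rho>_def by (simp add: s1_def s3_def)
  have Jp6: "pat t \<in> {((0,1),(0,2),(0,3)), ((0,1),(1,0),(0,2)), ((0,1),(1,0),(1,1)), ((1,0),(0,1),(1,1)),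
      ((1,0),(2,0),(0,1)), ((1,0),(2,0),(3,0))}" if t: "t \<in> Jp" for t
    using classify(2)[OF _ n4, of t] t unfolding Jp_def Q_def by auto
  have JmQ: "pat t \<in> Q" "t \<in> Std" if t: "t \<in> Jm" for t using t unfolding Jm_def by auto
  have facts_p: "(\<lambda>R. e t R + 1 * e (s1 \<circ> s3 \<circ> t) R) \<in> specht n lam \<and>
      perm_act (s1 \<circ> s3) (\<lambda>R. e t R + 1 * e (s1 \<circ> s3 \<circ> t) R) = (\<lambda>R. 1 * (e t R + 1 * e (s1 \<circ> s3 \<circ> t) R)) \<and>
      e t (Mp t) + 1 * e (s1 \<circ> s3 \<circ> t) (Mp t) \<noteq> 0 \<and>
      (\<forall>R. e t R + 1 * e (s1 \<circ> s3 \<circ> t) R \<noteq> 0 \<longrightarrow> key n (Mp t) \<le> key n R)" if t: "t \<in> Jp" for t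
  proof -
    have ts: "t \<in> Std" using t by (simp add: Jp_def)
    have mid: "Mp t = tab t" if "\<rho> t = id" using restrict_id_T[OF stdT[OF ts]] that by (simp add: Mp_def)
    consider "pat t = ((0,1),(0,2),(0,3))" | "pat t = ((0,1),(1,0),(0,2))" | "pat t = ((0,1),(1,0),(1,1))"
      | "pat t = ((1,0),(0,1),(1,1))" | "pat t = ((1,0),(2,0),(0,1))" | "pat t = ((1,0),(2,0),(3,0))"
      using Jp6[OF t] by blast
    then show ?thesis
    proof cases
      case 1 then show ?thesis using pat1[OF ts n4] mid by (simp add: \<rho>_def)
    next
      case 2 then show ?thesis using pat3[OF ts n4] by (simp add: \<rho>_def Mp_def)
    next
      case 3 then show ?thesis using pat5[OF ts n4] mid by (simp add: \<rho>_def)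
    next
      case 4 then show ?thesis using pat6[OF ts n4] mid by (simp add: \<rho>_def)
    next
      case 5 then show ?thesis using pat9[OF ts n4] by (simp add: \<rho>_def Mp_def)
    next
      case 6 then show ?thesis using pat10[OF ts n4] mid by (simp add: \<rho>_def)
    qed
  qed
  have facts_m: "(\<lambda>R. e t R + (-1) * e (s1 \<circ> s3 \<circ> t) R) \<in> specht n lam \<and>
      perm_act (s1 \<circ> s3) (\<lambda>R. e t R + (-1) * e (s1 \<circ> s3 \<circ> t) R) = (\<lambda>R. (-1) * (e t R + (-1) * e (s1 \<circ> s3 \<circ> t) R)) \<and>
      e t (tab t) + (-1) * e (s1 \<circ> s3 \<circ> t) (tab t) \<noteq> 0 \<and>
      (\<forall>R. e t R + (-1) * e (s1 \<circ> s3 \<circ> t) R \<noteq> 0 \<longrightarrow> key n (tab t) \<le> key n R)" if t: "t \<in> Jm" for t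
  proof -
    have ts: "t \<in> Std" using JmQ[OF t] by simp
    consider "pat t = ((0,1),(0,2),(1,0))" | "pat t = ((1,0),(0,1),(0,2))" | "pat t = ((0,1),(1,0),(2,0))"
      | "pat t = ((1,0),(0,1),(2,0))"
      using JmQ[OF t] unfolding Q_def by blast
    then show ?thesis
    proof cases
      case 1 then show ?thesis using pat2[OF ts n4] by simp
    next
      case 2 then show ?thesis using pat4[OF ts n4] by simp
    next
      case 3 then show ?thesis using pat7[OF ts n4] by simp
    next
      case 4 then show ?thesis using pat8[OF ts n4] by simp
    qed
  qed
  have injm: "inj_on (\<lambda>t. key n (tab t)) Jm"
  proof (rule inj_onI)
    fix t u assume tu: "t \<in> Jm" "u \<in> Jm" "key n (tab t) = key n (tab u)"
    have ts: "t \<in> Std" "u \<in> Std" using JmQ tu by auto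
    have "tab t = tab u" by (rule key_tab_inj) (use tu ts stdT in auto)
    then show "t = u" using std_unique ts by (auto simp: Std_def)
  qed
  have Mp_eq: "Mp t = tab t \<circ> \<rho> t" if "t \<in> Std" for t
    unfolding Mp_def by (rule tab_invol[OF stdT[OF that] rp ri])
  define sg where "sg P = (if P = ((0::nat,1::nat),(0::nat,2::nat),(0::nat,3::nat)) then (0::nat,0::nat,0::nat,0::nat)
      else if P = ((0,1),(1,0),(0,2)) then (0,0,0,1) else if P = ((0,1),(1,0),(1,1)) then (0,0,1,1)
      else if P = ((1,0),(0,1),(1,1)) then (0,1,0,1) else if P = ((1,0),(2,0),(0,1)) then (0,1,0,2) else (0,1,2,3))" for P
  have sig: "(Mp t 1, Mp t 2, Mp t 3, Mp t 4) = sg (pat t)" if t: "t \<in> Jp" for t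
  proof -
    have ts: "t \<in> Std" using t by (simp add: Jp_def)
    have k: "1 \<in> {1..n}" "2 \<in> {1..n}" "3 \<in> {1..n}" "4 \<in> {1..n}" using n4 by auto
    have Mk: "Mp t k = row t (\<rho> t k)" if "k \<in> {1..n}" for k
      using Mp_eq[OF ts] perm_in[OF rp that] by (simp add: tab_eq)
    show ?thesis using Jp6[OF t] rc4[OF ts n4, of "fst (pat t)" "fst (snd (pat t))" "snd (snd (pat t))"]
      Mk[OF k(1)] Mk[OF k(2)] Mk[OF k(3)] Mk[OF k(4)]
      by (auto simp: sg_def \<rho>_def s1_def s3_def)
  qed
  have injp: "inj_on (\<lambda>t. key n (Mp t)) Jp"
  proof (rule inj_onI)
    fix t u assume tu: "t \<in> Jp" "u \<in> Jp" "key n (Mp t) = key n (Mp u)"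
    have ts: "t \<in> Std" "u \<in> Std" using tu by (auto simp: Jp_def)
    have MT: "restrict (\<rho> x \<circ> x) C \<in> T" if "x \<in> Std" for x by (rule perm_tab_in_T[OF stdT[OF that] rp])
    have MM: "Mp t = Mp u" unfolding Mp_def by (rule key_tab_inj[OF MT MT]) (use tu ts in \<open>simp_all add: Mp_def\<close>)
    have "sg (pat t) = sg (pat u)" using sig[OF tu(1)] sig[OF tu(2)] MM by simp
    then have pp: "pat t = pat u" using Jp6[OF tu(1)] Jp6[OF tu(2)] by (auto simp: sg_def)
    then have rr: "\<rho> t = \<rho> u" by (simp add: \<rho>_def)
    have "tab t \<circ> \<rho> t = tab u \<circ> \<rho> t" using MM Mp_eq ts rr by simp
    then have "tab t \<circ> \<rho> t \<circ> \<rho> t = tab u \<circ> \<rho> t \<circ> \<rho> t" by simp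
    then have "tab t = tab u" using ri by (simp add: fun_eq_iff)
    then show "t = u" using std_unique ts by (auto simp: Std_def)
  qed
  have Idisj: "Jp \<inter> Jm = {}" and Iun: "Jp \<union> Jm = Std" unfolding Jp_def Jm_def by auto
  note BC = basis_char[OF ssp Idisj Iun, where vp = "\<lambda>t R. e t R + 1 * e (s1 \<circ> s3 \<circ> t) R" and Mp = Mp
      and vm = "\<lambda>t R. e t R + (-1) * e (s1 \<circ> s3 \<circ> t) R" and Mm = tab]
  have prem: "\<And>i. i \<in> Jp \<Longrightarrow> (\<lambda>R. e i R + 1 * e (s1 \<circ> s3 \<circ> i) R) \<in> specht n lam"
    "\<And>i. i \<in> Jp \<Longrightarrow> perm_act (s1 \<circ> s3) (\<lambda>R. e i R + 1 * e (s1 \<circ> s3 \<circ> i) R) = (\<lambda>R. e i R + 1 * e (s1 \<circ> s3 \<circ> i) R)"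
    "\<And>i. i \<in> Jp \<Longrightarrow> e i (Mp i) + 1 * e (s1 \<circ> s3 \<circ> i) (Mp i) \<noteq> 0"
    "\<And>i R. i \<in> Jp \<Longrightarrow> e i R + 1 * e (s1 \<circ> s3 \<circ> i) R \<noteq> 0 \<Longrightarrow> key n (Mp i) \<le> key n R"
    "inj_on (\<lambda>i. key n (Mp i)) Jp"
    "\<And>i. i \<in> Jm \<Longrightarrow> (\<lambda>R. e i R + (-1) * e (s1 \<circ> s3 \<circ> i) R) \<in> specht n lam"
    "\<And>i. i \<in> Jm \<Longrightarrow> perm_act (s1 \<circ> s3) (\<lambda>R. e i R + (-1) * e (s1 \<circ> s3 \<circ> i) R) = (\<lambda>R. - (e i R + (-1) * e (s1 \<circ> s3 \<circ> i) R))"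
    "\<And>i. i \<in> Jm \<Longrightarrow> e i (tab i) + (-1) * e (s1 \<circ> s3 \<circ> i) (tab i) \<noteq> 0"
    "\<And>i R. i \<in> Jm \<Longrightarrow> e i R + (-1) * e (s1 \<circ> s3 \<circ> i) R \<noteq> 0 \<Longrightarrow> key n (tab i) \<le> key n R"
    "inj_on (\<lambda>i. key n (tab i)) Jm"
    using facts_p facts_m injp injm by auto
  have ch1: "specht_char n lam id = real (card Std)" by (rule BC(1)[OF prem])
  have ch2: "specht_char n lam (s1 \<circ> s3) = real (card Std) - 2 * real (card Jm)" by (rule BC(2)[OF prem])
  define J2 where "J2 = {t \<in> Std. pat t = ((0,1),(0,2),(1,0))}"
  define J4 where "J4 = {t \<in> Std. pat t = ((1,0),(0,1),(0,2))}"
  define J7 where "J7 = {t \<in> Std. pat t = ((0,1),(1,0),(2,0))}"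
  define J8 where "J8 = {t \<in> Std. pat t = ((1,0),(0,1),(2,0))}"
  have JmU: "Jm = J2 \<union> J4 \<union> J7 \<union> J8" unfolding Jm_def J2_def J4_def J7_def J8_def Q_def by auto
  have fin: "finite J2" "finite J4" "finite J7" "finite J8"
    unfolding J2_def J4_def J7_def J8_def using finite_Std by auto
  have "card Jm = card J2 + card J4 + card J7 + card J8"
    unfolding JmU using fin
    by (subst card_Un_disjoint, simp_all, (auto simp: J2_def J4_def J7_def J8_def)[1],
        subst card_Un_disjoint, simp_all, (auto simp: J2_def J4_def J7_def J8_def)[1],
        subst card_Un_disjoint, simp_all, auto simp: J2_def J4_def J7_def J8_def)
  then have "card Jm = 2 * f_skew lam [3,1] + 2 * f_skew lam [2,1,1]"
    using count2[OF n4] count4[OF n4] count7[OF n4] count8[OF n4]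
    unfolding J2_def J4_def J7_def J8_def by simp
  then show ?thesis using ch1 ch2 by simp
qed

end

theorem proposition3p7:
  fixes n :: nat and lam :: "nat list"
  assumes "n \<ge> 4" and "is_partition n lam"
  shows "(specht_char n lam id - specht_char n lam s1) / 2 = real (f_skew lam [1, 1])
       \<and> (specht_char n lam id - specht_char n lam (s1 \<circ> s3)) / 2
             = 2 * (real (f_skew lam [3, 1]) + real (f_skew lam [2, 1, 1]))"
proof -
  interpret young n lam by unfold_locales (rule assms(2))
  show ?thesis using part1[OF assms(1)] part2[OF assms(1)] by simp
qed

end
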